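(* Let $(C_*,\partial,\ell)$ be an ascending chain complex over a field $\kappa$ such that, for every $k$, $\ell(C_k\setminus\{0\})$ is a well-ordered subset of $\mathbb{R}$. Then $(C_*,\partial,\ell)$ is isomorphic, in the category of ascending chain complexes (morphisms: chain maps $f$ with $\ell'\circ f\le\ell$), to a direct sum $\left(\bigoplus_{i\in I}\mathcal{E}_{k_i}(a_i,b_i)_\uparrow\right)\oplus\left(\bigoplus_{j\in J}\mathcal{E}_{l_j}(c_j,\infty)_\uparrow\right)$ for suitable index sets $I,J$, integers $k_i,l_j$, and reals $a_i\le b_i$, $c_j$. Moreover the summand $\bigoplus_{j\in J}\mathcal{E}_{l_j}(c_j,\infty)_\uparrow$ is isomorphic to $(H_*(C_* ),0,\rho)$, the homology regarded as an ascending complex with zero differential and filtration function the spectral invariant function $\rho$.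
   Context: An ascending chain complex over $\kappa$ is a triple $(C_*,\partial,\ell)$ where $(C_*=\bigoplus_{k\in\mathbb{Z}}C_k,\partial)$ is a chain complex of $\kappa$-vector spaces and $\ell\colon C_*\to\mathbb{R}\cup\{-\infty\}$ satisfies: $\ell(x)=-\infty$ iff $x=0$; $\ell(\sum_i c_ix_i)\le\max\{\ell(x_i): c_i\neq 0\}$, with equality if the $x_i$ lie in pairwise distinct degrees; and $\ell(\partial x)\le\ell(x)$. Direct sums: $\ell(\sum_\alpha x_\alpha)=\max_\alpha\ell_\alpha(x_\alpha)$. For $k\in\mathbb{Z}$ and $a\le b$ real, $\mathcal{E}_k(a,b)_\uparrow$ is the ascending complex which is $\kappa$ in degrees $k$ and $k+1$ and $0$ elsewhere, with $\partial\colon C_{k+1}\to C_k$ the identity of $\kappa$, and with $\ell\equiv a$ on $C_k\setminus0$, $\ell\equiv b$ on $C_{k+1}\setminus0$. For $c\in\mathbb{R}$, $\mathcal{E}_k(c,\infty)_\uparrow$ is $\kappa$ in degree $k$, $0$ elsewhere, zero differential, $\ell\equiv c$ on nonzero elements. The spectral invariant function is $\rho(h)=\inf\{\ell(c):c\in\ker\partial,[c]=h\}$. *)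

theory Defs
  imports "HOL-Library.Extended_Real"
begin

record ('k, 'v) acc =
  car  :: "'v set"
  add  :: "'v \<Rightarrow> 'v \<Rightarrow> 'v"
  zer  :: "'v"
  smul :: "'k \<Rightarrow> 'v \<Rightarrow> 'v"
  deg  :: "int \<Rightarrow> 'v set"
  bd   :: "'v \<Rightarrow> 'v"
  filt :: "'v \<Rightarrow> ereal"

primrec vsumn :: "('k, 'v, 'z) acc_scheme \<Rightarrow> (nat \<Rightarrow> 'v) \<Rightarrow> nat \<Rightarrow> 'v" where
  "vsumn C f 0 = zer C"
| "vsumn C f (Suc m) = add C (vsumn C f m) (f m)"

definition vspace :: "('k::field, 'v, 'z) acc_scheme \<Rightarrow> bool" where
  "vspace C \<longleftrightarrow>
     zer C \<in> car C \<and>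
     (\<forall>x\<in>car C. \<forall>y\<in>car C. add C x y \<in> car C) \<and>
     (\<forall>c. \<forall>x\<in>car C. smul C c x \<in> car C) \<and>
     (\<forall>x\<in>car C. \<forall>y\<in>car C. \<forall>z\<in>car C. add C (add C x y) z = add C x (add C y z)) \<and>
     (\<forall>x\<in>car C. \<forall>y\<in>car C. add C x y = add C y x) \<and>
     (\<forall>x\<in>car C. add C (zer C) x = x) \<and>
     (\<forall>x\<in>car C. \<exists>y\<in>car C. add C x y = zer C) \<and>
     (\<forall>c. \<forall>x\<in>car C. \<forall>y\<in>car C. smul C c (add C x y) = add C (smul C c x) (smul C c y)) \<and>
     (\<forall>c d. \<forall>x\<in>car C. smul C (c + d) x = add C (smul C c x) (smul C d x)) \<and>
     (\<forall>c d. \<forall>x\<in>car C. smul C (c * d) x = smul C c (smul C d x)) \<and>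
     (\<forall>x\<in>car C. smul C 1 x = x)"

text \<open>\<open>car C\<close> is the internal direct sum of the subspaces \<open>deg C k\<close>, \<open>k \<in> \<int>\<close>.\<close>
definition graded :: "('k::field, 'v, 'z) acc_scheme \<Rightarrow> bool" where
  "graded C \<longleftrightarrow>
     (\<forall>n. deg C n \<subseteq> car C \<and> zer C \<in> deg C n \<and>
          (\<forall>x\<in>deg C n. \<forall>y\<in>deg C n. add C x y \<in> deg C n) \<and>
          (\<forall>c. \<forall>x\<in>deg C n. smul C c x \<in> deg C n)) \<and>
     (\<forall>x\<in>car C. \<exists>m f d. (\<forall>i<m. f i \<in> deg C (d i)) \<and> x = vsumn C f m) \<and>
     (\<forall>m f d. inj_on d {..<m} \<and> (\<forall>i<m. f i \<in> deg C (d i)) \<and> vsumn C f m = zer C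
              \<longrightarrow> (\<forall>i<m. f i = zer C))"

definition chain_cx :: "('k::field, 'v, 'z) acc_scheme \<Rightarrow> bool" where
  "chain_cx C \<longleftrightarrow>
     vspace C \<and> graded C \<and>
     (\<forall>x\<in>car C. bd C x \<in> car C) \<and>
     (\<forall>x\<in>car C. \<forall>y\<in>car C. bd C (add C x y) = add C (bd C x) (bd C y)) \<and>
     (\<forall>c. \<forall>x\<in>car C. bd C (smul C c x) = smul C c (bd C x)) \<and>
     (\<forall>n. bd C ` deg C (n + 1) \<subseteq> deg C n) \<and>
     (\<forall>x\<in>car C. bd C (bd C x) = zer C)"

definition asc_complex :: "('k::field, 'v, 'z) acc_scheme \<Rightarrow> bool" where
  "asc_complex C \<longleftrightarrow>
     chain_cx C \<and>
     (\<forall>x\<in>car C. (filt C x = -\<infinity> \<longleftrightarrow> x = zer C) \<and> filt C x \<noteq> \<infinity>) \<and>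
     (\<forall>m (c :: nat \<Rightarrow> 'k) f. (\<forall>i<m. f i \<in> car C) \<longrightarrow>
        filt C (vsumn C (\<lambda>i. smul C (c i) (f i)) m)
          \<le> Sup {filt C (f i) | i. i < m \<and> c i \<noteq> 0}) \<and>
     (\<forall>m (c :: nat \<Rightarrow> 'k) f d. inj_on d {..<m} \<and> (\<forall>i<m. f i \<in> deg C (d i)) \<longrightarrow>
        filt C (vsumn C (\<lambda>i. smul C (c i) (f i)) m)
          = Sup {filt C (f i) | i. i < m \<and> c i \<noteq> 0}) \<and>
     (\<forall>x\<in>car C. filt C (bd C x) \<le> filt C x)"

definition acc_mor :: "('k::field, 'v, 'z) acc_scheme \<Rightarrow> ('k, 'w, 'y) acc_scheme \<Rightarrow> ('v \<Rightarrow> 'w) \<Rightarrow> bool" where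
  "acc_mor C D f \<longleftrightarrow>
     (\<forall>x\<in>car C. f x \<in> car D) \<and>
     (\<forall>x\<in>car C. \<forall>y\<in>car C. f (add C x y) = add D (f x) (f y)) \<and>
     (\<forall>c. \<forall>x\<in>car C. f (smul C c x) = smul D c (f x)) \<and>
     (\<forall>n. f ` deg C n \<subseteq> deg D n) \<and>
     (\<forall>x\<in>car C. f (bd C x) = bd D (f x)) \<and>
     (\<forall>x\<in>car C. filt D (f x) \<le> filt C x)"

definition acc_iso :: "('k::field, 'v, 'z) acc_scheme \<Rightarrow> ('k, 'w, 'y) acc_scheme \<Rightarrow> bool" where
  "acc_iso C D \<longleftrightarrow> (\<exists>f g. acc_mor C D f \<and> acc_mor D C g \<and>
       (\<forall>x\<in>car C. g (f x) = x) \<and> (\<forall>y\<in>car D. f (g y) = y))"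

text \<open>\<open>\<E>_k(a,b)\<close>: \<open>\<kappa>\<close> in degrees k (first coordinate) and k+1 (second coordinate).\<close>
definition Efin :: "int \<Rightarrow> real \<Rightarrow> real \<Rightarrow> ('k::field, 'k \<times> 'k) acc" where
  "Efin k a b = \<lparr> car = UNIV,
     add = (\<lambda>(x, y) (u, v). (x + u, y + v)),
     zer = (0, 0),
     smul = (\<lambda>c (x, y). (c * x, c * y)),
     deg = (\<lambda>n. if n = k then {(x, 0) | x. True}
                 else if n = k + 1 then {(0, y) | y. True} else {(0, 0)}),
     bd = (\<lambda>(x, y). (y, 0)),
     filt = (\<lambda>(x, y). if y \<noteq> 0 then ereal b else if x \<noteq> 0 then ereal a else -\<infinity>) \<rparr>"

definition Einf :: "int \<Rightarrow> real \<Rightarrow> ('k::field, 'k) acc" where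
  "Einf l c = \<lparr> car = UNIV, add = (+), zer = 0, smul = (*),
     deg = (\<lambda>n. if n = l then UNIV else {0}),
     bd = (\<lambda>_. 0),
     filt = (\<lambda>x. if x = 0 then -\<infinity> else ereal c) \<rparr>"

definition dsumF :: "'i set \<Rightarrow> ('i \<Rightarrow> ('k::field, 'w) acc) \<Rightarrow> ('k, 'i \<Rightarrow> 'w) acc" where
  "dsumF I E = \<lparr>
     car = {x. (\<forall>i\<in>I. x i \<in> car (E i)) \<and> (\<forall>i. i \<notin> I \<longrightarrow> x i = zer (E i))
              \<and> finite {i. x i \<noteq> zer (E i)}},
     add = (\<lambda>x y i. add (E i) (x i) (y i)),
     zer = (\<lambda>i. zer (E i)),
     smul = (\<lambda>c x i. smul (E i) c (x i)),
     deg = (\<lambda>n. {x. (\<forall>i\<in>I. x i \<in> deg (E i) n) \<and> (\<forall>i. i \<notin> I \<longrightarrow> x i = zer (E i))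
              \<and> finite {i. x i \<noteq> zer (E i)}}),
     bd = (\<lambda>x i. if i \<in> I then bd (E i) (x i) else zer (E i)),
     filt = (\<lambda>x. Sup {filt (E i) (x i) | i. i \<in> I}) \<rparr>"

definition dsum2 :: "('k::field, 'a) acc \<Rightarrow> ('k, 'b) acc \<Rightarrow> ('k, 'a \<times> 'b) acc" where
  "dsum2 A B = \<lparr>
     car = car A \<times> car B,
     add = (\<lambda>(x, y) (u, v). (add A x u, add B y v)),
     zer = (zer A, zer B),
     smul = (\<lambda>c (x, y). (smul A c x, smul B c y)),
     deg = (\<lambda>n. deg A n \<times> deg B n),
     bd = (\<lambda>(x, y). (bd A x, bd B y)),
     filt = (\<lambda>(x, y). max (filt A x) (filt B y)) \<rparr>"

text \<open>Homology \<open>H_*(C) = ker \<partial> / im \<partial>\<close>, elements represented as cosets (subsets of the carrier),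
  with zero differential and the spectral invariant function \<open>\<rho>\<close> as filtration function.\<close>
definition cycles :: "('k, 'v, 'z) acc_scheme \<Rightarrow> 'v set" where
  "cycles C = {x \<in> car C. bd C x = zer C}"

definition bounds :: "('k, 'v, 'z) acc_scheme \<Rightarrow> 'v set" where
  "bounds C = bd C ` car C"

definition hclass :: "('k, 'v, 'z) acc_scheme \<Rightarrow> 'v \<Rightarrow> 'v set" where
  "hclass C z = {add C z b | b. b \<in> bounds C}"

definition spec_inv :: "('k, 'v, 'z) acc_scheme \<Rightarrow> 'v set \<Rightarrow> ereal" where
  "spec_inv C h = Inf {filt C c | c. c \<in> cycles C \<and> hclass C c = h}"

definition homology :: "('k::field, 'v, 'z) acc_scheme \<Rightarrow> ('k, 'v set) acc" where
  "homology C = \<lparr>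
     car = hclass C ` cycles C,
     add = (\<lambda>X Y. {add C x y | x y. x \<in> X \<and> y \<in> Y}),
     zer = bounds C,
     smul = (\<lambda>c X. {add C (smul C c x) b | x b. x \<in> X \<and> b \<in> bounds C}),
     deg = (\<lambda>n. hclass C ` (cycles C \<inter> deg C n)),
     bd = (\<lambda>_. bounds C),
     filt = spec_inv C \<rparr>"

definition well_ordered_set :: "ereal set \<Rightarrow> bool" where
  "well_ordered_set S \<longleftrightarrow> (\<forall>T \<subseteq> S. T \<noteq> {} \<longrightarrow> (\<exists>m\<in>T. \<forall>t\<in>T. m \<le> t))"

end

theory Submission
  imports Defs "HOL-Algebra.FiniteProduct"
begin

locale VS =
  fixes C :: "('k::field, 'v) acc"
  assumes vs: "vspace C"
begin

lemma zer_closed[simp]: "zer C \<in> car C"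
  using vs unfolding vspace_def by blast
lemma add_closed[simp]: "x \<in> car C \<Longrightarrow> y \<in> car C \<Longrightarrow> add C x y \<in> car C"
  using vs unfolding vspace_def by auto
lemma smul_closed[simp]: "x \<in> car C \<Longrightarrow> smul C c x \<in> car C"
  using vs unfolding vspace_def by blast
lemma add_assoc: "x \<in> car C \<Longrightarrow> y \<in> car C \<Longrightarrow> z \<in> car C \<Longrightarrow> add C (add C x y) z = add C x (add C y z)"
  using vs unfolding vspace_def by blast
lemma add_comm: "x \<in> car C \<Longrightarrow> y \<in> car C \<Longrightarrow> add C x y = add C y x"
  using vs unfolding vspace_def by blast
lemma zer_add[simp]: "x \<in> car C \<Longrightarrow> add C (zer C) x = x"
  using vs unfolding vspace_def by blast
lemma add_zer[simp]: "x \<in> car C \<Longrightarrow> add C x (zer C) = x"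
  using add_comm zer_add by simp
lemma ex_inv: "x \<in> car C \<Longrightarrow> \<exists>y\<in>car C. add C x y = zer C"
  using vs unfolding vspace_def by blast
lemma smul_add: "x \<in> car C \<Longrightarrow> y \<in> car C \<Longrightarrow> smul C c (add C x y) = add C (smul C c x) (smul C c y)"
  using vs unfolding vspace_def by blast
lemma add_smul: "x \<in> car C \<Longrightarrow> smul C (c + d) x = add C (smul C c x) (smul C d x)"
  using vs unfolding vspace_def by blast
lemma smul_smul: "x \<in> car C \<Longrightarrow> smul C (c * d) x = smul C c (smul C d x)"
  using vs unfolding vspace_def by blast
lemma smul_one[simp]: "x \<in> car C \<Longrightarrow> smul C 1 x = x"
  using vs unfolding vspace_def by blast

lemma add_left_cancel:
  assumes "x \<in> car C" "y \<in> car C" "z \<in> car C" "add C x y = add C x z"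
  shows "y = z"
proof -
  obtain x' where x': "x' \<in> car C" "add C x x' = zer C" using ex_inv assms by blast
  have "add C x' (add C x y) = add C x' (add C x z)" using assms by simp
  moreover have "add C x' (add C x y) = y" using x' assms
    by (metis add_assoc add_comm zer_add)
  moreover have "add C x' (add C x z) = z" using x' assms
    by (metis add_assoc add_comm zer_add)
  ultimately show ?thesis by simp
qed

lemma smul_zero[simp]: "x \<in> car C \<Longrightarrow> smul C 0 x = zer C"
proof -
  assume x: "x \<in> car C"
  have "add C (smul C 0 x) (smul C 0 x) = add C (smul C 0 x) (zer C)"
    using add_smul[OF x, of 0 0] x by simp
  then show ?thesis using add_left_cancel x by (meson smul_closed zer_closed)
qed

lemma smul_zer[simp]: "smul C c (zer C) = zer C"
proof -
  have "add C (smul C c (zer C)) (smul C c (zer C)) = add C (smul C c (zer C)) (zer C)"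
    using smul_add[of "zer C" "zer C" c] by simp
  then show ?thesis using add_left_cancel by (meson smul_closed zer_closed)
qed

definition neg :: "'v \<Rightarrow> 'v" where "neg x = smul C (-1) x"

lemma neg_closed[simp]: "x \<in> car C \<Longrightarrow> neg x \<in> car C"
  unfolding neg_def by simp

lemma add_neg[simp]: "x \<in> car C \<Longrightarrow> add C x (neg x) = zer C"
  unfolding neg_def using add_smul[of x 1 "-1"] by simp

lemma neg_add[simp]: "x \<in> car C \<Longrightarrow> add C (neg x) x = zer C"
  using add_comm add_neg by simp

lemma smul_neg_one: "x \<in> car C \<Longrightarrow> smul C (-1) x = neg x" unfolding neg_def ..

lemma add_eq_zer_neg:
  assumes "x \<in> car C" "y \<in> car C" "add C x y = zer C" shows "y = neg x"
  using add_left_cancel[of x y "neg x"] assms by simp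

lemma smul_inv_cancel[simp]: "x \<in> car C \<Longrightarrow> c \<noteq> 0 \<Longrightarrow> smul C (inverse c) (smul C c x) = x"
  by (simp add: smul_smul[symmetric])

lemma smul_eq_zer: "x \<in> car C \<Longrightarrow> smul C c x = zer C \<Longrightarrow> c = 0 \<or> x = zer C"
  by (metis smul_inv_cancel smul_zer)

lemma add_cancel_right: "x \<in> car C \<Longrightarrow> y \<in> car C \<Longrightarrow> add C (add C x y) (neg y) = x"
  by (simp add: add_assoc)

lemma add_move: 
  assumes "x \<in> car C" "y \<in> car C" "z \<in> car C" "add C x y = z" shows "x = add C z (neg y)"
  using assms add_cancel_right by auto

definition G :: "'v monoid" where
  "G = \<lparr>carrier = car C, mult = add C, one = zer C\<rparr>"

lemma G_simps[simp]: "carrier G = car C" "mult G = add C" "one G = zer C"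
  unfolding G_def by simp_all

lemma comm_monoid_G: "comm_monoid G"
  by (rule comm_monoidI) (auto simp: add_assoc intro: add_comm)

lemma comm_group_G: "comm_group G"
proof -
  interpret comm_monoid G by (rule comm_monoid_G)
  show ?thesis
  proof (rule comm_groupI)
    fix x assume "x \<in> carrier G"
    then show "\<exists>y\<in>carrier G. y \<otimes>\<^bsub>G\<^esub> x = \<one>\<^bsub>G\<^esub>"
      by (intro bexI[of _ "neg x"]) auto
  qed (auto simp: add_assoc add_comm, metis add_assoc add_comm)
qed

interpretation CG: comm_monoid G by (rule comm_monoid_G)

definition vsum :: "('a \<Rightarrow> 'v) \<Rightarrow> 'a set \<Rightarrow> 'v" where
  "vsum f S = finprod G f S"

lemma vsum_empty[simp]: "vsum f {} = zer C"
  unfolding vsum_def by simp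

lemma vsum_infinite[simp]: "infinite A \<Longrightarrow> vsum f A = zer C"
  unfolding vsum_def by simp

lemma vsum_closed[simp]: "(\<And>x. x \<in> S \<Longrightarrow> f x \<in> car C) \<Longrightarrow> vsum f S \<in> car C"
  unfolding vsum_def using CG.finprod_closed[of f S] by (auto simp: Pi_def)

lemma vsum_insert:
  "finite S \<Longrightarrow> a \<notin> S \<Longrightarrow> (\<And>x. x \<in> insert a S \<Longrightarrow> f x \<in> car C) \<Longrightarrow>
    vsum f (insert a S) = add C (f a) (vsum f S)"
  unfolding vsum_def by (subst CG.finprod_insert) auto

lemma vsum_cong:
  "S = T \<Longrightarrow> (\<And>x. x \<in> T \<Longrightarrow> f x = g x) \<Longrightarrow> (\<And>x. x \<in> T \<Longrightarrow> g x \<in> car C) \<Longrightarrow> vsum f S = vsum g T"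
  unfolding vsum_def by (rule CG.finprod_cong') auto

lemma vsum_add:
  "(\<And>x. x \<in> S \<Longrightarrow> f x \<in> car C) \<Longrightarrow> (\<And>x. x \<in> S \<Longrightarrow> g x \<in> car C) \<Longrightarrow>
    vsum (\<lambda>x. add C (f x) (g x)) S = add C (vsum f S) (vsum g S)"
  unfolding vsum_def using CG.finprod_multf[of f S g] by (auto simp: Pi_def)

lemma vsum_zer: "(\<And>x. x \<in> S \<Longrightarrow> f x = zer C) \<Longrightarrow> vsum f S = zer C"
  unfolding vsum_def using CG.finprod_one_eqI[of S f] by simp

lemma vsum_Un_disjoint:
  "finite A \<Longrightarrow> finite B \<Longrightarrow> A \<inter> B = {} \<Longrightarrow> (\<And>x. x \<in> A \<union> B \<Longrightarrow> f x \<in> car C) \<Longrightarrow>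
   vsum f (A \<union> B) = add C (vsum f A) (vsum f B)"
  unfolding vsum_def by (subst CG.finprod_Un_disjoint) (auto simp: Pi_def)

lemma vsum_mono_neutral:
  assumes "finite T" "S \<subseteq> T" "\<And>x. x \<in> T - S \<Longrightarrow> f x = zer C" "\<And>x. x \<in> T \<Longrightarrow> f x \<in> car C"
  shows "vsum f S = vsum f T"
proof -
  have "T = S \<union> (T - S)" using assms by auto
  then have "vsum f T = add C (vsum f S) (vsum f (T - S))"
    using vsum_Un_disjoint[of S "T - S" f] assms by (metis Diff_disjoint finite_Diff finite_subset)
  also have "vsum f (T - S) = zer C" using assms by (intro vsum_zer) auto
  finally show ?thesis using assms by (metis add_zer subset_iff vsum_closed)
qed

lemma vsum_smul:
  assumes "finite S" "\<And>x. x \<in> S \<Longrightarrow> f x \<in> car C"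
  shows "smul C c (vsum f S) = vsum (\<lambda>x. smul C c (f x)) S"
  using assms
proof (induction S rule: finite_induct)
  case empty then show ?case by simp
next
  case (insert a S)
  have "vsum f (insert a S) = add C (f a) (vsum f S)" by (rule vsum_insert) (use insert in auto)
  moreover have "vsum (\<lambda>x. smul C c (f x)) (insert a S) = add C (smul C c (f a)) (vsum (\<lambda>x. smul C c (f x)) S)"
    by (rule vsum_insert) (use insert in auto)
  ultimately show ?case using insert by (simp add: smul_add)
qed

lemma vsum_single[simp]: "f a \<in> car C \<Longrightarrow> vsum f {a} = f a"
  using vsum_insert[of "{}" a f] by simp

lemma vsum_reindex:
  "inj_on h A \<Longrightarrow> (\<And>x. x \<in> h ` A \<Longrightarrow> f x \<in> car C) \<Longrightarrow> vsum f (h ` A) = vsum (f \<circ> h) A"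
  unfolding vsum_def using CG.finprod_reindex[of f h A] by (auto simp: Pi_def o_def)

lemma vsum_UN_disjoint:
  assumes "finite I" "\<And>i. i \<in> I \<Longrightarrow> finite (A i)"
    "pairwise (\<lambda>i j. disjnt (A i) (A j)) I" "\<And>x. x \<in> (\<Union>i\<in>I. A i) \<Longrightarrow> f x \<in> car C"
  shows "vsum f (\<Union>i\<in>I. A i) = vsum (\<lambda>i. vsum f (A i)) I"
  unfolding vsum_def using assms by (subst CG.finprod_UN_disjoint) (fastforce simp: Pi_def pairwise_def disjnt_def)+

lemma vsum_neg:
  assumes "finite S" "\<And>x. x \<in> S \<Longrightarrow> f x \<in> car C"
  shows "neg (vsum f S) = vsum (\<lambda>x. neg (f x)) S"
  unfolding neg_def using vsum_smul assms by blast

lemma vsumn_eq: "(\<And>i. i < m \<Longrightarrow> f i \<in> car C) \<Longrightarrow> vsumn C f m = vsum f {..<m}"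
proof (induction m)
  case 0 then show ?case by simp
next
  case (Suc m)
  have "vsum f {..<Suc m} = add C (f m) (vsum f {..<m})"
    unfolding lessThan_Suc by (rule vsum_insert) (use Suc in auto)
  moreover have "vsum f {..<m} \<in> car C" by (rule vsum_closed) (use Suc in auto)
  ultimately show ?case using Suc add_comm[of "vsum f {..<m}" "f m"] by simp
qed

definition lc :: "'v set \<Rightarrow> ('v \<Rightarrow> 'k) \<Rightarrow> 'v" where
  "lc S c = vsum (\<lambda>v. smul C (c v) v) S"

lemma lc_closed[simp]: "S \<subseteq> car C \<Longrightarrow> lc S c \<in> car C"
  unfolding lc_def by (rule vsum_closed) auto

lemma lc_empty[simp]: "lc {} c = zer C" unfolding lc_def by simp

lemma lc_insert: "finite S \<Longrightarrow> a \<notin> S \<Longrightarrow> insert a S \<subseteq> car C \<Longrightarrow>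
   lc (insert a S) c = add C (smul C (c a) a) (lc S c)"
  unfolding lc_def by (rule vsum_insert) auto

lemma lc_cong: "S \<subseteq> car C \<Longrightarrow> (\<And>v. v \<in> S \<Longrightarrow> c v = d v) \<Longrightarrow> lc S c = lc S d"
  unfolding lc_def by (rule vsum_cong) auto

lemma lc_add: "S \<subseteq> car C \<Longrightarrow> add C (lc S c) (lc S d) = lc S (\<lambda>v. c v + d v)"
  unfolding lc_def by (subst vsum_add[symmetric]) (auto intro!: vsum_cong simp: add_smul)

lemma lc_smul: "finite S \<Longrightarrow> S \<subseteq> car C \<Longrightarrow> smul C a (lc S c) = lc S (\<lambda>v. a * c v)"
  unfolding lc_def by (subst vsum_smul) (auto intro!: vsum_cong simp: smul_smul)

lemma lc_neg: "finite S \<Longrightarrow> S \<subseteq> car C \<Longrightarrow> neg (lc S c) = lc S (\<lambda>v. - c v)"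
  unfolding neg_def by (subst lc_smul) auto

lemma lc_mono_neutral: "finite T \<Longrightarrow> S \<subseteq> T \<Longrightarrow> T \<subseteq> car C \<Longrightarrow> (\<And>v. v \<in> T - S \<Longrightarrow> c v = 0) \<Longrightarrow>
   lc S c = lc T c"
  unfolding lc_def by (rule vsum_mono_neutral) auto

lemma lc_supp: "finite S \<Longrightarrow> S \<subseteq> car C \<Longrightarrow> lc S c = lc {v\<in>S. c v \<noteq> 0} c"
  by (rule lc_mono_neutral[symmetric]) auto

lemma lc_Un_disjoint: "finite A \<Longrightarrow> finite B \<Longrightarrow> A \<inter> B = {} \<Longrightarrow> A \<union> B \<subseteq> car C \<Longrightarrow>
  lc (A \<union> B) c = add C (lc A c) (lc B c)"
  unfolding lc_def by (rule vsum_Un_disjoint) auto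

lemma lc_single[simp]: "a \<in> car C \<Longrightarrow> lc {a} c = smul C (c a) a"
  unfolding lc_def by simp

lemma lc_zero: "S \<subseteq> car C \<Longrightarrow> (\<And>v. v \<in> S \<Longrightarrow> c v = 0) \<Longrightarrow> lc S c = zer C"
  unfolding lc_def by (rule vsum_zer) auto

lemma lc_extend: "finite S \<Longrightarrow> finite T \<Longrightarrow> S \<subseteq> T \<Longrightarrow> T \<subseteq> car C \<Longrightarrow>
   lc S c = lc T (\<lambda>v. if v \<in> S then c v else 0)"
proof -
  assume a: "finite S" "finite T" "S \<subseteq> T" "T \<subseteq> car C"
  have "lc S c = lc S (\<lambda>v. if v \<in> S then c v else 0)" using a by (intro lc_cong) auto
  also have "\<dots> = lc T (\<lambda>v. if v \<in> S then c v else 0)" using a by (intro lc_mono_neutral) auto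
  finally show ?thesis .
qed

lemma lc_add2:
  assumes "finite S" "finite T" "S \<union> T \<subseteq> car C"
  shows "add C (lc S c) (lc T d) = lc (S \<union> T) (\<lambda>v. (if v \<in> S then c v else 0) + (if v \<in> T then d v else 0))"
proof -
  have "lc S c = lc (S \<union> T) (\<lambda>v. if v \<in> S then c v else 0)" using assms by (intro lc_extend) auto
  moreover have "lc T d = lc (S \<union> T) (\<lambda>v. if v \<in> T then d v else 0)" using assms by (intro lc_extend) auto
  ultimately show ?thesis using assms by (simp add: lc_add)
qed

lemma lc_sub2:
  assumes "finite S" "finite T" "S \<union> T \<subseteq> car C"
  shows "add C (lc S c) (neg (lc T d)) = lc (S \<union> T) (\<lambda>v. (if v \<in> S then c v else 0) - (if v \<in> T then d v else 0))"
  using lc_add2[OF assms, of c "\<lambda>v. - d v"] assms by (simp add: lc_neg) (rule lc_cong; auto)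

definition subsp :: "'v set \<Rightarrow> bool" where
  "subsp U \<longleftrightarrow> U \<subseteq> car C \<and> zer C \<in> U \<and> (\<forall>x\<in>U. \<forall>y\<in>U. add C x y \<in> U) \<and> (\<forall>c. \<forall>x\<in>U. smul C c x \<in> U)"

lemma subspD: assumes "subsp U"
  shows "U \<subseteq> car C" "zer C \<in> U" "x \<in> U \<Longrightarrow> y \<in> U \<Longrightarrow> add C x y \<in> U" "x \<in> U \<Longrightarrow> smul C c x \<in> U"
    "x \<in> U \<Longrightarrow> neg x \<in> U" "x \<in> U \<Longrightarrow> x \<in> car C"
  using assms unfolding subsp_def neg_def by auto

lemma subsp_vsum: assumes U: "subsp U" and f: "\<And>x. x \<in> S \<Longrightarrow> f x \<in> U" shows "vsum f S \<in> U"
proof (cases "finite S")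
  case True
  from True f show ?thesis
  proof (induction S rule: finite_induct)
    case empty then show ?case using subspD[OF U] by simp
  next
    case (insert a S)
    then show ?case using subspD[OF U] by (subst vsum_insert) auto
  qed
next
  case False then show ?thesis
    using subspD(2)[OF U] by (simp add: vsum_def)
qed

lemma subsp_lc: "subsp U \<Longrightarrow> S \<subseteq> U \<Longrightarrow> lc S c \<in> U"
  unfolding lc_def by (rule subsp_vsum) (auto dest: subspD)

lemma subsp_car: "subsp (car C)"
  unfolding subsp_def by auto

lemma subsp_Int: "subsp A \<Longrightarrow> subsp B \<Longrightarrow> subsp (A \<inter> B)"
  unfolding subsp_def by auto

definition ssum :: "'v set \<Rightarrow> 'v set \<Rightarrow> 'v set" where
  "ssum A B = {add C a b | a b. a \<in> A \<and> b \<in> B}"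

lemma subsp_ssum: assumes "subsp A" "subsp B" shows "subsp (ssum A B)"
proof -
  note A = subspD[OF assms(1)] and B = subspD[OF assms(2)]
  have sw: "add C (add C a b) (add C a' b') = add C (add C a a') (add C b b')"
    if "a \<in> car C" "b \<in> car C" "a' \<in> car C" "b' \<in> car C" for a b a' b'
    using that by (metis add_assoc add_closed add_comm)
  have "ssum A B \<subseteq> car C" unfolding ssum_def using A B by auto
  moreover have "zer C \<in> ssum A B" unfolding ssum_def
    by (rule CollectI, rule exI[of _ "zer C"], rule exI[of _ "zer C"]) (use A B in simp)
  moreover have "add C x y \<in> ssum A B" if xy: "x \<in> ssum A B" "y \<in> ssum A B" for x y
  proof -
    obtain a b where ab: "x = add C a b" "a \<in> A" "b \<in> B" using xy unfolding ssum_def by auto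
    obtain a' b' where ab': "y = add C a' b'" "a' \<in> A" "b' \<in> B" using xy unfolding ssum_def by auto
    have "add C x y = add C (add C a a') (add C b b')" using ab ab' A B sw by simp
    then show ?thesis unfolding ssum_def using ab ab' A B by (intro CollectI exI[of _ "add C a a'"] exI[of _ "add C b b'"]) auto
  qed
  moreover have "smul C c x \<in> ssum A B" if xx: "x \<in> ssum A B" for x c
  proof -
    obtain a b where ab: "x = add C a b" "a \<in> A" "b \<in> B" using xx unfolding ssum_def by auto
    have "smul C c x = add C (smul C c a) (smul C c b)" using ab A B smul_add by simp
    then show ?thesis unfolding ssum_def using ab A B by (intro CollectI exI[of _ "smul C c a"] exI[of _ "smul C c b"]) auto
  qed
  ultimately show ?thesis unfolding subsp_def by simp
qed

end

context VS
begin

definition inspan :: "'v set \<Rightarrow> 'v \<Rightarrow> bool" where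
  "inspan B x \<longleftrightarrow> (\<exists>S c. finite S \<and> S \<subseteq> B \<and> x = lc S c)"

lemma inspan_zer: "inspan B (zer C)"
  unfolding inspan_def by (rule exI[of _ "{}"]) simp

lemma inspan_add: assumes "B \<subseteq> car C" "inspan B x" "inspan B y" shows "inspan B (add C x y)"
proof -
  obtain S c where S: "finite S" "S \<subseteq> B" "x = lc S c" using assms unfolding inspan_def by auto
  obtain T d where T: "finite T" "T \<subseteq> B" "y = lc T d" using assms unfolding inspan_def by auto
  show ?thesis unfolding inspan_def using S T assms lc_add2[of S T c d]
    by (intro exI[of _ "S \<union> T"]) auto
qed

lemma inspan_smul: assumes "B \<subseteq> car C" "inspan B x" shows "inspan B (smul C a x)"
proof -
  obtain S c where S: "finite S" "S \<subseteq> B" "x = lc S c" using assms unfolding inspan_def by auto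
  show ?thesis unfolding inspan_def using S assms lc_smul[of S a c]
    by (intro exI[of _ S]) auto
qed

lemma inspan_neg: assumes "B \<subseteq> car C" "inspan B x" shows "inspan B (neg x)"
  unfolding neg_def using inspan_smul assms by blast

lemma inspan_mem: "b \<in> B \<Longrightarrow> b \<in> car C \<Longrightarrow> inspan B b"
  unfolding inspan_def by (intro exI[of _ "{b}"] exI[of _ "\<lambda>_. 1"]) auto

lemma inspan_mono: "inspan A x \<Longrightarrow> A \<subseteq> B \<Longrightarrow> inspan B x"
  unfolding inspan_def by blast

lemma inspan_subsp: "subsp U \<Longrightarrow> B \<subseteq> U \<Longrightarrow> inspan B x \<Longrightarrow> x \<in> U"
  unfolding inspan_def using subsp_lc by blast

lemma inspan_car: "B \<subseteq> car C \<Longrightarrow> inspan B x \<Longrightarrow> x \<in> car C"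
  using inspan_subsp subsp_car by blast

definition indepm :: "'v set \<Rightarrow> 'v set \<Rightarrow> bool" where
  "indepm A S \<longleftrightarrow> (\<forall>T c. finite T \<longrightarrow> T \<subseteq> S \<longrightarrow> lc T c \<in> A \<longrightarrow> (\<forall>v\<in>T. c v = 0))"

lemma chain_finite_sub:
  assumes "finite T" "T \<subseteq> \<Union>Ch" "Ch \<noteq> {}" "chain\<^sub>\<subseteq> Ch"
  shows "\<exists>X\<in>Ch. T \<subseteq> X"
  using finite_subset_Union_chain[of T Ch UNIV] assms chain_subset_alt_def by metis

lemma relbasis:
  assumes A: "subsp A" and W: "subsp W"
  shows "\<exists>S\<subseteq>W. indepm A S \<and> (\<forall>w\<in>W. \<exists>T c a. finite T \<and> T \<subseteq> S \<and> a \<in> A \<and> w = add C (lc T c) a)"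
proof -
  define F where "F = {S. S \<subseteq> W \<and> indepm A S}"
  have "\<forall>Ch\<in>chains F. \<Union>Ch \<in> F"
  proof
    fix Ch assume Ch: "Ch \<in> chains F"
    show "\<Union>Ch \<in> F"
    proof (cases "Ch = {}")
      case True then show ?thesis unfolding F_def indepm_def by auto
    next
      case False
      have "indepm A (\<Union>Ch)" unfolding indepm_def
      proof (intro allI impI)
        fix T c assume T: "finite T" "T \<subseteq> \<Union>Ch" "lc T c \<in> A"
        obtain X where X: "X \<in> Ch" "T \<subseteq> X" using chain_finite_sub[OF T(1,2) False] Ch
          unfolding chains_def by auto
        then have "indepm A X" using Ch unfolding chains_def F_def by auto
        then show "\<forall>v\<in>T. c v = 0" using T X unfolding indepm_def by blast
      qed
      moreover have "\<Union>Ch \<subseteq> W" using Ch unfolding chains_def F_def by auto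
      ultimately show ?thesis unfolding F_def by auto
    qed
  qed
  then obtain M where M: "M \<in> F" "\<forall>X\<in>F. M \<subseteq> X \<longrightarrow> X = M" using Zorn_Lemma[of F] by blast
  have MW: "M \<subseteq> W" and Mi: "indepm A M" using M unfolding F_def by auto
  note Ws = subspD[OF W] and As = subspD[OF A]
  have MC: "M \<subseteq> car C" using MW Ws by auto
  have "\<exists>T c a. finite T \<and> T \<subseteq> M \<and> a \<in> A \<and> w = add C (lc T c) a" if w: "w \<in> W" for w
  proof (rule ccontr)
    assume nrep: "\<not> ?thesis"
    have wC: "w \<in> car C" using w Ws by auto
    have "indepm A (insert w M)" unfolding indepm_def
    proof (intro allI impI)
      fix T c assume T: "finite T" "T \<subseteq> insert w M" "lc T c \<in> A"
      show "\<forall>v\<in>T. c v = 0"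
      proof (cases "w \<in> T")
        case False then show ?thesis using Mi T unfolding indepm_def by blast
      next
        case True
        define T' where "T' = T - {w}"
        have T': "finite T'" "T' \<subseteq> M" "w \<notin> T'" "T = insert w T'" using T True unfolding T'_def by auto
        have TC: "insert w T' \<subseteq> car C" using T' MC wC by auto
        have eq: "lc T c = add C (smul C (c w) w) (lc T' c)" using T' TC lc_insert by simp
        show ?thesis
        proof (cases "c w = 0")
          case True
          have z: "smul C (c w) w = zer C" using True wC by simp
          have l'C: "lc T' c \<in> car C" using T' MC by (intro lc_closed) auto
          have "lc T c = lc T' c" using eq z zer_add[OF l'C] by simp
          then have "lc T' c \<in> A" using T(3) by simp
          then have "\<forall>v\<in>T'. c v = 0" using Mi T' unfolding indepm_def by blast
          then show ?thesis using True T' by auto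
        next
          case False
          define a where "a = smul C (inverse (c w)) (lc T c)"
          have aA: "a \<in> A" unfolding a_def using As T by auto
          have l'C: "lc T' c \<in> car C" using T' MC by auto
          have "smul C (inverse (c w)) (lc T c) = add C w (smul C (inverse (c w)) (lc T' c))"
            using eq False wC l'C by (simp add: smul_add)
          have "w = add C a (neg (smul C (inverse (c w)) (lc T' c)))"
            unfolding a_def by (rule add_move) (use wC l'C \<open>smul C (inverse (c w)) (lc T c) = _\<close> in auto)
          also have "neg (smul C (inverse (c w)) (lc T' c)) = lc T' (\<lambda>v. - (inverse (c w) * c v))"
            using T' MC by (simp add: lc_smul lc_neg)
          finally have w1: "w = add C a (lc T' (\<lambda>v. - (inverse (c w) * c v)))" .
          have aC: "a \<in> car C" using aA As(6) by blast
          have lC: "lc T' (\<lambda>v. - (inverse (c w) * c v)) \<in> car C" using T' MC by (intro lc_closed) auto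
          have "w = add C (lc T' (\<lambda>v. - (inverse (c w) * c v))) a"
            using w1 add_comm[OF aC lC] by simp
          then show ?thesis using nrep T' aA by blast
        qed
      qed
    qed
    then have "insert w M \<in> F" using w MW unfolding F_def by auto
    then have "insert w M = M" using M by blast
    then have "w \<in> M" by blast
    then have "w = add C (lc {w} (\<lambda>_. 1)) (zer C)" using wC by simp
    then show False using nrep \<open>w \<in> M\<close> As by blast
  qed
  then show ?thesis using MW Mi by blast
qed

definition filtr :: "('v \<Rightarrow> ereal) \<Rightarrow> 'v set \<Rightarrow> bool" where
  "filtr \<phi> U \<longleftrightarrow> (\<forall>x\<in>U. \<phi> x = -\<infinity> \<longleftrightarrow> x = zer C) \<and>
     (\<forall>x\<in>U. \<forall>y\<in>U. \<phi> (add C x y) \<le> max (\<phi> x) (\<phi> y)) \<and> (\<forall>c. \<forall>x\<in>U. \<phi> (smul C c x) \<le> \<phi> x)"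

context
  fixes \<phi> U
  assumes U: "subsp U" and fU: "filtr \<phi> U"
begin

lemma f_zer[simp]: "\<phi> (zer C) = -\<infinity>"
  using fU subspD[OF U] unfolding filtr_def by auto

lemma f_ninf: "x \<in> U \<Longrightarrow> x \<noteq> zer C \<Longrightarrow> \<phi> x \<noteq> -\<infinity>"
  using fU unfolding filtr_def by auto

lemma f_add: "x \<in> U \<Longrightarrow> y \<in> U \<Longrightarrow> \<phi> (add C x y) \<le> max (\<phi> x) (\<phi> y)"
  using fU unfolding filtr_def by auto

lemma f_smul_le: "x \<in> U \<Longrightarrow> \<phi> (smul C c x) \<le> \<phi> x"
  using fU unfolding filtr_def by auto

lemma f_smul: "x \<in> U \<Longrightarrow> c \<noteq> 0 \<Longrightarrow> \<phi> (smul C c x) = \<phi> x"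
  using f_smul_le[of x c] f_smul_le[of "smul C c x" "inverse c"] subspD[OF U]
  by (metis antisym smul_inv_cancel)

lemma f_neg: "x \<in> U \<Longrightarrow> \<phi> (neg x) = \<phi> x"
  unfolding neg_def by (rule f_smul) auto

lemma f_add_lt: assumes "x \<in> U" "y \<in> U" "\<phi> x < \<phi> y" shows "\<phi> (add C x y) = \<phi> y"
proof -
  have xy: "add C x y \<in> U" using assms subspD[OF U] by auto
  have "y = add C (add C x y) (neg x)"
    using assms subspD[OF U] by (metis add_assoc add_comm add_neg add_zer neg_closed)
  then have "\<phi> y \<le> max (\<phi> (add C x y)) (\<phi> x)"
    using f_add[OF xy, of "neg x"] f_neg assms subspD[OF U] by metis
  moreover have "\<phi> (add C x y) \<le> \<phi> y" using f_add[OF assms(1,2)] assms by simp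
  ultimately show ?thesis using assms by (auto simp: max_def split: if_splits)
qed

lemma f_lc_le: "finite S \<Longrightarrow> S \<subseteq> U \<Longrightarrow> \<phi> (lc S c) \<le> Sup (\<phi> ` {v\<in>S. c v \<noteq> 0})"
proof (induction S rule: finite_induct)
  case empty then show ?case by simp
next
  case (insert a S)
  have SC: "insert a S \<subseteq> car C" using insert subspD[OF U] by auto
  have e: "lc (insert a S) c = add C (smul C (c a) a) (lc S c)" using insert SC lc_insert by simp
  have aU: "a \<in> U" "smul C (c a) a \<in> U" "lc S c \<in> U" using insert subspD[OF U] subsp_lc[OF U] by auto
  have "\<phi> (lc (insert a S) c) \<le> max (\<phi> (smul C (c a) a)) (\<phi> (lc S c))"
    using e f_add aU by simp
  also have "\<dots> \<le> Sup (\<phi> ` {v\<in>insert a S. c v \<noteq> 0})"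
  proof (rule max.boundedI)
    show "\<phi> (smul C (c a) a) \<le> Sup (\<phi> ` {v\<in>insert a S. c v \<noteq> 0})"
    proof (cases "c a = 0")
      case True
      have "a \<in> car C" using aU(1) U by (rule subspD(6)[rotated])
      then have "\<phi> (smul C (c a) a) = -\<infinity>" using True by simp
      then show ?thesis by simp
    next
      case False then show ?thesis using f_smul aU by (auto intro!: Sup_upper)
    qed
    show "\<phi> (lc S c) \<le> Sup (\<phi> ` {v\<in>insert a S. c v \<noteq> 0})"
    proof -
      have "Sup (\<phi> ` {v\<in>S. c v \<noteq> 0}) \<le> Sup (\<phi> ` {v\<in>insert a S. c v \<noteq> 0})"
        by (rule Sup_subset_mono) auto
      moreover have "\<phi> (lc S c) \<le> Sup (\<phi> ` {v\<in>S. c v \<noteq> 0})" using insert by simp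
      ultimately show ?thesis by (rule order_trans[rotated])
    qed
  qed
  finally show ?case .
qed

end

definition orth :: "('v \<Rightarrow> ereal) \<Rightarrow> 'v set \<Rightarrow> bool" where
  "orth \<phi> B \<longleftrightarrow> (\<forall>S c. finite S \<longrightarrow> S \<subseteq> B \<longrightarrow> \<phi> (lc S c) = Sup (\<phi> ` {v\<in>S. c v \<noteq> 0}))"

end

lemma sup_fin_lt:
  fixes X :: "ereal set"
  assumes "finite X" "\<And>r. r \<in> X \<Longrightarrow> r < s" "s \<noteq> -\<infinity>"
  shows "Sup X < s"
proof (cases "X = {}")
  case True then show ?thesis using assms by (cases s) (auto simp: bot_ereal_def)
next
  case False
  then have "Sup X = Max X" using assms by (simp add: Max_Sup)
  moreover have "Max X \<in> X" using assms False by simp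
  ultimately show ?thesis using assms by simp
qed

lemma sup_fin_le:
  fixes X :: "ereal set"
  assumes "\<And>r. r \<in> X \<Longrightarrow> r \<le> s"
  shows "Sup X \<le> s"
  using assms by (simp add: Sup_least)

context VS
begin

lemma subsp_filtset:
  assumes U: "subsp U" and fp: "filtr \<phi> U" and fq: "filtr \<psi> U"
    and P: "\<And>a b. a \<le> b \<Longrightarrow> P b \<Longrightarrow> P a" "P (-\<infinity>)"
    and Q: "\<And>a b. a \<le> b \<Longrightarrow> Q b \<Longrightarrow> Q a" "Q (-\<infinity>)"
  shows "subsp {x\<in>U. P (\<phi> x) \<and> Q (\<psi> x)}"
proof -
  note Us = subspD[OF U]
  have Pm: "P (max a b)" if "P a" "P b" for a b using that by (simp add: max_def)
  have Qm: "Q (max a b)" if "Q a" "Q b" for a b using that by (simp add: max_def)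
  show ?thesis unfolding subsp_def
  proof (intro conjI ballI allI)
    show "{x \<in> U. P (\<phi> x) \<and> Q (\<psi> x)} \<subseteq> car C" using Us by auto
    show "zer C \<in> {x \<in> U. P (\<phi> x) \<and> Q (\<psi> x)}" using Us f_zer[OF U fp] f_zer[OF U fq] P Q by simp
  next
    fix x y assume x: "x \<in> {x \<in> U. P (\<phi> x) \<and> Q (\<psi> x)}" and y: "y \<in> {x \<in> U. P (\<phi> x) \<and> Q (\<psi> x)}"
    have "P (\<phi> (add C x y))" using f_add[OF U fp, of x y] x y Pm P(1) by blast
    moreover have "Q (\<psi> (add C x y))" using f_add[OF U fq, of x y] x y Qm Q(1) by blast
    ultimately show "add C x y \<in> {x \<in> U. P (\<phi> x) \<and> Q (\<psi> x)}" using x y Us by simp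
  next
    fix c x assume x: "x \<in> {x \<in> U. P (\<phi> x) \<and> Q (\<psi> x)}"
    have "P (\<phi> (smul C c x))" using f_smul_le[OF U fp, of x c] x P(1) by blast
    moreover have "Q (\<psi> (smul C c x))" using f_smul_le[OF U fq, of x c] x Q(1) by blast
    ultimately show "smul C c x \<in> {x \<in> U. P (\<phi> x) \<and> Q (\<psi> x)}" using x Us by simp
  qed
qed

lemma lc_in_indep_zero:
  assumes "indepm A S" "b \<in> S" "b \<in> car C" "b \<in> A"
  shows False
proof -
  have "lc {b} (\<lambda>_. 1) = b" using assms by simp
  then show False using assms unfolding indepm_def
    by (metis (no_types, lifting) empty_subsetI finite.emptyI finite_insert insert_subset one_neq_zero singletonI)
qed

lemma orth_gen:
  assumes U: "subsp U" and fp: "filtr \<phi> U" and fq: "filtr \<psi> U"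
    and Bp: "\<And>s t b. b \<in> Bf s t \<Longrightarrow> b \<in> U \<and> \<phi> b = s \<and> \<psi> b = t"
    and Bi: "\<And>s t. indepm (ssum {x\<in>U. (\<phi> x < s \<or> \<phi> x = -\<infinity>) \<and> \<psi> x \<le> t}
                              {x\<in>U. \<phi> x \<le> s \<and> (\<psi> x < t \<or> \<psi> x = -\<infinity>)}) (Bf s t)"
  shows "orth \<phi> {b. \<exists>s t. b \<in> Bf s t}"
  unfolding orth_def
proof (intro allI impI)
  fix S and c :: "'v \<Rightarrow> 'k" assume S: "finite S" "S \<subseteq> {b. \<exists>s t. b \<in> Bf s t}"
  note Us = subspD[OF U]
  define Fl where "Fl s t = {x\<in>U. (\<phi> x < s \<or> \<phi> x = -\<infinity>) \<and> \<psi> x \<le> t}" for s t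
  define Fr where "Fr s t = {x\<in>U. \<phi> x \<le> s \<and> (\<psi> x < t \<or> \<psi> x = -\<infinity>)}" for s t
  have SU: "S \<subseteq> U" using S Bp by blast
  have SC: "S \<subseteq> car C" using SU Us by auto
  have nz: "b \<noteq> zer C" if "b \<in> Bf s t" for b s t
  proof
    assume b0: "b = zer C"
    have "zer C \<in> ssum (Fl s t) (Fr s t)" unfolding ssum_def Fl_def Fr_def
      using Us f_zer[OF U fp] f_zer[OF U fq] by (intro CollectI exI[of _ "zer C"]) auto
    then show False using lc_in_indep_zero[OF Bi[of s t], of b] that b0 unfolding Fl_def Fr_def by simp
  qed
  define S' where "S' = {v\<in>S. c v \<noteq> 0}"
  have S'': "finite S'" "S' \<subseteq> S" "S' \<subseteq> U" "S' \<subseteq> car C" using S SU SC unfolding S'_def by auto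
  have lcS: "lc S c = lc S' c" unfolding S'_def using lc_supp[OF S(1) SC] .
  show "\<phi> (lc S c) = Sup (\<phi> ` {v \<in> S. c v \<noteq> 0})"
  proof (cases "S' = {}")
    case True
    then have "lc S' c = zer C" by simp
    moreover have emp: "{v \<in> S. c v \<noteq> 0} = {}" using True unfolding S'_def by simp
    have "Sup (\<phi> ` {v \<in> S. c v \<noteq> 0}) = -\<infinity>" unfolding emp by (simp add: bot_ereal_def)
    ultimately show ?thesis using lcS f_zer[OF U fp] by simp
  next
    case False
    define s where "s = Max (\<phi> ` S')"
    have sSup: "Sup (\<phi> ` S') = s" unfolding s_def using False S'' by (simp add: Max_Sup)
    have sin: "s \<in> \<phi> ` S'" unfolding s_def using False S'' by simp
    have sge: "\<phi> v \<le> s" if "v \<in> S'" for v unfolding s_def using that S'' by simp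
    have sninf: "s \<noteq> -\<infinity>" using sin nz S S'' f_ninf[OF U fp] unfolding S'_def by force
    have le: "\<phi> (lc S' c) \<le> s"
      using f_lc_le[OF U fp S''(1,3), of c] sSup unfolding S'_def by simp
    show ?thesis
    proof (rule ccontr)
      assume "\<phi> (lc S c) \<noteq> Sup (\<phi> ` {v \<in> S. c v \<noteq> 0})"
      then have lt: "\<phi> (lc S' c) < s" using le lcS sSup unfolding S'_def by simp
      define Ss where "Ss = {v\<in>S'. \<phi> v = s}"
      have Ss: "finite Ss" "Ss \<noteq> {}" "Ss \<subseteq> S'" using sin S'' unfolding Ss_def by auto
      define t where "t = Max (\<psi> ` Ss)"
      have tin: "t \<in> \<psi> ` Ss" unfolding t_def using Ss by simp
      have tge: "\<psi> v \<le> t" if "v \<in> Ss" for v unfolding t_def using that Ss by simp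
      define Sst where "Sst = {v\<in>Ss. \<psi> v = t}"
      have Sst: "finite Sst" "Sst \<noteq> {}" "Sst \<subseteq> Ss" using tin Ss unfolding Sst_def by auto
      have SstB: "Sst \<subseteq> Bf s t"
      proof
        fix v assume v: "v \<in> Sst"
        then obtain s' t' where "v \<in> Bf s' t'" using S Ss S'' unfolding Sst_def by blast
        moreover then have "\<phi> v = s'" "\<psi> v = t'" using Bp by auto
        ultimately show "v \<in> Bf s t" using v unfolding Sst_def Ss_def by auto
      qed
      define Rl where "Rl = S' - Ss"
      define Rr where "Rr = Ss - Sst"
      have Rl: "finite Rl" "Rl \<subseteq> U" "Rl \<subseteq> car C" "\<And>v. v \<in> Rl \<Longrightarrow> \<phi> v < s"
        using S'' sge unfolding Rl_def Ss_def by (auto simp: order.strict_iff_order)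
      have Rr: "finite Rr" "Rr \<subseteq> U" "Rr \<subseteq> car C" "\<And>v. v \<in> Rr \<Longrightarrow> \<phi> v = s" "\<And>v. v \<in> Rr \<Longrightarrow> \<psi> v < t"
        using S'' Ss tge unfolding Rr_def Sst_def Ss_def by (auto simp: order.strict_iff_order)
      have SsU: "Ss \<subseteq> U" "Ss \<subseteq> car C" "Sst \<subseteq> car C" using Ss S'' Sst by auto
      have e1: "lc S' c = add C (lc Ss c) (lc Rl c)"
      proof -
        have "S' = Ss \<union> Rl" "Ss \<inter> Rl = {}" using Ss unfolding Rl_def by auto
        then show ?thesis using lc_Un_disjoint[of Ss Rl c] Ss Rl S'' by simp
      qed
      have e2: "lc Ss c = add C (lc Sst c) (lc Rr c)"
      proof -
        have "Ss = Sst \<union> Rr" "Sst \<inter> Rr = {}" using Sst unfolding Rr_def by auto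
        then show ?thesis using lc_Un_disjoint[of Sst Rr c] Sst Rr SsU by simp
      qed
      have cl: "lc S' c \<in> U" "lc Ss c \<in> U" "lc Sst c \<in> U" "lc Rl c \<in> U" "lc Rr c \<in> U"
        using subsp_lc[OF U] S'' SsU Rl Rr Sst Ss by (meson order_trans)+
      have x1: "lc Ss c = add C (lc S' c) (neg (lc Rl c))"
        by (rule add_move) (use e1 cl Us in auto)
      have phRl: "\<phi> (lc Rl c) < s"
      proof -
        have "\<phi> (lc Rl c) \<le> Sup (\<phi> ` {v\<in>Rl. c v \<noteq> 0})" using f_lc_le[OF U fp Rl(1,2)] by simp
        also have "\<dots> < s" using Rl sninf by (intro sup_fin_lt) auto
        finally show ?thesis .
      qed
      have "\<phi> (lc Ss c) \<le> max (\<phi> (lc S' c)) (\<phi> (neg (lc Rl c)))"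
        unfolding x1 using f_add[OF U fp] cl Us by simp
      moreover have "max (\<phi> (lc S' c)) (\<phi> (neg (lc Rl c))) < s" using f_neg[OF U fp] cl phRl lt by simp
      ultimately have phSs: "\<phi> (lc Ss c) < s" by (rule le_less_trans)
      have psSs: "\<psi> (lc Ss c) \<le> t"
      proof -
        have "\<psi> (lc Ss c) \<le> Sup (\<psi> ` {v\<in>Ss. c v \<noteq> 0})" using f_lc_le[OF U fq Ss(1) SsU(1)] by simp
        also have "\<dots> \<le> t" using tge by (intro sup_fin_le) auto
        finally show ?thesis .
      qed
      have inFl: "lc Ss c \<in> Fl s t" unfolding Fl_def using phSs psSs cl by simp
      have phRr: "\<phi> (neg (lc Rr c)) \<le> s"
      proof -
        have "\<phi> (lc Rr c) \<le> Sup (\<phi> ` {v\<in>Rr. c v \<noteq> 0})" using f_lc_le[OF U fp Rr(1,2)] by simp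
        also have "\<dots> \<le> s" using Rr by (intro sup_fin_le) auto
        finally show ?thesis using f_neg[OF U fp] cl by simp
      qed
      have psRr: "\<psi> (neg (lc Rr c)) < t \<or> \<psi> (neg (lc Rr c)) = -\<infinity>"
      proof (cases "t = -\<infinity>")
        case True
        have "Rr = {}" using Rr(5) True by auto
        then show ?thesis using f_zer[OF U fq] Us by (simp add: neg_def)
      next
        case False
        have "\<psi> (lc Rr c) \<le> Sup (\<psi> ` {v\<in>Rr. c v \<noteq> 0})" using f_lc_le[OF U fq Rr(1,2)] by simp
        also have "\<dots> < t" using Rr False by (intro sup_fin_lt) auto
        finally show ?thesis using f_neg[OF U fq] cl by simp
      qed
      have inFr: "neg (lc Rr c) \<in> Fr s t" unfolding Fr_def using phRr psRr cl Us by simp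
      have x2: "lc Sst c = add C (lc Ss c) (neg (lc Rr c))"
        by (rule add_move) (use e2 cl Us in auto)
      have "lc Sst c \<in> ssum (Fl s t) (Fr s t)" unfolding ssum_def using x2 inFl inFr by blast
      then have "\<forall>v\<in>Sst. c v = 0" using Bi[of s t] Sst SstB unfolding indepm_def Fl_def Fr_def by blast
      then show False using Sst unfolding Sst_def Ss_def S'_def by auto
    qed
  qed
qed

lemma wo_min: "well_ordered_set S \<Longrightarrow> T \<subseteq> S \<Longrightarrow> T \<noteq> {} \<Longrightarrow> \<exists>m\<in>T. \<forall>t\<in>T. m \<le> t"
  unfolding well_ordered_set_def by blast

lemma ssum_comm: assumes "subsp A" "subsp B" shows "ssum A B = ssum B A"
proof -
  have "x \<in> ssum Y X" if xs: "x \<in> ssum X Y" "subsp X" "subsp Y" for x X Y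
  proof -
    obtain a b where ab: "x = add C a b" "a \<in> X" "b \<in> Y" using xs unfolding ssum_def by auto
    have "a \<in> car C" "b \<in> car C" using ab xs subspD(6) by auto
    then have "x = add C b a" using ab add_comm by simp
    then show ?thesis unfolding ssum_def using ab by auto
  qed
  then show ?thesis using assms by blast
qed

lemma bifilt:
  assumes U: "subsp U" and fp: "filtr \<phi> U" and fq: "filtr \<psi> U"
    and wp: "well_ordered_set (\<phi> ` (U - {zer C}))" and wq: "well_ordered_set (\<psi> ` (U - {zer C}))"
  shows "\<exists>B. B \<subseteq> U - {zer C} \<and> orth \<phi> B \<and> orth \<psi> B \<and> (\<forall>x\<in>U. inspan B x)"
proof -
  note Us = subspD[OF U]
  define Fa where "Fa s t = {x\<in>U. \<phi> x \<le> s \<and> \<psi> x \<le> t}" for s t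
  define Fl where "Fl s t = {x\<in>U. (\<phi> x < s \<or> \<phi> x = -\<infinity>) \<and> \<psi> x \<le> t}" for s t
  define Fr where "Fr s t = {x\<in>U. \<phi> x \<le> s \<and> (\<psi> x < t \<or> \<psi> x = -\<infinity>)}" for s t
  have sFa: "subsp (Fa s t)" for s t unfolding Fa_def
    by (rule subsp_filtset[OF U fp fq]) auto
  have sFl: "subsp (Fl s t)" for s t unfolding Fl_def
    by (rule subsp_filtset[OF U fp fq]) auto
  have sFr: "subsp (Fr s t)" for s t unfolding Fr_def
    by (rule subsp_filtset[OF U fp fq]) auto
  define P where "P s t S \<longleftrightarrow> S \<subseteq> Fa s t \<and> indepm (ssum (Fl s t) (Fr s t)) S \<and>
     (\<forall>w\<in>Fa s t. \<exists>T c a. finite T \<and> T \<subseteq> S \<and> a \<in> ssum (Fl s t) (Fr s t) \<and> w = add C (lc T c) a)" for s t S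
  have ex: "\<exists>S. P s t S" for s t
    using relbasis[OF subsp_ssum[OF sFl sFr] sFa, of s t s t s t] unfolding P_def by (elim exE conjE) (intro exI conjI)
  define Bf where "Bf s t = (SOME S. P s t S)" for s t
  have PB: "P s t (Bf s t)" for s t unfolding Bf_def using ex by (rule someI_ex)
  have Bf: "\<And>s t. Bf s t \<subseteq> Fa s t" "\<And>s t. indepm (ssum (Fl s t) (Fr s t)) (Bf s t)"
    "\<And>s t w. w \<in> Fa s t \<Longrightarrow> \<exists>T c a. finite T \<and> T \<subseteq> Bf s t \<and> a \<in> ssum (Fl s t) (Fr s t) \<and> w = add C (lc T c) a"
    using PB unfolding P_def by blast+
  have Bp: "b \<in> U \<and> \<phi> b = s \<and> \<psi> b = t \<and> b \<noteq> zer C" if b: "b \<in> Bf s t" for b s t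
  proof -
    have bF: "b \<in> U" "\<phi> b \<le> s" "\<psi> b \<le> t" using b Bf(1) unfolding Fa_def by auto
    have bC: "b \<in> car C" using bF Us by auto
    have nA: "b \<notin> ssum (Fl s t) (Fr s t)" using lc_in_indep_zero[OF Bf(2) b bC] by blast
    have z1: "zer C \<in> Fr s t" "zer C \<in> Fl s t" using subspD(2)[OF sFr] subspD(2)[OF sFl] by auto
    have "\<phi> b = s"
    proof (rule ccontr)
      assume "\<phi> b \<noteq> s"
      then have "b \<in> Fl s t" using bF unfolding Fl_def by auto
      then have "add C b (zer C) \<in> ssum (Fl s t) (Fr s t)" unfolding ssum_def using z1 by blast
      then show False using nA bC by simp
    qed
    moreover have "\<psi> b = t"
    proof (rule ccontr)
      assume "\<psi> b \<noteq> t"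
      then have "b \<in> Fr s t" using bF unfolding Fr_def by auto
      then have "add C (zer C) b \<in> ssum (Fl s t) (Fr s t)" unfolding ssum_def using z1 by blast
      then show False using nA bC by simp
    qed
    moreover have "b \<noteq> zer C"
    proof
      assume "b = zer C"
      then have "add C (zer C) (zer C) \<in> ssum (Fl s t) (Fr s t)" unfolding ssum_def using z1 by blast
      then show False using nA \<open>b = zer C\<close> by simp
    qed
    ultimately show ?thesis using bF by simp
  qed
  define B where "B = {b. \<exists>s t. b \<in> Bf s t}"
  have BU: "B \<subseteq> U - {zer C}" unfolding B_def using Bp by blast
  have BC: "B \<subseteq> car C" using BU Us by auto
  have o1: "orth \<phi> B" unfolding B_def
    by (rule orth_gen[OF U fp fq]) (use Bp Bf(2) in \<open>auto simp: Fl_def Fr_def\<close>)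
  have o2: "orth \<psi> B"
  proof -
    have "orth \<psi> {b. \<exists>t s. b \<in> Bf s t}"
    proof (rule orth_gen[OF U fq fp])
      show "\<And>t s b. b \<in> Bf s t \<Longrightarrow> b \<in> U \<and> \<psi> b = t \<and> \<phi> b = s" using Bp by blast
      fix t s
      have "ssum {x \<in> U. (\<psi> x < t \<or> \<psi> x = - \<infinity>) \<and> \<phi> x \<le> s} {x \<in> U. \<psi> x \<le> t \<and> (\<phi> x < s \<or> \<phi> x = - \<infinity>)}
          = ssum (Fr s t) (Fl s t)"
      proof -
        have "{x \<in> U. (\<psi> x < t \<or> \<psi> x = - \<infinity>) \<and> \<phi> x \<le> s} = Fr s t" unfolding Fr_def by auto
        moreover have "{x \<in> U. \<psi> x \<le> t \<and> (\<phi> x < s \<or> \<phi> x = - \<infinity>)} = Fl s t" unfolding Fl_def by auto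
        ultimately show ?thesis by simp
      qed
      also have "\<dots> = ssum (Fl s t) (Fr s t)" using ssum_comm[OF sFr sFl] .
      finally show "indepm (ssum {x \<in> U. (\<psi> x < t \<or> \<psi> x = - \<infinity>) \<and> \<phi> x \<le> s} {x \<in> U. \<psi> x \<le> t \<and> (\<phi> x < s \<or> \<phi> x = - \<infinity>)}) (Bf s t)"
        using Bf(2) by simp
    qed
    moreover have "{b. \<exists>t s. b \<in> Bf s t} = B" unfolding B_def by blast
    ultimately show ?thesis by simp
  qed
  have span: "\<forall>x\<in>U. inspan B x"
  proof (rule ccontr)
    assume "\<not> (\<forall>x\<in>U. inspan B x)"
    define bad where "bad = {x\<in>U. \<not> inspan B x}"
    have bad_ne: "bad \<noteq> {}" using \<open>\<not> (\<forall>x\<in>U. inspan B x)\<close> unfolding bad_def by auto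
    have bad_nz: "zer C \<notin> bad" unfolding bad_def using inspan_zer by auto
    have "\<phi> ` bad \<subseteq> \<phi> ` (U - {zer C})" using bad_nz unfolding bad_def by auto
    then obtain s0 where s0: "s0 \<in> \<phi> ` bad" "\<forall>r\<in>\<phi> ` bad. s0 \<le> r"
      using wo_min[OF wp] bad_ne by blast
    define bad2 where "bad2 = {x\<in>bad. \<phi> x = s0}"
    have bad2_ne: "bad2 \<noteq> {}" using s0 unfolding bad2_def by auto
    have "\<psi> ` bad2 \<subseteq> \<psi> ` (U - {zer C})" using bad_nz unfolding bad2_def bad_def by auto
    then obtain t0 where t0: "t0 \<in> \<psi> ` bad2" "\<forall>r\<in>\<psi> ` bad2. t0 \<le> r"
      using wo_min[OF wq] bad2_ne by blast
    then obtain x where x: "x \<in> bad2" "\<psi> x = t0" by auto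
    have xU: "x \<in> U" and xs: "\<phi> x = s0" and xb: "\<not> inspan B x" using x unfolding bad2_def bad_def by auto
    have "x \<in> Fa s0 t0" unfolding Fa_def using xU xs x by simp
    from Bf(3)[OF this] obtain T c a where Tca: "finite T" "T \<subseteq> Bf s0 t0" "a \<in> ssum (Fl s0 t0) (Fr s0 t0)" "x = add C (lc T c) a"
      by (elim exE conjE) (rule that, assumption+)
    obtain a1 a2 where a12: "a = add C a1 a2" "a1 \<in> Fl s0 t0" "a2 \<in> Fr s0 t0" using Tca(3) unfolding ssum_def by auto
    have a1s: "inspan B a1"
    proof (rule ccontr)
      assume "\<not> inspan B a1"
      then have "a1 \<in> bad" using a12 unfolding bad_def Fl_def by auto
      then have "s0 \<le> \<phi> a1" using s0 by auto
      moreover have "a1 \<noteq> zer C" using \<open>a1 \<in> bad\<close> bad_nz by auto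
      then have "\<phi> a1 \<noteq> -\<infinity>" using f_ninf[OF U fp] a12 unfolding Fl_def by auto
      ultimately show False using a12 unfolding Fl_def by auto
    qed
    have a2s: "inspan B a2"
    proof (rule ccontr)
      assume "\<not> inspan B a2"
      then have a2b: "a2 \<in> bad" using a12 unfolding bad_def Fr_def by auto
      then have "s0 \<le> \<phi> a2" using s0 by auto
      then have "\<phi> a2 = s0" using a12 unfolding Fr_def by auto
      then have "a2 \<in> bad2" using a2b unfolding bad2_def by auto
      then have "t0 \<le> \<psi> a2" using t0 by auto
      moreover have "a2 \<noteq> zer C" using a2b bad_nz by auto
      then have "\<psi> a2 \<noteq> -\<infinity>" using f_ninf[OF U fq] a12 unfolding Fr_def by auto
      ultimately show False using a12 unfolding Fr_def by auto
    qed
    have "inspan B (lc T c)" unfolding inspan_def using Tca B_def by blast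
    then have "inspan B x" using Tca(4) a12(1) a1s a2s inspan_add[OF BC] by simp
    then show False using xb by simp
  qed
  show ?thesis using BU o1 o2 span by blast
qed

lemma filtr_mono: "filtr \<phi> W \<Longrightarrow> U \<subseteq> W \<Longrightarrow> filtr \<phi> U"
  unfolding filtr_def by blast

lemma wo_subset: "well_ordered_set S \<Longrightarrow> T \<subseteq> S \<Longrightarrow> well_ordered_set T"
  unfolding well_ordered_set_def by blast

lemma wo_finite: assumes "finite S" shows "well_ordered_set S"
  unfolding well_ordered_set_def
proof (intro allI impI)
  fix T assume "T \<subseteq> S" "T \<noteq> {}"
  then have "finite T" "T \<noteq> {}" using assms by (auto intro: finite_subset)
  then show "\<exists>m\<in>T. \<forall>t\<in>T. m \<le> t" by (intro bexI[of _ "Min T"]) auto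
qed

lemma orth_indep:
  assumes "orth \<phi> B" "\<And>b. b \<in> B \<Longrightarrow> \<phi> b \<noteq> -\<infinity>" "\<phi> (zer C) = -\<infinity>"
    "finite S" "S \<subseteq> B" "lc S c = zer C" "v \<in> S"
  shows "c v = 0"
proof (rule ccontr)
  assume cv: "c v \<noteq> 0"
  have "\<phi> (lc S c) = Sup (\<phi> ` {v\<in>S. c v \<noteq> 0})" using assms unfolding orth_def by blast
  then have "Sup (\<phi> ` {v\<in>S. c v \<noteq> 0}) = -\<infinity>" using assms by simp
  moreover have "\<phi> v \<le> Sup (\<phi> ` {v\<in>S. c v \<noteq> 0})" using cv assms by (intro Sup_upper) auto
  ultimately show False using assms by auto
qed

lemma Sup_Un_ereal: "Sup ((A::ereal set) \<union> B) = max (Sup A) (Sup B)"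
  by (simp add: Sup_union_distrib sup_max)

lemma swap_basis:
  assumes W: "subsp W" and fW: "filtr \<phi> W" and U: "subsp U" and UW: "U \<subseteq> W"
    and Q: "Q \<subseteq> W" "orth \<phi> Q" "\<forall>x\<in>W. inspan Q x" "\<forall>x\<in>U. inspan (Q \<inter> U) x"
    and P: "P \<subseteq> U" "orth \<phi> P" "\<forall>x\<in>U. inspan P x"
  shows "orth \<phi> (P \<union> (Q - U)) \<and> (\<forall>x\<in>W. inspan (P \<union> (Q - U)) x)"
proof
  note Ws = subspD[OF W] and Us = subspD[OF U]
  have PC: "P \<subseteq> car C" and QC: "Q \<subseteq> car C" using P Q UW Ws by auto
  show "orth \<phi> (P \<union> (Q - U))" unfolding orth_def
  proof (intro allI impI)
    fix S and c :: "'v \<Rightarrow> 'k" assume S: "finite S" "S \<subseteq> P \<union> (Q - U)"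
    define S1 where "S1 = S \<inter> P"
    define S2 where "S2 = S - P"
    have S12: "finite S1" "finite S2" "S1 \<subseteq> P" "S2 \<subseteq> Q - U" "S = S1 \<union> S2" "S1 \<inter> S2 = {}"
      using S unfolding S1_def S2_def by auto
    have "S1 \<subseteq> car C" "S2 \<subseteq> car C" using S12 PC QC by auto
    then have eS: "lc S c = add C (lc S1 c) (lc S2 c)" using S12 lc_Un_disjoint[of S1 S2 c] by auto
    have "lc S1 c \<in> U" using subsp_lc[OF U] S12 P by auto
    then obtain T d where T: "finite T" "T \<subseteq> Q \<inter> U" "lc S1 c = lc T d" using Q(4) unfolding inspan_def by blast
    have TS2: "T \<inter> S2 = {}" using T S12 by auto
    define e where "e v = (if v \<in> T then d v else c v)" for v
    have "T \<subseteq> car C" "S2 \<subseteq> car C" using T S12 QC by auto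
    then have "lc (T \<union> S2) e = add C (lc T e) (lc S2 e)" using T S12 TS2 lc_Un_disjoint[of T S2 e] by auto
    also have "lc T e = lc T d" using T QC unfolding e_def by (intro lc_cong) auto
    also have "lc S2 e = lc S2 c" using TS2 S12 QC unfolding e_def by (intro lc_cong) auto
    finally have eT: "lc S c = lc (T \<union> S2) e" using eS T by simp
    have TS: "finite (T \<union> S2)" "T \<union> S2 \<subseteq> Q" using T S12 by auto
    have "\<phi> (lc (T \<union> S2) e) = Sup (\<phi> ` {v\<in>T \<union> S2. e v \<noteq> 0})"
      using Q(2) TS unfolding orth_def by blast
    also have "{v\<in>T \<union> S2. e v \<noteq> 0} = {v\<in>T. d v \<noteq> 0} \<union> {v\<in>S2. c v \<noteq> 0}"
      using TS2 unfolding e_def by auto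
    also have "Sup (\<phi> ` ({v\<in>T. d v \<noteq> 0} \<union> {v\<in>S2. c v \<noteq> 0})) =
        max (Sup (\<phi> ` {v\<in>T. d v \<noteq> 0})) (Sup (\<phi> ` {v\<in>S2. c v \<noteq> 0}))"
      by (simp add: image_Un Sup_Un_ereal)
    also have "Sup (\<phi> ` {v\<in>T. d v \<noteq> 0}) = \<phi> (lc T d)" using Q(2) T unfolding orth_def by auto
    also have "\<phi> (lc T d) = Sup (\<phi> ` {v\<in>S1. c v \<noteq> 0})" using P(2) S12 T(3)[symmetric] unfolding orth_def by simp
    also have "max (Sup (\<phi> ` {v\<in>S1. c v \<noteq> 0})) (Sup (\<phi> ` {v\<in>S2. c v \<noteq> 0})) = Sup (\<phi> ` {v\<in>S. c v \<noteq> 0})"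
    proof -
      have "{v\<in>S. c v \<noteq> 0} = {v\<in>S1. c v \<noteq> 0} \<union> {v\<in>S2. c v \<noteq> 0}" using S12 by auto
      then show ?thesis by (simp add: image_Un Sup_Un_ereal)
    qed
    finally show "\<phi> (lc S c) = Sup (\<phi> ` {v\<in>S. c v \<noteq> 0})" using eT by simp
  qed
  show "\<forall>x\<in>W. inspan (P \<union> (Q - U)) x"
  proof
    fix x assume "x \<in> W"
    then obtain T c where T: "finite T" "T \<subseteq> Q" "x = lc T c" using Q(3) unfolding inspan_def by blast
    define T1 where "T1 = T \<inter> U"
    define T2 where "T2 = T - U"
    have T12: "finite T1" "finite T2" "T1 \<subseteq> Q \<inter> U" "T2 \<subseteq> Q - U" "T = T1 \<union> T2" "T1 \<inter> T2 = {}"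
      using T unfolding T1_def T2_def by auto
    have "T1 \<subseteq> car C" "T2 \<subseteq> car C" using T12 QC by auto
    then have ex: "x = add C (lc T1 c) (lc T2 c)" using T T12 lc_Un_disjoint[of T1 T2 c] by auto
    have "lc T1 c \<in> U" using subsp_lc[OF U] T12 by auto
    then have "inspan P (lc T1 c)" using P by blast
    then have i1: "inspan (P \<union> (Q - U)) (lc T1 c)" by (rule inspan_mono) auto
    have i2: "inspan (P \<union> (Q - U)) (lc T2 c)" unfolding inspan_def using T12 by blast
    show "inspan (P \<union> (Q - U)) x" using inspan_add[OF _ i1 i2] PC QC ex by auto
  qed
qed

definition ind :: "'v set \<Rightarrow> 'v \<Rightarrow> ereal" where
  "ind R x = (if x = zer C then -\<infinity> else if x \<in> R then 0 else 1)"

lemma filtr_ind: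
  assumes R: "subsp R" and K: "subsp K" and RK: "R \<subseteq> K"
  shows "filtr (ind R) K"
  unfolding filtr_def
proof (intro conjI ballI allI)
  note Rs = subspD[OF R] and Ks = subspD[OF K]
  fix x assume "x \<in> K" then show "(ind R x = - \<infinity>) = (x = zer C)" unfolding ind_def by auto
next
  note Rs = subspD[OF R] and Ks = subspD[OF K]
  fix x y assume x: "x \<in> K" and y: "y \<in> K"
  show "ind R (add C x y) \<le> max (ind R x) (ind R y)"
  proof (cases "add C x y = zer C")
    case True then show ?thesis unfolding ind_def by simp
  next
    case nz: False
    show ?thesis
    proof (cases "add C x y \<in> R")
      case True
      have "x \<noteq> zer C \<or> y \<noteq> zer C" using nz x y Ks by auto
      then show ?thesis using True nz unfolding ind_def by auto
    next
      case False
      then have "(x \<notin> R \<and> x \<noteq> zer C) \<or> (y \<notin> R \<and> y \<noteq> zer C)" using Rs by auto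
      then show ?thesis using False nz unfolding ind_def by auto
    qed
  qed
next
  note Rs = subspD[OF R] and Ks = subspD[OF K]
  fix c x assume x: "x \<in> K"
  show "ind R (smul C c x) \<le> ind R x"
  proof (cases "smul C c x = zer C")
    case True then show ?thesis unfolding ind_def by simp
  next
    case False
    then have "x \<noteq> zer C" by auto
    then show ?thesis using False Rs unfolding ind_def by auto
  qed
qed

lemma wo_ind: "well_ordered_set (ind R ` X)"
proof -
  have "ind R ` X \<subseteq> {-\<infinity>, 0, 1}" unfolding ind_def by auto
  moreover have "well_ordered_set {-\<infinity>, 0, 1::ereal}" by (rule wo_finite) simp
  ultimately show ?thesis using wo_subset by blast
qed

lemma ind_span:
  assumes R: "subsp R" and K: "subsp K" and RK: "R \<subseteq> K"
    and Q: "Q \<subseteq> K - {zer C}" "orth (ind R) Q" "\<forall>x\<in>K. inspan Q x"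
  shows "\<forall>x\<in>R. inspan (Q \<inter> R) x"
proof
  fix x assume xR: "x \<in> R"
  note Ks = subspD[OF K]
  have QC: "Q \<subseteq> car C" using Q Ks by auto
  obtain T c where T: "finite T" "T \<subseteq> Q" "x = lc T c" using Q(3) xR RK unfolding inspan_def by blast
  define T' where "T' = {v\<in>T. c v \<noteq> 0}"
  have x': "x = lc T' c" unfolding T'_def using T lc_supp[of T c] QC by auto
  have "T' \<subseteq> R"
  proof
    fix v assume v: "v \<in> T'"
    show "v \<in> R"
    proof (rule ccontr)
      assume "v \<notin> R"
      then have iv: "ind R v = 1" using v T Q unfolding T'_def ind_def by auto
      have T'': "finite T'" "T' \<subseteq> Q" using T unfolding T'_def by auto
      have "ind R (lc T' c) = Sup (ind R ` {v\<in>T'. c v \<noteq> 0})" using Q(2) T'' unfolding orth_def by blast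
      also have "\<dots> \<ge> 1"
      proof -
        have "v \<in> {v\<in>T'. c v \<noteq> 0}" using v unfolding T'_def by auto
        then have "ind R v \<le> Sup (ind R ` {v\<in>T'. c v \<noteq> 0})" by (intro Sup_upper) auto
        then show ?thesis using iv by simp
      qed
      finally have "ind R x \<ge> 1" using x' by simp
      then show False using xR unfolding ind_def by (auto split: if_splits)
    qed
  qed
  then show "inspan (Q \<inter> R) x" unfolding inspan_def using x' T T'_def by (intro exI[of _ T'] exI[of _ c]) auto
qed

end

locale AC = VS C for C :: "('k::field, 'v) acc" +
  assumes asc: "asc_complex C"
    and wo: "\<forall>n. well_ordered_set (filt C ` (deg C n - {zer C}))"
begin

lemma chain: "chain_cx C" using asc unfolding asc_complex_def by blast
lemma graded: "graded C" using chain unfolding chain_cx_def by blast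

lemma deg_subsp: "subsp (deg C n)"
  using graded unfolding graded_def subsp_def by blast

lemma deg_car: "x \<in> deg C n \<Longrightarrow> x \<in> car C"
  using subspD(6)[OF deg_subsp] .

lemma graded_ex: "x \<in> car C \<Longrightarrow> \<exists>m f d. (\<forall>i<m. f i \<in> deg C (d i)) \<and> x = vsumn C f m"
  using graded unfolding graded_def by blast

lemma graded_uniq: "inj_on d {..<m} \<Longrightarrow> (\<forall>i<m. f i \<in> deg C (d i)) \<Longrightarrow> vsumn C f m = zer C \<Longrightarrow> i < m \<Longrightarrow> f i = zer C"
  using graded unfolding graded_def by blast

lemma bd_closed[simp]: "x \<in> car C \<Longrightarrow> bd C x \<in> car C"
  using chain unfolding chain_cx_def by blast
lemma bd_add: "x \<in> car C \<Longrightarrow> y \<in> car C \<Longrightarrow> bd C (add C x y) = add C (bd C x) (bd C y)"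
  using chain unfolding chain_cx_def by blast
lemma bd_smul: "x \<in> car C \<Longrightarrow> bd C (smul C c x) = smul C c (bd C x)"
  using chain unfolding chain_cx_def by blast
lemma bd_deg: "x \<in> deg C (n + 1) \<Longrightarrow> bd C x \<in> deg C n"
  using chain unfolding chain_cx_def by blast
lemma bd_bd[simp]: "x \<in> car C \<Longrightarrow> bd C (bd C x) = zer C"
  using chain unfolding chain_cx_def by blast
lemma bd_zer[simp]: "bd C (zer C) = zer C"
  using bd_smul[of "zer C" 0] by simp
lemma bd_neg: "x \<in> car C \<Longrightarrow> bd C (neg x) = neg (bd C x)"
  unfolding neg_def by (rule bd_smul)

lemma bd_vsum: "finite S \<Longrightarrow> (\<And>x. x \<in> S \<Longrightarrow> f x \<in> car C) \<Longrightarrow> bd C (vsum f S) = vsum (\<lambda>x. bd C (f x)) S"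
proof (induction S rule: finite_induct)
  case empty then show ?case by simp
next
  case (insert a S)
  have "vsum f (insert a S) = add C (f a) (vsum f S)" by (rule vsum_insert) (use insert in auto)
  moreover have "vsum (\<lambda>x. bd C (f x)) (insert a S) = add C (bd C (f a)) (vsum (\<lambda>x. bd C (f x)) S)"
    by (rule vsum_insert) (use insert in auto)
  moreover have "vsum f S \<in> car C" by (rule vsum_closed) (use insert in auto)
  ultimately show ?case using insert by (simp add: bd_add)
qed

lemma bd_lc: "finite S \<Longrightarrow> S \<subseteq> car C \<Longrightarrow> bd C (lc S c) = vsum (\<lambda>v. smul C (c v) (bd C v)) S"
  unfolding lc_def by (subst bd_vsum) (auto simp: bd_smul intro!: vsum_cong)

definition fl :: "'v \<Rightarrow> ereal" where "fl = filt C"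

lemma fl_ninf: "x \<in> car C \<Longrightarrow> fl x = -\<infinity> \<longleftrightarrow> x = zer C"
  using asc unfolding asc_complex_def fl_def by blast
lemma fl_zer[simp]: "fl (zer C) = -\<infinity>" using fl_ninf by simp

lemma fl_nbig: "x \<in> car C \<Longrightarrow> fl x \<noteq> \<infinity>"
  using asc unfolding asc_complex_def fl_def by blast
lemma fl_bd: "x \<in> car C \<Longrightarrow> fl (bd C x) \<le> fl x"
  using asc unfolding asc_complex_def fl_def by blast

lemma fl_sum_le: "(\<forall>i<m. f i \<in> car C) \<Longrightarrow>
   fl (vsumn C (\<lambda>i. smul C (c i) (f i)) m) \<le> Sup {fl (f i) | i. i < m \<and> c i \<noteq> 0}"
  using asc unfolding asc_complex_def fl_def by blast

lemma fl_sum_eq: "inj_on d {..<m} \<Longrightarrow> (\<forall>i<m. f i \<in> deg C (d i)) \<Longrightarrow>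
   fl (vsumn C (\<lambda>i. smul C (c i) (f i)) m) = Sup {fl (f i) | i. i < m \<and> c i \<noteq> 0}"
  using asc unfolding asc_complex_def fl_def by blast

lemma filtr_fl: "filtr fl (car C)"
  unfolding filtr_def
proof (intro conjI ballI allI)
  fix x assume "x \<in> car C" then show "(fl x = - \<infinity>) = (x = zer C)" using fl_ninf by blast
next
  fix x y assume x: "x \<in> car C" and y: "y \<in> car C"
  define f where "f i = (if i = (0::nat) then x else y)" for i
  have "fl (vsumn C (\<lambda>i. smul C ((\<lambda>_. 1) i) (f i)) 2) \<le> Sup {fl (f i) | i. i < 2 \<and> (\<lambda>_. (1::'k)) i \<noteq> 0}"
    by (rule fl_sum_le) (use x y in \<open>auto simp: f_def\<close>)
  moreover have "vsumn C (\<lambda>i. smul C ((\<lambda>_. 1) i) (f i)) 2 = add C x y"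
    using x y by (simp add: numeral_2_eq_2 f_def)
  moreover have "{fl (f i) | i. i < 2 \<and> (\<lambda>_. (1::'k)) i \<noteq> 0} = {fl x, fl y}"
    unfolding f_def by (auto simp: numeral_2_eq_2 less_Suc_eq)
  ultimately show "fl (add C x y) \<le> max (fl x) (fl y)" by (simp add: sup_max)
next
  fix c x assume x: "x \<in> car C"
  define f where "f i = x" for i :: nat
  have "fl (vsumn C (\<lambda>i. smul C ((\<lambda>_. c) i) (f i)) 1) \<le> Sup {fl (f i) | i. i < 1 \<and> (\<lambda>_. c) i \<noteq> 0}"
    by (rule fl_sum_le) (use x in \<open>auto simp: f_def\<close>)
  moreover have "vsumn C (\<lambda>i. smul C ((\<lambda>_. c) i) (f i)) 1 = smul C c x"
    using x by (simp add: f_def)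
  moreover have "Sup {fl (f i) | i. i < 1 \<and> (\<lambda>_. c) i \<noteq> 0} \<le> fl x"
    unfolding f_def by (rule Sup_least) auto
  ultimately show "fl (smul C c x) \<le> fl x" by simp
qed

lemma filtr_fl_deg: "filtr fl (deg C n)"
  using filtr_fl deg_subsp subspD(1) filtr_mono by blast

lemma wo_fl: "well_ordered_set (fl ` (deg C n - {zer C}))"
  using wo unfolding fl_def by blast

lemma deg_disj: "x \<in> deg C n \<Longrightarrow> x \<in> deg C m \<Longrightarrow> n \<noteq> m \<Longrightarrow> x = zer C"
proof -
  assume a: "x \<in> deg C n" "x \<in> deg C m" "n \<noteq> m"
  define f where "f i = (if i = (0::nat) then x else neg x)" for i
  define d where "d i = (if i = (0::nat) then n else m)" for i
  have "inj_on d {..<2}" unfolding d_def inj_on_def using a by (auto simp: numeral_2_eq_2 less_Suc_eq)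
  moreover have "\<forall>i<2. f i \<in> deg C (d i)" unfolding f_def d_def using a subspD(5)[OF deg_subsp] by auto
  moreover have "vsumn C f 2 = zer C" using a deg_car by (simp add: numeral_2_eq_2 f_def)
  ultimately have "f 0 = zer C" using graded_uniq[of d 2 f 0] by simp
  then show ?thesis unfolding f_def by simp
qed

definition Kc :: "int \<Rightarrow> 'v set" where "Kc n = {x \<in> deg C n. bd C x = zer C}"
definition Rb :: "int \<Rightarrow> 'v set" where "Rb n = bd C ` deg C (n + 1)"

lemma subsp_Kc: "subsp (Kc n)"
proof -
  note D = subspD[OF deg_subsp[of n]]
  show ?thesis unfolding subsp_def Kc_def using D deg_car
    by (auto simp: bd_add bd_smul)
qed

lemma subsp_Rb: "subsp (Rb n)"
proof -
  note D = subspD[OF deg_subsp[of "n+1"]]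
  have "Rb n \<subseteq> car C" unfolding Rb_def using deg_car by auto
  moreover have "zer C \<in> Rb n" unfolding Rb_def using D by force
  moreover have "add C x y \<in> Rb n" if xy: "x \<in> Rb n" "y \<in> Rb n" for x y
  proof -
    obtain a b where "a \<in> deg C (n+1)" "b \<in> deg C (n+1)" "x = bd C a" "y = bd C b"
      using xy unfolding Rb_def by auto
    then show ?thesis unfolding Rb_def using D deg_car bd_add by (intro image_eqI[of _ _ "add C a b"]) auto
  qed
  moreover have "smul C c x \<in> Rb n" if xx: "x \<in> Rb n" for x c
  proof -
    obtain a where "a \<in> deg C (n+1)" "x = bd C a" using xx unfolding Rb_def by auto
    then show ?thesis unfolding Rb_def using D deg_car bd_smul by (intro image_eqI[of _ _ "smul C c a"]) auto
  qed
  ultimately show ?thesis unfolding subsp_def by blast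
qed

lemma Rb_Kc: "Rb n \<subseteq> Kc n"
  unfolding Rb_def Kc_def using bd_deg deg_car by auto

lemma Kc_deg: "Kc n \<subseteq> deg C n" unfolding Kc_def by auto

definition opt :: "int \<Rightarrow> 'v \<Rightarrow> 'v" where
  "opt n w = (SOME y. y \<in> deg C (n + 1) \<and> bd C y = w \<and> (\<forall>y'. y' \<in> deg C (n + 1) \<and> bd C y' = w \<longrightarrow> fl y \<le> fl y'))"

lemma opt_ex:
  assumes "w \<in> Rb n"
  shows "opt n w \<in> deg C (n + 1) \<and> bd C (opt n w) = w \<and> (\<forall>y'. y' \<in> deg C (n + 1) \<and> bd C y' = w \<longrightarrow> fl (opt n w) \<le> fl y')"
proof -
  define Pre where "Pre = {y \<in> deg C (n+1). bd C y = w}"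
  have ne: "Pre \<noteq> {}" using assms unfolding Rb_def Pre_def by auto
  have "\<exists>y\<in>Pre. \<forall>y'\<in>Pre. fl y \<le> fl y'"
  proof (cases "zer C \<in> Pre")
    case True
    then show ?thesis using fl_ninf by (intro bexI[of _ "zer C"]) auto
  next
    case False
    have "fl ` Pre \<subseteq> fl ` (deg C (n+1) - {zer C})" using False unfolding Pre_def by auto
    then obtain m where "m \<in> fl ` Pre" "\<forall>t\<in>fl ` Pre. m \<le> t" using wo_min[OF wo_fl] ne by blast
    then show ?thesis by auto
  qed
  then have "\<exists>y. y \<in> deg C (n + 1) \<and> bd C y = w \<and> (\<forall>y'. y' \<in> deg C (n + 1) \<and> bd C y' = w \<longrightarrow> fl y \<le> fl y')"
    unfolding Pre_def by auto
  then show ?thesis unfolding opt_def by (rule someI_ex)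
qed

definition lp :: "int \<Rightarrow> 'v \<Rightarrow> ereal" where "lp n w = fl (opt n w)"

lemma lp_le: "y \<in> deg C (n + 1) \<Longrightarrow> lp n (bd C y) \<le> fl y"
  unfolding lp_def using opt_ex[of "bd C y" n] unfolding Rb_def by auto

lemma filtr_lp: "filtr (lp n) (Rb n)"
  unfolding filtr_def
proof (intro conjI ballI allI)
  note D = subspD[OF deg_subsp[of "n+1"]]
  fix x assume x: "x \<in> Rb n"
  note o = opt_ex[OF x]
  show "(lp n x = - \<infinity>) = (x = zer C)"
  proof
    assume "lp n x = -\<infinity>"
    then have "opt n x = zer C" unfolding lp_def using fl_ninf o deg_car by blast
    then show "x = zer C" using o by simp
  next
    assume "x = zer C"
    then have "fl (opt n x) \<le> fl (zer C)" using o D by auto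
    then show "lp n x = -\<infinity>" unfolding lp_def using fl_ninf by simp
  qed
next
  note D = subspD[OF deg_subsp[of "n+1"]]
  fix x y assume x: "x \<in> Rb n" and y: "y \<in> Rb n"
  note ox = opt_ex[OF x] and oy = opt_ex[OF y]
  have "add C (opt n x) (opt n y) \<in> deg C (n+1)" using ox oy D by auto
  moreover have "bd C (add C (opt n x) (opt n y)) = add C x y" using ox oy deg_car bd_add by auto
  ultimately have "lp n (add C x y) \<le> fl (add C (opt n x) (opt n y))" using lp_le by metis
  also have "\<dots> \<le> max (lp n x) (lp n y)" unfolding lp_def
    using f_add[OF subsp_car filtr_fl] ox oy deg_car by blast
  finally show "lp n (add C x y) \<le> max (lp n x) (lp n y)" .
next
  note D = subspD[OF deg_subsp[of "n+1"]]
  fix c x assume x: "x \<in> Rb n"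
  note ox = opt_ex[OF x]
  have "smul C c (opt n x) \<in> deg C (n+1)" using ox D by auto
  moreover have "bd C (smul C c (opt n x)) = smul C c x" using ox deg_car bd_smul by auto
  ultimately have "lp n (smul C c x) \<le> fl (smul C c (opt n x))" using lp_le by metis
  also have "\<dots> \<le> lp n x" unfolding lp_def
    using f_smul_le[OF subsp_car filtr_fl] ox deg_car by blast
  finally show "lp n (smul C c x) \<le> lp n x" .
qed

lemma wo_lp: "well_ordered_set (lp n ` (Rb n - {zer C}))"
proof -
  have "lp n ` (Rb n - {zer C}) \<subseteq> fl ` (deg C (n+1) - {zer C})"
  proof
    fix r assume "r \<in> lp n ` (Rb n - {zer C})"
    then obtain w where w: "w \<in> Rb n" "w \<noteq> zer C" "r = lp n w" by auto
    note o = opt_ex[OF w(1)]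
    have "opt n w \<noteq> zer C" using o w by auto
    then show "r \<in> fl ` (deg C (n+1) - {zer C})" using o w unfolding lp_def by auto
  qed
  then show ?thesis using wo_subset wo_fl by blast
qed

end

context AC
begin

lemma bd_lc_reindex:
  assumes "finite S" "S \<subseteq> car C" "\<And>v. v \<in> S \<Longrightarrow> g (bd C v) = v"
  shows "bd C (lc S c) = lc (bd C ` S) (\<lambda>w. c (g w))"
proof -
  have inj: "inj_on (bd C) S" using assms(3) by (metis inj_onI)
  have "bd C (lc S c) = vsum (\<lambda>v. smul C (c v) (bd C v)) S" using assms bd_lc by blast
  also have "\<dots> = vsum ((\<lambda>w. smul C (c (g w)) w) \<circ> bd C) S"
    by (rule vsum_cong) (use assms in auto)
  also have "\<dots> = vsum (\<lambda>w. smul C (c (g w)) w) (bd C ` S)"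
    by (rule vsum_reindex[symmetric]) (use inj assms in auto)
  finally show ?thesis unfolding lc_def .
qed

lemma ext_pre:
  assumes Kb: "Kb \<subseteq> Kc (m+1)" "orth fl Kb" "\<forall>x\<in>Kc (m+1). inspan Kb x"
    and Pm: "Pm \<subseteq> Rb m - {zer C}" "orth (lp m) Pm" "\<forall>x\<in>Rb m. inspan Pm x"
  shows "orth fl (Kb \<union> opt m ` Pm) \<and> (\<forall>x\<in>deg C (m+1). inspan (Kb \<union> opt m ` Pm) x) \<and> Kb \<inter> opt m ` Pm = {}"
proof (intro conjI)
  note D = subspD[OF deg_subsp[of "m+1"]]
  have KbC: "Kb \<subseteq> car C" using Kb Kc_deg deg_car by blast
  have optP: "opt m p \<in> deg C (m+1)" "bd C (opt m p) = p" "fl (opt m p) = lp m p" if "p \<in> Pm" for p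
    using opt_ex[of p m] that Pm unfolding lp_def by auto
  define Y where "Y = opt m ` Pm"
  have YD: "Y \<subseteq> deg C (m+1)" unfolding Y_def using optP by auto
  then have YC: "Y \<subseteq> car C" "Y \<subseteq> deg C (m+1)" using deg_car by auto
  have Ybd: "opt m (bd C y) = y" "bd C y \<in> Pm" "lp m (bd C y) = fl y" if "y \<in> Y" for y
    using that optP unfolding Y_def by auto
  have PmC: "Pm \<subseteq> car C" using Pm subspD(1)[OF subsp_Rb] by blast
  show disj: "Kb \<inter> opt m ` Pm = {}"
  proof -
    have "y \<notin> Kb" if "y \<in> Y" for y
    proof
      assume "y \<in> Kb"
      then have "bd C y = zer C" using Kb unfolding Kc_def by auto
      moreover have "bd C y \<noteq> zer C" using Ybd[OF that] Pm by auto
      ultimately show False by simp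
    qed
    then show ?thesis unfolding Y_def by blast
  qed
  show "orth fl (Kb \<union> opt m ` Pm)" unfolding orth_def
  proof (intro allI impI)
    fix S and c :: "'v \<Rightarrow> 'k" assume S: "finite S" "S \<subseteq> Kb \<union> opt m ` Pm"
    define S1 where "S1 = S \<inter> Kb"
    define S2 where "S2 = S - Kb"
    have S12: "finite S1" "finite S2" "S1 \<subseteq> Kb" "S2 \<subseteq> Y" "S = S1 \<union> S2" "S1 \<inter> S2 = {}"
      using S unfolding S1_def S2_def Y_def by auto
    have S12C: "S1 \<subseteq> car C" "S2 \<subseteq> car C" using S12 KbC YC by auto
    define k where "k = lc S1 c"
    define u where "u = lc S2 c"
    have kK: "k \<in> Kc (m+1)" unfolding k_def using subsp_lc[OF subsp_Kc] S12 Kb by blast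
    have uD: "u \<in> deg C (m+1)" unfolding u_def using subsp_lc[OF deg_subsp] S12 YC by blast
    have kD: "k \<in> deg C (m+1)" using kK Kc_deg by blast
    have kC: "k \<in> car C" and uC: "u \<in> car C" using kD uD deg_car by auto
    have ex: "lc S c = add C k u" unfolding k_def u_def using S12 S12C lc_Un_disjoint[of S1 S2 c] by simp
    define m1 where "m1 = Sup (fl ` {v\<in>S1. c v \<noteq> 0})"
    define m2 where "m2 = Sup (fl ` {v\<in>S2. c v \<noteq> 0})"
    have fk: "fl k = m1" unfolding k_def m1_def using Kb(2) S12 unfolding orth_def by blast
    have fu: "fl u \<le> m2" unfolding u_def m2_def using f_lc_le[OF subsp_car filtr_fl S12(2) S12C(2)] .
    have bdx: "bd C (lc S c) = bd C u" using ex kC uC bd_add kK unfolding Kc_def by simp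
    have bdu: "bd C u = lc (bd C ` S2) (\<lambda>w. c (opt m w))"
      unfolding u_def by (rule bd_lc_reindex) (use S12 S12C Ybd in auto)
    have bS2: "finite (bd C ` S2)" "bd C ` S2 \<subseteq> Pm" using S12 Ybd by auto
    have "lp m (bd C u) = Sup (lp m ` {w\<in>bd C ` S2. c (opt m w) \<noteq> 0})"
      using Pm(2) bS2 unfolding orth_def bdu by blast
    also have "lp m ` {w\<in>bd C ` S2. c (opt m w) \<noteq> 0} = fl ` {v\<in>S2. c v \<noteq> 0}"
    proof -
      have "{w\<in>bd C ` S2. c (opt m w) \<noteq> 0} = bd C ` {v\<in>S2. c v \<noteq> 0}" using S12 Ybd by force
      then have "lp m ` {w\<in>bd C ` S2. c (opt m w) \<noteq> 0} = (lp m \<circ> bd C) ` {v\<in>S2. c v \<noteq> 0}"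
        by (simp add: image_comp)
      also have "\<dots> = fl ` {v\<in>S2. c v \<noteq> 0}" using S12 Ybd by (intro image_cong) auto
      finally show ?thesis .
    qed
    finally have lpu: "lp m (bd C u) = m2" unfolding m2_def .
    have xD: "lc S c \<in> deg C (m+1)" using ex kD uD D by simp
    have ge2: "m2 \<le> fl (lc S c)" using lp_le[OF xD] bdx lpu by simp
    have le: "fl (lc S c) \<le> max m1 m2"
    proof -
      have "fl (add C k u) \<le> max (fl k) (fl u)" using f_add[OF subsp_car filtr_fl kC uC] .
      also have "\<dots> \<le> max m1 m2" using fk fu by (simp add: max.coboundedI2)
      finally show ?thesis using ex by simp
    qed
    have eq: "fl (lc S c) = max m1 m2"
    proof (cases "m1 \<le> m2")
      case True then show ?thesis using ge2 le by (simp add: max_def)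
    next
      case False
      then have "fl u < fl k" using fu fk by simp
      then have "fl (add C u k) = fl k" using f_add_lt[OF subsp_car filtr_fl uC kC] by simp
      then show ?thesis using ex add_comm[OF kC uC] fk False by (simp add: max_def)
    qed
    have "{v\<in>S. c v \<noteq> 0} = {v\<in>S1. c v \<noteq> 0} \<union> {v\<in>S2. c v \<noteq> 0}" using S12 by auto
    then have "Sup (fl ` {v\<in>S. c v \<noteq> 0}) = max m1 m2" unfolding m1_def m2_def by (simp add: image_Un Sup_Un_ereal)
    then show "fl (lc S c) = Sup (fl ` {v\<in>S. c v \<noteq> 0})" using eq by simp
  qed
  show "\<forall>x\<in>deg C (m+1). inspan (Kb \<union> opt m ` Pm) x"
  proof
    fix x assume xD: "x \<in> deg C (m+1)"
    have "bd C x \<in> Rb m" unfolding Rb_def using xD by auto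
    then obtain T d where T: "finite T" "T \<subseteq> Pm" "bd C x = lc T d" using Pm(3) unfolding inspan_def by blast
    define u where "u = lc (opt m ` T) (\<lambda>y. d (bd C y))"
    have TY: "opt m ` T \<subseteq> Y" unfolding Y_def using T by auto
    have uD: "u \<in> deg C (m+1)" unfolding u_def using subsp_lc[OF deg_subsp] TY YC by blast
    have "bd C u = lc (bd C ` opt m ` T) (\<lambda>w. d (bd C (opt m w)))"
      unfolding u_def by (rule bd_lc_reindex) (use T TY YC Ybd in auto)
    also have "bd C ` opt m ` T = T" using T optP by force
    also have "lc T (\<lambda>w. d (bd C (opt m w))) = lc T d" using T optP PmC by (intro lc_cong) auto
    finally have bdu: "bd C u = bd C x" using T by simp
    have xC: "x \<in> car C" and uC: "u \<in> car C" using xD uD deg_car by auto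
    define k where "k = add C x (neg u)"
    have "bd C k = zer C" unfolding k_def using bdu xC uC by (simp add: bd_add bd_neg)
    moreover have "k \<in> deg C (m+1)" unfolding k_def using xD uD D by simp
    ultimately have "k \<in> Kc (m+1)" unfolding Kc_def by simp
    then have ik: "inspan (Kb \<union> opt m ` Pm) k" using Kb(3) inspan_mono by blast
    have iu: "inspan (Kb \<union> opt m ` Pm) u" unfolding inspan_def u_def using T by blast
    have "x = add C k u" unfolding k_def using xC uC by (simp add: add_assoc)
    then show "inspan (Kb \<union> opt m ` Pm) x" using inspan_add[OF _ ik iu] KbC YC unfolding Y_def by simp
  qed
qed

lemma deg_pz:
  "\<exists>P Z. P \<subseteq> Rb n - {zer C} \<and> orth fl P \<and> orth (lp n) P \<and> (\<forall>x\<in>Rb n. inspan P x) \<and>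
     Z \<subseteq> Kc n - Rb n \<and> orth fl (P \<union> Z) \<and> (\<forall>x\<in>Kc n. inspan (P \<union> Z) x)"
proof -
  have RK: "Rb n \<subseteq> Kc n" by (rule Rb_Kc)
  have KD: "Kc n \<subseteq> deg C n" by (rule Kc_deg)
  have KC: "Kc n \<subseteq> car C" using KD deg_car by blast
  have fR: "filtr fl (Rb n)" using filtr_fl RK KC filtr_mono by blast
  have fK: "filtr fl (Kc n)" using filtr_fl KC filtr_mono by blast
  have wR: "well_ordered_set (fl ` (Rb n - {zer C}))"
    by (rule wo_subset[OF wo_fl[of n]]) (use RK KD in auto)
  have wK: "well_ordered_set (fl ` (Kc n - {zer C}))"
    by (rule wo_subset[OF wo_fl[of n]]) (use KD in auto)
  obtain P where P: "P \<subseteq> Rb n - {zer C}" "orth fl P" "orth (lp n) P" "\<forall>x\<in>Rb n. inspan P x"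
    using bifilt[OF subsp_Rb fR filtr_lp wR wo_lp] by blast
  obtain Q where Q: "Q \<subseteq> Kc n - {zer C}" "orth fl Q" "orth (ind (Rb n)) Q" "\<forall>x\<in>Kc n. inspan Q x"
    using bifilt[OF subsp_Kc fK filtr_ind[OF subsp_Rb subsp_Kc RK] wK wo_ind] by blast
  have QR: "\<forall>x\<in>Rb n. inspan (Q \<inter> Rb n) x"
    by (rule ind_span[OF subsp_Rb subsp_Kc RK Q(1,3,4)])
  have sw: "orth fl (P \<union> (Q - Rb n)) \<and> (\<forall>x\<in>Kc n. inspan (P \<union> (Q - Rb n)) x)"
    by (rule swap_basis[OF subsp_Kc fK subsp_Rb RK _ Q(2) Q(4) QR _ P(2) P(4)]) (use Q P in auto)
  show ?thesis
    by (rule exI[of _ P], rule exI[of _ "Q - Rb n"]) (use P Q sw in auto)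
qed

lemma inspan_vsum:
  assumes "B \<subseteq> car C" "\<And>i. i \<in> A \<Longrightarrow> inspan B (f i)"
  shows "inspan B (vsum f A)"
proof (cases "finite A")
  case True
  from True assms(2) show ?thesis
  proof (induction A rule: finite_induct)
    case empty then show ?case using inspan_zer by simp
  next
    case (insert a A)
    have fC: "f x \<in> car C" if xi: "x \<in> insert a A" for x using inspan_car[OF assms(1) insert.prems[OF xi]] .
    have "vsum f (insert a A) = add C (f a) (vsum f A)" by (rule vsum_insert) (use insert fC in auto)
    then show ?case using inspan_add[OF assms(1)] insert by simp
  qed
next
  case False then show ?thesis using inspan_zer by simp
qed

lemma orth_global:
  assumes Bd: "\<And>n. Bd n \<subseteq> deg C n - {zer C}" "\<And>n. orth fl (Bd n)"
  shows "orth fl (\<Union>n. Bd n)"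
  unfolding orth_def
proof (intro allI impI)
  fix S and c :: "'v \<Rightarrow> 'k" assume S: "finite S" "S \<subseteq> (\<Union>n. Bd n)"
  define dg where "dg v = (SOME n. v \<in> Bd n)" for v
  have dgB: "v \<in> Bd (dg v)" if vS: "v \<in> S" for v
  proof -
    have "\<exists>n. v \<in> Bd n" using S vS by blast
    then show ?thesis unfolding dg_def by (rule someI_ex)
  qed
  have dg_eq: "dg v = n" if "v \<in> S" "v \<in> Bd n" for v n
  proof (rule ccontr)
    assume "dg v \<noteq> n"
    moreover have "v \<in> deg C (dg v)" "v \<in> deg C n" "v \<noteq> zer C"
      using dgB[OF that(1)] that(2) Bd(1)[of "dg v"] Bd(1)[of n] by auto
    ultimately show False using deg_disj[of v "dg v" n] by simp
  qed
  define N where "N = dg ` S"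
  define Sn where "Sn n = {v\<in>S. dg v = n}" for n
  have N: "finite N" unfolding N_def using S by simp
  have SnB: "Sn n \<subseteq> Bd n" for n unfolding Sn_def using dgB by auto
  have SnD: "Sn n \<subseteq> deg C n" for n using SnB[of n] Bd(1)[of n] by auto
  have SnC: "Sn n \<subseteq> car C" for n using SnD[of n] deg_car by auto
  have SC: "S \<subseteq> car C"
  proof
    fix v assume "v \<in> S"
    then have "v \<in> deg C (dg v)" using dgB Bd(1)[of "dg v"] by auto
    then show "v \<in> car C" by (rule deg_car)
  qed
  have Sfin: "finite (Sn n)" for n unfolding Sn_def using S by simp
  have SU: "S = (\<Union>n\<in>N. Sn n)" unfolding N_def Sn_def by auto
  define g where "g n = lc (Sn n) c" for n
  have gD: "g n \<in> deg C n" for n unfolding g_def using subsp_lc[OF deg_subsp SnD] .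
  have gC: "g n \<in> car C" for n using gD[of n] by (rule deg_car)
  have "lc S c = vsum (\<lambda>v. smul C (c v) v) (\<Union>n\<in>N. Sn n)" unfolding lc_def using SU by simp
  also have "\<dots> = vsum (\<lambda>n. vsum (\<lambda>v. smul C (c v) v) (Sn n)) N"
  proof (rule vsum_UN_disjoint)
    show "pairwise (\<lambda>i j. disjnt (Sn i) (Sn j)) N" unfolding pairwise_def disjnt_def Sn_def by auto
    show "\<And>x. x \<in> (\<Union>n\<in>N. Sn n) \<Longrightarrow> smul C (c x) x \<in> car C" using SnC by (blast intro: smul_closed)
  qed (use N Sfin in auto)
  also have "\<dots> = vsum g N" unfolding g_def lc_def ..
  finally have e1: "lc S c = vsum g N" .
  obtain h where h: "bij_betw h {0..<card N} N" using ex_bij_betw_nat_finite[OF N] by blast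
  have hinj: "inj_on h {..<card N}" and himg: "h ` {..<card N} = N"
    using h unfolding bij_betw_def by (auto simp: atLeast0LessThan)
  have "vsum g N = vsum (g \<circ> h) {..<card N}"
    using vsum_reindex[OF hinj, of g] himg gC by auto
  also have "\<dots> = vsumn C (g \<circ> h) (card N)" using vsumn_eq[of "card N" "g \<circ> h"] gC by simp
  also have "\<dots> = vsumn C (\<lambda>i. smul C ((\<lambda>_. 1) i) ((g \<circ> h) i)) (card N)"
  proof -
    have "(\<lambda>i. smul C ((\<lambda>_. 1) i) ((g \<circ> h) i)) = g \<circ> h" using gC by (simp add: fun_eq_iff)
    then show ?thesis by simp
  qed
  finally have e2: "lc S c = vsumn C (\<lambda>i. smul C ((\<lambda>_. 1) i) ((g \<circ> h) i)) (card N)" using e1 by simp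
  have "fl (lc S c) = Sup {fl ((g \<circ> h) i) | i. i < card N \<and> (\<lambda>_. (1::'k)) i \<noteq> 0}"
    unfolding e2 by (rule fl_sum_eq[OF hinj]) (use gD in simp)
  also have "{fl ((g \<circ> h) i) | i. i < card N \<and> (\<lambda>_. (1::'k)) i \<noteq> 0} = (fl \<circ> g) ` N"
  proof -
    have "{fl ((g \<circ> h) i) | i. i < card N \<and> (\<lambda>_. (1::'k)) i \<noteq> 0} = (fl \<circ> g) ` (h ` {..<card N})" by auto
    then show ?thesis using himg by simp
  qed
  also have "(fl \<circ> g) ` N = (\<lambda>n. Sup (fl ` {v\<in>Sn n. c v \<noteq> 0})) ` N"
  proof (rule image_cong)
    fix n assume "n \<in> N"
    have "fl (lc (Sn n) c) = Sup (fl ` {v\<in>Sn n. c v \<noteq> 0})"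
      using Bd(2)[of n] Sfin[of n] SnB[of n] unfolding orth_def by blast
    then show "(fl \<circ> g) n = Sup (fl ` {v\<in>Sn n. c v \<noteq> 0})" unfolding g_def by simp
  qed simp
  also have "Sup \<dots> = Sup (fl ` {v\<in>S. c v \<noteq> 0})"
  proof -
    have "{v\<in>S. c v \<noteq> 0} = (\<Union>n\<in>N. {v\<in>Sn n. c v \<noteq> 0})" using SU by auto
    then show ?thesis by (simp add: SUP_UNION)
  qed
  finally show "fl (lc S c) = Sup (fl ` {v\<in>S. c v \<noteq> 0})" .
qed

definition PZP :: "int \<Rightarrow> 'v set \<Rightarrow> 'v set \<Rightarrow> bool" where
  "PZP n P Z \<longleftrightarrow> P \<subseteq> Rb n - {zer C} \<and> orth fl P \<and> orth (lp n) P \<and> (\<forall>x\<in>Rb n. inspan P x) \<and>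
     Z \<subseteq> Kc n - Rb n \<and> orth fl (P \<union> Z) \<and> (\<forall>x\<in>Kc n. inspan (P \<union> Z) x)"

lemma basis_exists: "\<exists>I J.
   I \<subseteq> car C \<and> (\<forall>y\<in>I. bd C y \<noteq> zer C) \<and> inj_on (bd C) I
 \<and> (\<forall>j\<in>J. j \<noteq> zer C \<and> bd C j = zer C)
 \<and> bd C ` I \<inter> J = {}
 \<and> (\<forall>b\<in>bd C ` I \<union> I \<union> J. \<exists>n. b \<in> deg C n)
 \<and> orth fl (bd C ` I \<union> I \<union> J)
 \<and> (\<forall>x\<in>car C. inspan (bd C ` I \<union> I \<union> J) x)"
proof -
  define PZ where "PZ n = (SOME pz. PZP n (fst pz) (snd pz))" for n
  have PZ: "PZP n (fst (PZ n)) (snd (PZ n))" for n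
  proof -
    obtain P Z where "PZP n P Z" using deg_pz[of n] unfolding PZP_def by blast
    then have "\<exists>pz. PZP n (fst pz) (snd pz)" by (intro exI[of _ "(P, Z)"]) simp
    then show ?thesis unfolding PZ_def by (rule someI_ex)
  qed
  define Pf where "Pf n = fst (PZ n)" for n
  define Zf where "Zf n = snd (PZ n)" for n
  have Pf: "Pf n \<subseteq> Rb n - {zer C}" "orth (lp n) (Pf n)" "\<forall>x\<in>Rb n. inspan (Pf n) x" for n
    using PZ[of n] unfolding PZP_def Pf_def by auto
  have Zf: "Zf n \<subseteq> Kc n - Rb n" "orth fl (Pf n \<union> Zf n)" "\<forall>x\<in>Kc n. inspan (Pf n \<union> Zf n) x" for n
    using PZ[of n] unfolding PZP_def Pf_def Zf_def by auto
  have PfK: "Pf n \<union> Zf n \<subseteq> Kc n" for n using Pf(1)[of n] Zf(1)[of n] Rb_Kc[of n] by auto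
  define Bd where "Bd n = Pf n \<union> Zf n \<union> opt (n - 1) ` Pf (n - 1)" for n
  have ext: "orth fl (Bd n) \<and> (\<forall>x\<in>deg C n. inspan (Bd n) x)" for n
  proof -
    have e: "n - 1 + 1 = n" by simp
    have "orth fl (Pf n \<union> Zf n \<union> opt (n - 1) ` Pf (n - 1)) \<and>
      (\<forall>x\<in>deg C (n - 1 + 1). inspan (Pf n \<union> Zf n \<union> opt (n - 1) ` Pf (n - 1)) x)"
      by (rule ext_pre[THEN conjunct1, THEN conjI, OF _ _ _ Pf(1) Pf(2) Pf(3),
            OF _ _ _ ext_pre[THEN conjunct2, THEN conjunct1, OF _ _ _ Pf(1) Pf(2) Pf(3)]])
        (use PfK Zf e in auto)
    then show ?thesis unfolding Bd_def e .
  qed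
  have optP: "opt m p \<in> deg C (m+1) \<and> bd C (opt m p) = p" if "p \<in> Pf m" for p m
    using opt_ex[of p m] that Pf(1)[of m] by auto
  have BdD: "Bd n \<subseteq> deg C n - {zer C}" for n
  proof
    fix b assume b: "b \<in> Bd n"
    show "b \<in> deg C n - {zer C}"
    proof (cases "b \<in> Pf n \<union> Zf n")
      case True
      then have "b \<in> Kc n" "b \<noteq> zer C" using PfK Pf(1)[of n] Zf(1)[of n] subspD(2)[OF subsp_Rb[of n]] by auto
      then show ?thesis using Kc_deg by auto
    next
      case False
      then obtain p where p: "p \<in> Pf (n - 1)" "b = opt (n - 1) p" using b unfolding Bd_def by auto
      have "b \<in> deg C n" using optP[OF p(1)] p by simp
      moreover have "b \<noteq> zer C" using optP[OF p(1)] p Pf(1)[of "n-1"] by auto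
      ultimately show ?thesis by simp
    qed
  qed
  have orthB: "orth fl (\<Union>n. Bd n)" by (rule orth_global) (use BdD ext in auto)
  have BC: "(\<Union>n. Bd n) \<subseteq> car C" using BdD deg_car by blast
  have spanB: "\<forall>x\<in>car C. inspan (\<Union>n. Bd n) x"
  proof
    fix x assume "x \<in> car C"
    then obtain m f d where fd: "\<forall>i<m. f i \<in> deg C (d i)" "x = vsumn C f m" using graded_ex by blast
    have "x = vsum f {..<m}" using fd vsumn_eq[of m f] deg_car by auto
    moreover have "inspan (\<Union>n. Bd n) (vsum f {..<m})"
    proof (rule inspan_vsum[OF BC])
      fix i assume "i \<in> {..<m}"
      then have "inspan (Bd (d i)) (f i)" using fd ext by auto
      then show "inspan (\<Union>n. Bd n) (f i)" by (rule inspan_mono) auto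
    qed
    ultimately show "inspan (\<Union>n. Bd n) x" by simp
  qed
  define I where "I = (\<Union>m. opt m ` Pf m)"
  define J where "J = (\<Union>n. Zf n)"
  have bdI: "bd C ` I = (\<Union>m. Pf m)" unfolding I_def using optP by (auto simp: image_UN image_image) 
  have UB: "(\<Union>n. Bd n) = bd C ` I \<union> I \<union> J"
  proof -
    have "(\<Union>n. opt (n - 1) ` Pf (n - 1)) = I" unfolding I_def
    proof
      show "(\<Union>n. opt (n - 1) ` Pf (n - 1)) \<subseteq> (\<Union>m. opt m ` Pf m)" by auto
      show "(\<Union>m. opt m ` Pf m) \<subseteq> (\<Union>n. opt (n - 1) ` Pf (n - 1))"
      proof
        fix y assume "y \<in> (\<Union>m. opt m ` Pf m)"
        then obtain m p where "p \<in> Pf m" "y = opt m p" by auto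
        then show "y \<in> (\<Union>n. opt (n - 1) ` Pf (n - 1))" by (intro UN_I[of "m+1"]) auto
      qed
    qed
    then show ?thesis unfolding Bd_def bdI J_def by blast
  qed
  have degdisj: "m = n" if "x \<in> deg C m" "x \<in> deg C n" "x \<noteq> zer C" for x m n
    using deg_disj[of x m n] that by auto
  have PfD: "Pf m \<subseteq> deg C m - {zer C}" for m using Pf(1)[of m] Rb_Kc[of m] Kc_deg[of m] by auto
  have I1: "I \<subseteq> car C" unfolding I_def using optP deg_car by blast
  have I2: "\<forall>y\<in>I. bd C y \<noteq> zer C" unfolding I_def using optP PfD by fastforce
  have I3: "inj_on (bd C) I"
  proof (rule inj_onI)
    fix y1 y2 assume y: "y1 \<in> I" "y2 \<in> I" "bd C y1 = bd C y2"
    obtain m1 p1 where 1: "p1 \<in> Pf m1" "y1 = opt m1 p1" using y unfolding I_def by auto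
    obtain m2 p2 where 2: "p2 \<in> Pf m2" "y2 = opt m2 p2" using y unfolding I_def by auto
    have "p1 = p2" using y 1 2 optP by metis
    then have "m1 = m2" using 1 2 PfD degdisj by blast
    then show "y1 = y2" using 1 2 \<open>p1 = p2\<close> by simp
  qed
  have J1: "\<forall>j\<in>J. j \<noteq> zer C \<and> bd C j = zer C"
    unfolding J_def using Zf(1) subspD(2)[OF subsp_Rb] unfolding Kc_def by blast
  have J2: "bd C ` I \<inter> J = {}"
  proof -
    have "p \<notin> Zf n" if "p \<in> Pf m" for p m n
    proof
      assume pz: "p \<in> Zf n"
      have "p \<in> deg C n" using pz Zf(1)[of n] Kc_deg[of n] by auto
      then have "m = n" using that PfD[of m] degdisj by blast
      then show False using that pz Pf(1)[of m] Zf(1)[of n] by auto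
    qed
    then show ?thesis unfolding bdI J_def by blast
  qed
  have hom: "\<forall>b\<in>bd C ` I \<union> I \<union> J. \<exists>n. b \<in> deg C n" using BdD UB[symmetric] by blast
  show ?thesis
    by (rule exI[of _ I], rule exI[of _ J]) (use I1 I2 I3 J1 J2 hom orthB spanB UB in simp)
qed

end

locale BAS = AC C for C :: "('k::field, 'v) acc" +
  fixes I J :: "'v set"
  assumes I1: "I \<subseteq> car C" and I2: "\<forall>y\<in>I. bd C y \<noteq> zer C" and I3: "inj_on (bd C) I"
    and J1: "\<forall>j\<in>J. j \<noteq> zer C \<and> bd C j = zer C"
    and J2: "bd C ` I \<inter> J = {}"
    and hom: "\<forall>b\<in>bd C ` I \<union> I \<union> J. \<exists>n. b \<in> deg C n"
    and orthB: "orth fl (bd C ` I \<union> I \<union> J)"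
    and spanB: "\<forall>x\<in>car C. inspan (bd C ` I \<union> I \<union> J) x"
begin

definition BB :: "'v set" where "BB = bd C ` I \<union> I \<union> J"

lemma BB_car: "BB \<subseteq> car C"
  unfolding BB_def using I1 J1 hom deg_car by blast

lemma BB_nz: "b \<in> BB \<Longrightarrow> b \<noteq> zer C"
  unfolding BB_def using I2 J1 by auto

lemma BB_fl: "b \<in> BB \<Longrightarrow> fl b \<noteq> -\<infinity>"
  using BB_nz BB_car fl_ninf by blast

lemma I_nz: "y \<in> I \<Longrightarrow> y \<noteq> zer C" using I2 by auto

lemma disj_I_J: "I \<inter> J = {}" using I2 J1 by auto
lemma disj_I_bdI: "I \<inter> bd C ` I = {}"
proof -
  have "bd C y \<notin> I" if "y \<in> I" for y
  proof
    assume "bd C y \<in> I"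
    then have "bd C (bd C y) \<noteq> zer C" using I2 by blast
    moreover have "y \<in> car C" using that I1 by blast
    ultimately show False by simp
  qed
  then show ?thesis by blast
qed

lemma bd_J[simp]: "j \<in> J \<Longrightarrow> bd C j = zer C" using J1 by auto
lemma bd_bdI[simp]: "y \<in> I \<Longrightarrow> bd C (bd C y) = zer C" using I1 by auto

definition rep :: "'v \<Rightarrow> ('v \<Rightarrow> 'k) \<Rightarrow> bool" where
  "rep x c \<longleftrightarrow> finite {b. c b \<noteq> 0} \<and> {b. c b \<noteq> 0} \<subseteq> BB \<and> x = lc {b. c b \<noteq> 0} c"

definition crd :: "'v \<Rightarrow> 'v \<Rightarrow> 'k" where "crd x = (SOME c. rep x c)"

lemma rep_of:
  assumes "finite S" "S \<subseteq> BB"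
  shows "rep (lc S c) (\<lambda>b. if b \<in> S then c b else 0)"
proof -
  define d where "d b = (if b \<in> S then c b else 0)" for b
  have sd: "{b. d b \<noteq> 0} = {b\<in>S. c b \<noteq> 0}" unfolding d_def by auto
  have "lc S c = lc {b\<in>S. c b \<noteq> 0} c" using lc_supp[OF assms(1)] assms BB_car by auto
  also have "\<dots> = lc {b\<in>S. c b \<noteq> 0} d" unfolding d_def using assms BB_car by (intro lc_cong) auto
  finally show ?thesis unfolding rep_def d_def[symmetric] sd using assms by auto
qed

lemma rep_ex: assumes "x \<in> car C" shows "\<exists>c. rep x c"
proof -
  obtain S c where S: "finite S" "S \<subseteq> BB" "x = lc S c" using spanB assms unfolding inspan_def BB_def by blast
  show ?thesis using rep_of[OF S(1,2), of c] S(3) by blast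
qed

lemma rep_uniq:
  assumes "rep x c" "rep x d" shows "c = d"
proof -
  define S where "S = {b. c b \<noteq> 0} \<union> {b. d b \<noteq> 0}"
  have S: "finite S" "S \<subseteq> BB" using assms unfolding rep_def S_def by auto
  have SC: "S \<subseteq> car C" using S BB_car by auto
  have "lc {b. c b \<noteq> 0} c = lc S c" by (rule lc_mono_neutral) (use S SC in \<open>auto simp: S_def\<close>)
  then have "x = lc S c" using assms unfolding rep_def by simp
  moreover have "lc {b. d b \<noteq> 0} d = lc S d" by (rule lc_mono_neutral) (use S SC in \<open>auto simp: S_def\<close>)
  then have "x = lc S d" using assms unfolding rep_def by simp
  ultimately have "add C (lc S c) (neg (lc S d)) = zer C" using SC by simp
  then have z: "lc S (\<lambda>v. c v - d v) = zer C" using SC S by (simp add: lc_neg lc_add)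
  have "c v = d v" for v
  proof (cases "v \<in> S")
    case True
    have "c v - d v = 0" by (rule orth_indep[OF orthB[folded BB_def] BB_fl fl_zer S z True])
    then show ?thesis by simp
  next
    case False then show ?thesis unfolding S_def by auto
  qed
  then show ?thesis by auto
qed

lemma crd: "x \<in> car C \<Longrightarrow> rep x (crd x)"
  unfolding crd_def using rep_ex by (rule someI_ex)

lemma crd_eq: "x \<in> car C \<Longrightarrow> rep x c \<Longrightarrow> crd x = c"
  using crd rep_uniq by blast

lemma crd_lc: assumes "finite S" "S \<subseteq> BB" shows "crd (lc S c) = (\<lambda>b. if b \<in> S then c b else 0)"
proof -
  have "lc S c \<in> car C" using assms BB_car by (intro lc_closed) auto
  then show ?thesis using crd_eq rep_of[OF assms] by blast
qed

lemma crd_fin: "x \<in> car C \<Longrightarrow> finite {b. crd x b \<noteq> 0}"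
  using crd unfolding rep_def by blast
lemma crd_BB: "x \<in> car C \<Longrightarrow> crd x b \<noteq> 0 \<Longrightarrow> b \<in> BB"
  using crd unfolding rep_def by blast
lemma crd_lc_eq: "x \<in> car C \<Longrightarrow> x = lc {b. crd x b \<noteq> 0} (crd x)"
  using crd unfolding rep_def by blast

lemma crd_add: assumes "x \<in> car C" "y \<in> car C" shows "crd (add C x y) = (\<lambda>b. crd x b + crd y b)"
proof -
  define Sx where "Sx = {b. crd x b \<noteq> 0}"
  define Sy where "Sy = {b. crd y b \<noteq> 0}"
  have S: "finite Sx" "finite Sy" "Sx \<subseteq> BB" "Sy \<subseteq> BB" using assms crd_fin crd_BB unfolding Sx_def Sy_def by auto
  have "add C x y = add C (lc Sx (crd x)) (lc Sy (crd y))" using assms crd_lc_eq unfolding Sx_def Sy_def by simp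
  also have "\<dots> = lc (Sx \<union> Sy) (\<lambda>v. (if v \<in> Sx then crd x v else 0) + (if v \<in> Sy then crd y v else 0))"
    using S BB_car by (intro lc_add2) auto
  finally have "crd (add C x y) = (\<lambda>b. if b \<in> Sx \<union> Sy then (if b \<in> Sx then crd x b else 0) + (if b \<in> Sy then crd y b else 0) else 0)"
    using crd_lc S by simp
  then show ?thesis unfolding Sx_def Sy_def by (auto simp: fun_eq_iff)
qed

lemma crd_smul: assumes "x \<in> car C" shows "crd (smul C a x) = (\<lambda>b. a * crd x b)"
proof -
  define Sx where "Sx = {b. crd x b \<noteq> 0}"
  have S: "finite Sx" "Sx \<subseteq> BB" using assms crd_fin crd_BB unfolding Sx_def by auto
  have SC: "Sx \<subseteq> car C" using S BB_car by auto
  have "smul C a x = smul C a (lc Sx (crd x))" using crd_lc_eq[OF assms] unfolding Sx_def by simp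
  also have "\<dots> = lc Sx (\<lambda>v. a * crd x v)" using lc_smul[OF S(1) SC] .
  finally have "smul C a x = lc Sx (\<lambda>v. a * crd x v)" .
  then have "crd (smul C a x) = (\<lambda>b. if b \<in> Sx then a * crd x b else 0)" using crd_lc S by simp
  then show ?thesis unfolding Sx_def by (auto simp: fun_eq_iff)
qed

lemma crd_zer: "crd (zer C) = (\<lambda>_. 0)"
  using crd_lc[of "{}"] by simp

lemma crd_neg: "x \<in> car C \<Longrightarrow> crd (neg x) = (\<lambda>b. - crd x b)"
  unfolding neg_def by (simp add: crd_smul)

lemma fl_crd: assumes "x \<in> car C" shows "fl x = Sup (fl ` {b. crd x b \<noteq> 0})"
proof -
  define Sx where "Sx = {b. crd x b \<noteq> 0}"
  have S: "finite Sx" "Sx \<subseteq> BB" using assms crd_fin crd_BB unfolding Sx_def by auto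
  have "fl (lc Sx (crd x)) = Sup (fl ` {v\<in>Sx. crd x v \<noteq> 0})" using orthB S unfolding orth_def BB_def by blast
  then show ?thesis using crd_lc_eq[OF assms] unfolding Sx_def by simp
qed

lemma crd_bd:
  assumes x: "x \<in> car C"
  shows "\<And>y. y \<in> I \<Longrightarrow> crd (bd C x) (bd C y) = crd x y"
    and "\<And>b. b \<notin> bd C ` I \<Longrightarrow> crd (bd C x) b = 0"
proof -
  define c where "c = crd x"
  define S where "S = {b. c b \<noteq> 0}"
  have S: "finite S" "S \<subseteq> BB" using x crd_fin crd_BB unfolding S_def c_def by auto
  have SC: "S \<subseteq> car C" using S BB_car by auto
  define g where "g = inv_into I (bd C)"
  have g: "g (bd C v) = v" if "v \<in> I" for v unfolding g_def using I3 that by (rule inv_into_f_f)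
  have S1: "finite (S \<inter> I)" "S \<inter> I \<subseteq> car C" using S SC by auto
  have S2: "finite (S - I)" "S - I \<subseteq> car C" using S SC by auto
  have xe: "x = add C (lc (S \<inter> I) c) (lc (S - I) c)"
  proof -
    have "x = lc S c" using crd_lc_eq[OF x] unfolding S_def c_def .
    also have "S = (S \<inter> I) \<union> (S - I)" by auto
    then have "lc S c = add C (lc (S \<inter> I) c) (lc (S - I) c)"
      using lc_Un_disjoint[of "S \<inter> I" "S - I" c] S1 S2 by auto
    finally show ?thesis .
  qed
  have bd2: "bd C (lc (S - I) c) = zer C"
  proof -
    have "bd C (lc (S - I) c) = vsum (\<lambda>v. smul C (c v) (bd C v)) (S - I)" using bd_lc S2 by blast
    also have "\<dots> = zer C"
    proof (rule vsum_zer)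
      fix v assume v: "v \<in> S - I"
      then have "v \<in> bd C ` I \<union> J" using S unfolding BB_def by auto
      then have "bd C v = zer C" using I1 by auto
      then show "smul C (c v) (bd C v) = zer C" by simp
    qed
    finally show ?thesis .
  qed
  have bd1: "bd C (lc (S \<inter> I) c) = lc (bd C ` (S \<inter> I)) (\<lambda>w. c (g w))"
    by (rule bd_lc_reindex) (use S1 g in auto)
  have bdx: "bd C x = lc (bd C ` (S \<inter> I)) (\<lambda>w. c (g w))"
  proof -
    have "bd C x = add C (bd C (lc (S \<inter> I) c)) (bd C (lc (S - I) c))" using xe bd_add S1 S2 by simp
    moreover have "lc (bd C ` (S \<inter> I)) (\<lambda>w. c (g w)) \<in> car C" using S1 by (intro lc_closed) auto
    ultimately show ?thesis using bd1 bd2 by simp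
  qed
  have fin: "finite (bd C ` (S \<inter> I))" "bd C ` (S \<inter> I) \<subseteq> BB" using S1 unfolding BB_def by auto
  have cb: "crd (bd C x) = (\<lambda>b. if b \<in> bd C ` (S \<inter> I) then c (g b) else 0)"
    unfolding bdx using crd_lc[OF fin] .
  show "crd (bd C x) (bd C y) = crd x y" if y: "y \<in> I" for y
  proof (cases "y \<in> S")
    case True then show ?thesis using cb g y unfolding c_def by auto
  next
    case False
    have "bd C y \<notin> bd C ` (S \<inter> I)"
    proof
      assume "bd C y \<in> bd C ` (S \<inter> I)"
      then obtain v where "v \<in> S \<inter> I" "bd C y = bd C v" by auto
      then have "v = y" using I3 y unfolding inj_on_def by blast
      then show False using False \<open>v \<in> S \<inter> I\<close> by simp
    qed
    then show ?thesis using cb False unfolding S_def c_def by auto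
  qed
  show "crd (bd C x) b = 0" if "b \<notin> bd C ` I" for b using cb that by auto
qed

definition dgr :: "'v \<Rightarrow> int" where "dgr b = (SOME n. b \<in> deg C n)"

lemma dgr: "b \<in> BB \<Longrightarrow> b \<in> deg C (dgr b)"
  unfolding dgr_def BB_def using hom by (metis someI_ex)

lemma dgr_eq: "b \<in> BB \<Longrightarrow> b \<in> deg C m \<Longrightarrow> dgr b = m"
  using dgr deg_disj BB_nz by blast

lemma graded_uniq_set:
  assumes N: "finite N" and g: "\<And>m. m \<in> N \<Longrightarrow> g m \<in> deg C m" and z: "vsum g N = zer C"
  shows "\<And>m. m \<in> N \<Longrightarrow> g m = zer C"
proof -
  obtain h where h: "bij_betw h {0..<card N} N" using ex_bij_betw_nat_finite[OF N] by blast
  have hinj: "inj_on h {..<card N}" and himg: "h ` {..<card N} = N"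
    using h unfolding bij_betw_def by (auto simp: atLeast0LessThan)
  have gC: "g m \<in> car C" if "m \<in> N" for m using g[OF that] by (rule deg_car)
  have "vsum g N = vsum (g \<circ> h) {..<card N}"
    using vsum_reindex[OF hinj, of g] himg gC by auto
  also have "\<dots> = vsumn C (g \<circ> h) (card N)"
  proof -
    have "\<And>i. i < card N \<Longrightarrow> (g \<circ> h) i \<in> car C" using gC himg by auto
    then show ?thesis using vsumn_eq[of "card N" "g \<circ> h"] by simp
  qed
  finally have zz: "vsumn C (g \<circ> h) (card N) = zer C" using z by simp
  have gh: "\<forall>i<card N. (g \<circ> h) i \<in> deg C (h i)" using g himg by auto
  fix m assume "m \<in> N"
  then obtain i where "i < card N" "m = h i" using himg by auto
  then show "g m = zer C" using graded_uniq[OF hinj gh zz] by simp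
qed

lemma lc_deg_decomp:
  assumes S: "finite S" "S \<subseteq> BB"
  shows "lc S c = vsum (\<lambda>m. lc {b\<in>S. dgr b = m} c) (dgr ` S)"
proof -
  have SC: "S \<subseteq> car C" using S BB_car by auto
  have SU: "S = (\<Union>m\<in>dgr ` S. {b\<in>S. dgr b = m})" by auto
  have "lc S c = vsum (\<lambda>v. smul C (c v) v) (\<Union>m\<in>dgr ` S. {b\<in>S. dgr b = m})" unfolding lc_def using SU by simp
  also have "\<dots> = vsum (\<lambda>m. vsum (\<lambda>v. smul C (c v) v) {b\<in>S. dgr b = m}) (dgr ` S)"
  proof (rule vsum_UN_disjoint)
    show "pairwise (\<lambda>i j. disjnt {b\<in>S. dgr b = i} {b\<in>S. dgr b = j}) (dgr ` S)" unfolding pairwise_def disjnt_def by auto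
    show "\<And>x. x \<in> (\<Union>m\<in>dgr ` S. {b\<in>S. dgr b = m}) \<Longrightarrow> smul C (c x) x \<in> car C" using SC by (blast intro: smul_closed)
  qed (use S in auto)
  finally show ?thesis unfolding lc_def .
qed

lemma crd_deg:
  assumes x: "x \<in> deg C n" and b: "crd x b \<noteq> 0"
  shows "b \<in> deg C n"
proof -
  have xC: "x \<in> car C" using x by (rule deg_car)
  define c where "c = crd x"
  define S where "S = {b. c b \<noteq> 0}"
  have S: "finite S" "S \<subseteq> BB" using xC crd_fin crd_BB unfolding S_def c_def by auto
  have SC: "S \<subseteq> car C" using S BB_car by auto
  define S1 where "S1 = {b\<in>S. dgr b = n}"
  define S2 where "S2 = S - S1"
  have S12: "finite S1" "finite S2" "S1 \<subseteq> BB" "S2 \<subseteq> BB" "S1 \<subseteq> car C" "S2 \<subseteq> car C" "S = S1 \<union> S2" "S1 \<inter> S2 = {}"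
    using S SC unfolding S1_def S2_def by auto
  have S1D: "S1 \<subseteq> deg C n" unfolding S1_def using S dgr by auto
  have xe: "x = add C (lc S1 c) (lc S2 c)"
    using crd_lc_eq[OF xC] lc_Un_disjoint[of S1 S2 c] S12 unfolding S_def c_def by auto
  define z where "z = lc S2 c"
  have l1D: "lc S1 c \<in> deg C n" using subsp_lc[OF deg_subsp S1D] .
  have zC: "z \<in> car C" and l1C: "lc S1 c \<in> car C" unfolding z_def using S12 l1D deg_car by auto
  have zx: "z = add C x (neg (lc S1 c))" unfolding z_def
    by (rule add_move) (use xe zC l1C xC add_comm in \<open>auto simp: z_def\<close>)
  have zD: "z \<in> deg C n" using zx x l1D subspD[OF deg_subsp] by simp
  define N2 where "N2 = dgr ` S2"
  have nN2: "n \<notin> N2" unfolding N2_def S2_def S1_def by auto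
  define g where "g m = lc {b\<in>S2. dgr b = m} c" for m
  have gD: "g m \<in> deg C m" for m
  proof -
    have "{b\<in>S2. dgr b = m} \<subseteq> deg C m" using S12 dgr by auto
    then show ?thesis unfolding g_def by (rule subsp_lc[OF deg_subsp])
  qed
  have gC: "g m \<in> car C" for m using gD[of m] by (rule deg_car)
  have zg: "z = vsum g N2" unfolding z_def g_def N2_def using lc_deg_decomp S12 by blast
  define g' where "g' m = (if m = n then neg z else g m)" for m
  have "vsum g' (insert n N2) = add C (g' n) (vsum g' N2)"
    by (rule vsum_insert) (use nN2 gC zC in \<open>auto simp: g'_def N2_def S12\<close>)
  also have "vsum g' N2 = vsum g N2" using nN2 gC unfolding g'_def by (intro vsum_cong) auto
  also have "g' n = neg z" unfolding g'_def by simp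
  finally have "vsum g' (insert n N2) = zer C" using zg zC by simp
  moreover have "g' m \<in> deg C m" if "m \<in> insert n N2" for m
    unfolding g'_def using gD zD subspD(5)[OF deg_subsp] by auto
  ultimately have "g' n = zer C"
    using graded_uniq_set[of "insert n N2" g'] S12 unfolding N2_def by auto
  then have z0: "z = zer C" using zC unfolding g'_def
    by (metis add_eq_zer_neg add_neg add_zer neg_closed zer_closed)
  have "\<forall>v\<in>S2. c v = 0"
    using orth_indep[OF orthB[folded BB_def] BB_fl fl_zer S12(2) S12(4)] z0 unfolding z_def by blast
  then have "S2 = {}" unfolding S2_def S_def by auto
  moreover have "b \<in> S" using b unfolding S_def c_def by simp
  ultimately show ?thesis using S1D S12 by auto
qed

end

lemma iso_from_mor:
  fixes A :: "('k::field, 'a) acc" and B :: "('k, 'b) acc"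
  assumes f: "acc_mor A B f"
    and clA: "\<forall>x\<in>car A. \<forall>y\<in>car A. add A x y \<in> car A" "\<forall>c. \<forall>x\<in>car A. smul A c x \<in> car A"
      "\<forall>x\<in>car A. bd A x \<in> car A"
    and g: "\<forall>y\<in>car B. g y \<in> car A" "\<forall>x\<in>car A. g (f x) = x" "\<forall>y\<in>car B. f (g y) = y"
      "\<forall>n. g ` deg B n \<subseteq> deg A n"
    and fl: "\<forall>x\<in>car A. filt B (f x) = filt A x"
  shows "acc_iso A B"
proof -
  note fm = f[unfolded acc_mor_def]
  have "acc_mor B A g" unfolding acc_mor_def
  proof (intro conjI ballI allI)
    fix y assume "y \<in> car B" then show "g y \<in> car A" using g by blast
  next
    fix y1 y2 assume y: "y1 \<in> car B" "y2 \<in> car B"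
    have "add B y1 y2 = add B (f (g y1)) (f (g y2))" using y g by simp
    also have "\<dots> = f (add A (g y1) (g y2))" using fm y g by simp
    finally show "g (add B y1 y2) = add A (g y1) (g y2)" using g clA y by simp
  next
    fix c y assume y: "y \<in> car B"
    have "smul B c y = smul B c (f (g y))" using y g by simp
    also have "\<dots> = f (smul A c (g y))" using fm y g by simp
    finally show "g (smul B c y) = smul A c (g y)" using g clA y by simp
  next
    fix n show "g ` deg B n \<subseteq> deg A n" using g by blast
  next
    fix y assume y: "y \<in> car B"
    have "bd B y = bd B (f (g y))" using y g by simp
    also have "\<dots> = f (bd A (g y))" using fm y g by simp
    finally show "g (bd B y) = bd A (g y)" using g clA y by simp
  next
    fix y assume y: "y \<in> car B"
    have gy: "g y \<in> car A" using g y by blast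
    have "filt A (g y) = filt B (f (g y))" using fl gy by simp
    then show "filt A (g y) \<le> filt B y" using g y by simp
  qed
  then show ?thesis unfolding acc_iso_def using f g by blast
qed

lemma acc_iso_sym: "acc_iso A B \<Longrightarrow> acc_iso B A"
  unfolding acc_iso_def by blast

lemma dsumF_simps:
  "car (dsumF I E) = {x. (\<forall>i\<in>I. x i \<in> car (E i)) \<and> (\<forall>i. i \<notin> I \<longrightarrow> x i = zer (E i))
              \<and> finite {i. x i \<noteq> zer (E i)}}"
  "add (dsumF I E) = (\<lambda>x y i. add (E i) (x i) (y i))"
  "zer (dsumF I E) = (\<lambda>i. zer (E i))"
  "smul (dsumF I E) = (\<lambda>c x i. smul (E i) c (x i))"
  "deg (dsumF I E) = (\<lambda>n. {x. (\<forall>i\<in>I. x i \<in> deg (E i) n) \<and> (\<forall>i. i \<notin> I \<longrightarrow> x i = zer (E i))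
              \<and> finite {i. x i \<noteq> zer (E i)}})"
  "bd (dsumF I E) = (\<lambda>x i. if i \<in> I then bd (E i) (x i) else zer (E i))"
  "filt (dsumF I E) = (\<lambda>x. Sup {filt (E i) (x i) | i. i \<in> I})"
  unfolding dsumF_def by simp_all

lemma dsum2_simps:
  "car (dsum2 A B) = car A \<times> car B"
  "add (dsum2 A B) = (\<lambda>(x, y) (u, v). (add A x u, add B y v))"
  "zer (dsum2 A B) = (zer A, zer B)"
  "smul (dsum2 A B) = (\<lambda>c (x, y). (smul A c x, smul B c y))"
  "deg (dsum2 A B) = (\<lambda>n. deg A n \<times> deg B n)"
  "bd (dsum2 A B) = (\<lambda>(x, y). (bd A x, bd B y))"
  "filt (dsum2 A B) = (\<lambda>(x, y). max (filt A x) (filt B y))"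
  unfolding dsum2_def by simp_all

lemma Efin_simps:
  "car (Efin k a b) = UNIV"
  "add (Efin k a b) = (\<lambda>(x, y) (u, v). (x + u, y + v))"
  "zer (Efin k a b) = (0, 0)"
  "smul (Efin k a b) = (\<lambda>c (x, y). (c * x, c * y))"
  "deg (Efin k a b) = (\<lambda>n. if n = k then {(x, 0) | x. True}
                 else if n = k + 1 then {(0, y) | y. True} else {(0, 0)})"
  "bd (Efin k a b) = (\<lambda>(x, y). (y, 0))"
  "filt (Efin k a b) = (\<lambda>(x, y). if y \<noteq> 0 then ereal b else if x \<noteq> 0 then ereal a else -\<infinity>)"
  unfolding Efin_def by simp_all

lemma Einf_simps:
  "car (Einf l c) = UNIV" "add (Einf l c) = (+)" "zer (Einf l c) = 0" "smul (Einf l c) = (*)"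
  "deg (Einf l c) = (\<lambda>n. if n = l then UNIV else {0})"
  "bd (Einf l c) = (\<lambda>_. 0)"
  "filt (Einf l c) = (\<lambda>x. if x = 0 then -\<infinity> else ereal c)"
  unfolding Einf_def by simp_all

lemma Sup_if_single: "(if P then f j else (-\<infinity>::ereal)) = Sup (f ` {b\<in>{j}. P})"
  by (auto simp: bot_ereal_def)

context BAS
begin

definition kk :: "'v \<Rightarrow> int" where "kk y = dgr (bd C y)"
definition aa :: "'v \<Rightarrow> real" where "aa y = real_of_ereal (fl (bd C y))"
definition bb :: "'v \<Rightarrow> real" where "bb y = real_of_ereal (fl y)"
definition ll :: "'v \<Rightarrow> int" where "ll j = dgr j"
definition cc :: "'v \<Rightarrow> real" where "cc j = real_of_ereal (fl j)"

definition EA where "EA = dsumF I (\<lambda>i. Efin (kk i) (aa i) (bb i) :: ('k, 'k \<times> 'k) acc)"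
definition EJ where "EJ = dsumF J (\<lambda>j. Einf (ll j) (cc j) :: ('k, 'k) acc)"
definition DD where "DD = dsum2 EA EJ"

definition FF :: "'v \<Rightarrow> ('v \<Rightarrow> 'k \<times> 'k) \<times> ('v \<Rightarrow> 'k)" where
  "FF x = (\<lambda>y. if y \<in> I then (crd x (bd C y), crd x y) else (0, 0), \<lambda>j. if j \<in> J then crd x j else 0)"

lemma I_BB: "I \<subseteq> BB" and bdI_BB: "bd C ` I \<subseteq> BB" and J_BB: "J \<subseteq> BB"
  unfolding BB_def by auto

lemma fl_real: "b \<in> BB \<Longrightarrow> ereal (real_of_ereal (fl b)) = fl b"
  using BB_fl[of b] fl_nbig[of b] BB_car by (cases "fl b") auto

lemma dg_bd: assumes "y \<in> I" shows "dgr y = kk y + 1"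
proof -
  have y: "y \<in> deg C (dgr y)" using dgr I_BB assms by blast
  have "y \<in> deg C (dgr y - 1 + 1)" using y by simp
  then have "bd C y \<in> deg C (dgr y - 1)" by (rule bd_deg)
  then have "dgr (bd C y) = dgr y - 1" using dgr_eq bdI_BB assms by blast
  then show ?thesis unfolding kk_def by simp
qed

lemma fin_pre: "finite S \<Longrightarrow> finite {y\<in>I. bd C y \<in> S}"
proof -
  assume S: "finite S"
  have "inj_on (bd C) {y\<in>I. bd C y \<in> S}" using I3 by (rule inj_on_subset) auto
  moreover have "bd C ` {y\<in>I. bd C y \<in> S} \<subseteq> S" by auto
  ultimately show ?thesis using S by (meson finite_imageD finite_subset)
qed

lemma FF_car: assumes x: "x \<in> car C" shows "FF x \<in> car DD"
proof -
  have fin: "finite {b. crd x b \<noteq> 0}" using crd_fin[OF x] .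
  have "{i. (if i \<in> I then (crd x (bd C i), crd x i) else (0, 0)) \<noteq> (0, 0)} \<subseteq>
        {y\<in>I. bd C y \<in> {b. crd x b \<noteq> 0}} \<union> {b. crd x b \<noteq> 0}" by auto
  then have f1: "finite {i. (if i \<in> I then (crd x (bd C i), crd x i) else (0, 0)) \<noteq> (0, 0)}"
    using fin fin_pre[OF fin] by (meson finite_UnI finite_subset)
  have "{j. (if j \<in> J then crd x j else 0) \<noteq> 0} \<subseteq> {b. crd x b \<noteq> 0}" by auto
  then have f2: "finite {j. (if j \<in> J then crd x j else 0) \<noteq> 0}" using fin by (rule finite_subset)
  show ?thesis unfolding DD_def EA_def EJ_def FF_def
    using f1 f2 by (simp add: dsum2_simps dsumF_simps Efin_simps Einf_simps)
qed

lemma FF_add: assumes "x \<in> car C" "y \<in> car C" shows "FF (add C x y) = add DD (FF x) (FF y)"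
  using assms unfolding DD_def EA_def EJ_def FF_def
  by (auto simp: dsum2_simps dsumF_simps Efin_simps Einf_simps crd_add fun_eq_iff)

lemma FF_smul: assumes "x \<in> car C" shows "FF (smul C c x) = smul DD c (FF x)"
  using assms unfolding DD_def EA_def EJ_def FF_def
  by (auto simp: dsum2_simps dsumF_simps Efin_simps Einf_simps crd_smul fun_eq_iff)

lemma FF_bd: assumes x: "x \<in> car C" shows "FF (bd C x) = bd DD (FF x)"
proof -
  have a: "crd (bd C x) (bd C y) = crd x y" if "y \<in> I" for y using crd_bd(1)[OF x that] .
  have b: "crd (bd C x) y = 0" if "y \<in> I" for y using crd_bd(2)[OF x] that disj_I_bdI by blast
  have c: "crd (bd C x) j = 0" if "j \<in> J" for j using crd_bd(2)[OF x] that J2 by blast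
  show ?thesis unfolding DD_def EA_def EJ_def FF_def
    using a b c by (auto simp: dsum2_simps dsumF_simps Efin_simps Einf_simps fun_eq_iff)
qed

lemma FF_deg: assumes x: "x \<in> deg C n" shows "FF x \<in> deg DD n"
proof -
  have xC: "x \<in> car C" using x by (rule deg_car)
  have fin: "finite {b. crd x b \<noteq> 0}" using crd_fin[OF xC] .
  have "{i. (if i \<in> I then (crd x (bd C i), crd x i) else (0, 0)) \<noteq> (0, 0)} \<subseteq>
        {y\<in>I. bd C y \<in> {b. crd x b \<noteq> 0}} \<union> {b. crd x b \<noteq> 0}" by auto
  then have f1: "finite {i. (if i \<in> I then (crd x (bd C i), crd x i) else (0, 0)) \<noteq> (0, 0)}"
    using fin fin_pre[OF fin] by (meson finite_UnI finite_subset)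
  have "{j. (if j \<in> J then crd x j else 0) \<noteq> 0} \<subseteq> {b. crd x b \<noteq> 0}" by auto
  then have f2: "finite {j. (if j \<in> J then crd x j else 0) \<noteq> 0}" using fin by (rule finite_subset)
  have d1: "(crd x (bd C i), crd x i) \<in> deg (Efin (kk i) (aa i) (bb i) :: ('k, 'k \<times> 'k) acc) n" if i: "i \<in> I" for i
  proof -
    have e1: "crd x (bd C i) \<noteq> 0 \<Longrightarrow> kk i = n" using crd_deg[OF x] dgr_eq bdI_BB i unfolding kk_def by blast
    have e2: "crd x i \<noteq> 0 \<Longrightarrow> kk i + 1 = n" using crd_deg[OF x] dgr_eq I_BB i dg_bd by fastforce
    show ?thesis using e1 e2 by (cases "crd x (bd C i) = 0"; cases "crd x i = 0") (auto simp: Efin_simps)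
  qed
  have d2: "crd x j \<in> deg (Einf (ll j) (cc j) :: ('k, 'k) acc) n" if j: "j \<in> J" for j
  proof -
    have "crd x j \<noteq> 0 \<Longrightarrow> ll j = n" using crd_deg[OF x] dgr_eq J_BB j unfolding ll_def by blast
    then show ?thesis by (auto simp: Einf_simps)
  qed
  show ?thesis unfolding DD_def EA_def EJ_def FF_def
    using f1 f2 d1 d2 by (simp add: dsum2_simps dsumF_simps Efin_simps Einf_simps)
qed

lemma Efin_filt_eq:
  assumes i: "i \<in> I"
  shows "filt (Efin (kk i) (aa i) (bb i) :: ('k, 'k \<times> 'k) acc) (u, v) =
    Sup (fl ` ({bd C i | _. u \<noteq> 0} \<union> {i | _. v \<noteq> 0}))"
proof -
  have fb: "ereal (aa i) = fl (bd C i)" unfolding aa_def using fl_real bdI_BB i by blast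
  have fi: "ereal (bb i) = fl i" unfolding bb_def using fl_real I_BB i by blast
  have le: "fl (bd C i) \<le> fl i" using fl_bd I1 i by blast
  show ?thesis using le by (auto simp: Efin_simps fb fi bot_ereal_def max_def)
qed

lemma FF_filt: assumes x: "x \<in> car C" shows "filt DD (FF x) = fl x"
proof -
  define A where "A i = {bd C i | _. crd x (bd C i) \<noteq> 0} \<union> {i | _. crd x i \<noteq> 0}" for i
  define Bj where "Bj j = {j | _. crd x j \<noteq> 0}" for j
  have fa: "filt EA (fst (FF x)) = Sup ((\<lambda>i. Sup (fl ` A i)) ` I)"
  proof -
    have "filt EA (fst (FF x)) = Sup ((\<lambda>i. filt (Efin (kk i) (aa i) (bb i) :: ('k, 'k \<times> 'k) acc) (crd x (bd C i), crd x i)) ` I)"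
      unfolding EA_def FF_def by (simp add: dsumF_simps setcompr_eq_image)
    also have "\<dots> = Sup ((\<lambda>i. Sup (fl ` A i)) ` I)"
    proof (rule arg_cong[where f=Sup], rule image_cong)
      fix i assume i: "i \<in> I"
      show "filt (Efin (kk i) (aa i) (bb i) :: ('k, 'k \<times> 'k) acc) (crd x (bd C i), crd x i) = Sup (fl ` A i)"
        unfolding A_def by (rule Efin_filt_eq[OF i])
    qed simp
    finally show ?thesis .
  qed
  have fj: "filt EJ (snd (FF x)) = Sup ((\<lambda>j. Sup (fl ` Bj j)) ` J)"
  proof -
    have "filt EJ (snd (FF x)) = Sup ((\<lambda>j. filt (Einf (ll j) (cc j) :: ('k, 'k) acc) (crd x j)) ` J)"
      unfolding EJ_def FF_def by (simp add: dsumF_simps setcompr_eq_image)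
    also have "\<dots> = Sup ((\<lambda>j. Sup (fl ` Bj j)) ` J)"
    proof (rule arg_cong[where f=Sup], rule image_cong)
      fix j assume j: "j \<in> J"
      have "ereal (cc j) = fl j" unfolding cc_def using fl_real J_BB j by blast
      then show "filt (Einf (ll j) (cc j) :: ('k, 'k) acc) (crd x j) = Sup (fl ` Bj j)"
        unfolding Bj_def by (auto simp: Einf_simps bot_ereal_def)
    qed simp
    finally show ?thesis .
  qed
  have "filt DD (FF x) = max (filt EA (fst (FF x))) (filt EJ (snd (FF x)))"
    unfolding DD_def by (simp add: dsum2_simps split: prod.splits)
  also have "\<dots> = max (Sup (fl ` (\<Union>i\<in>I. A i))) (Sup (fl ` (\<Union>j\<in>J. Bj j)))"
    unfolding fa fj by (simp add: SUP_UNION)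
  also have "\<dots> = Sup (fl ` ((\<Union>i\<in>I. A i) \<union> (\<Union>j\<in>J. Bj j)))" by (simp add: image_Un Sup_Un_ereal)
  also have "(\<Union>i\<in>I. A i) \<union> (\<Union>j\<in>J. Bj j) = {b. crd x b \<noteq> 0}"
  proof
    show "(\<Union>i\<in>I. A i) \<union> (\<Union>j\<in>J. Bj j) \<subseteq> {b. crd x b \<noteq> 0}" unfolding A_def Bj_def by auto
    show "{b. crd x b \<noteq> 0} \<subseteq> (\<Union>i\<in>I. A i) \<union> (\<Union>j\<in>J. Bj j)"
    proof
      fix b assume b: "b \<in> {b. crd x b \<noteq> 0}"
      then have "b \<in> BB" using crd_BB x by blast
      then show "b \<in> (\<Union>i\<in>I. A i) \<union> (\<Union>j\<in>J. Bj j)" unfolding BB_def A_def Bj_def using b by blast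
    qed
  qed
  also have "Sup (fl ` {b. crd x b \<noteq> 0}) = fl x" using fl_crd[OF x] by simp
  finally show ?thesis .
qed

lemma FF_mor: "acc_mor C DD FF"
  unfolding acc_mor_def
  using FF_car FF_add FF_smul FF_deg FF_bd FF_filt deg_car unfolding fl_def by auto

definition cf :: "('v \<Rightarrow> 'k \<times> 'k) \<Rightarrow> ('v \<Rightarrow> 'k) \<Rightarrow> 'v \<Rightarrow> 'k" where
  "cf p q b = (if b \<in> I then snd (p b) else if b \<in> J then q b
      else if b \<in> bd C ` I then fst (p (inv_into I (bd C) b)) else 0)"

definition GG :: "('v \<Rightarrow> 'k \<times> 'k) \<times> ('v \<Rightarrow> 'k) \<Rightarrow> 'v" where
  "GG d = lc {b. cf (fst d) (snd d) b \<noteq> 0} (cf (fst d) (snd d))"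

lemma inv_bd: "y \<in> I \<Longrightarrow> inv_into I (bd C) (bd C y) = y"
  using I3 by (rule inv_into_f_f)

lemma DD_car: "d \<in> car DD \<longleftrightarrow> (\<forall>i. i \<notin> I \<longrightarrow> fst d i = (0,0)) \<and> finite {i. fst d i \<noteq> (0,0)} \<and>
    (\<forall>j. j \<notin> J \<longrightarrow> snd d j = 0) \<and> finite {j. snd d j \<noteq> 0}"
  unfolding DD_def EA_def EJ_def by (cases d) (simp add: dsum2_simps dsumF_simps Efin_simps Einf_simps)

lemma cf_supp:
  assumes d: "d \<in> car DD"
  shows "finite {b. cf (fst d) (snd d) b \<noteq> 0}" "{b. cf (fst d) (snd d) b \<noteq> 0} \<subseteq> BB"
proof -
  define p where "p = fst d"
  define q where "q = snd d"
  have "{b. cf p q b \<noteq> 0} \<subseteq> {i. p i \<noteq> (0,0)} \<union> {j. q j \<noteq> 0} \<union> bd C ` {i\<in>I. p i \<noteq> (0,0)}"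
  proof
    fix b assume b: "b \<in> {b. cf p q b \<noteq> 0}"
    show "b \<in> {i. p i \<noteq> (0,0)} \<union> {j. q j \<noteq> 0} \<union> bd C ` {i\<in>I. p i \<noteq> (0,0)}"
    proof (cases "b \<in> I \<or> b \<in> J")
      case True then show ?thesis using b unfolding cf_def by (auto split: if_splits)
    next
      case False
      then obtain y where y: "y \<in> I" "b = bd C y" "fst (p y) \<noteq> 0" using b unfolding cf_def by (auto split: if_splits simp: inv_bd)
      then have "p y \<noteq> (0,0)" by auto
      then show ?thesis using y by auto
    qed
  qed
  moreover have "finite ({i. p i \<noteq> (0,0)} \<union> {j. q j \<noteq> 0} \<union> bd C ` {i\<in>I. p i \<noteq> (0,0)})"
    using d unfolding DD_car p_def q_def by auto
  ultimately show "finite {b. cf (fst d) (snd d) b \<noteq> 0}" unfolding p_def q_def by (rule finite_subset)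
  show "{b. cf (fst d) (snd d) b \<noteq> 0} \<subseteq> BB" unfolding cf_def BB_def by (auto split: if_splits)
qed

lemma GG_car: "d \<in> car DD \<Longrightarrow> GG d \<in> car C"
  unfolding GG_def using cf_supp BB_car by (meson lc_closed order_trans)

lemma crd_GG: "d \<in> car DD \<Longrightarrow> crd (GG d) = cf (fst d) (snd d)"
  unfolding GG_def using crd_lc[OF cf_supp] by (auto simp: fun_eq_iff)

lemma FF_GG: assumes d: "d \<in> car DD" shows "FF (GG d) = d"
proof -
  have c: "crd (GG d) = cf (fst d) (snd d)" using crd_GG[OF d] .
  have bdnI: "bd C y \<notin> I" "bd C y \<notin> J" if "y \<in> I" for y using that disj_I_bdI J2 by auto
  have "fst (FF (GG d)) = fst d"
  proof
    fix y show "fst (FF (GG d)) y = fst d y"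
    proof (cases "y \<in> I")
      case True then show ?thesis unfolding FF_def c cf_def using bdnI[OF True] inv_bd[OF True] by simp
    next
      case False then show ?thesis unfolding FF_def using d unfolding DD_car by simp
    qed
  qed
  moreover have "snd (FF (GG d)) = snd d"
  proof
    fix j show "snd (FF (GG d)) j = snd d j"
    proof (cases "j \<in> J")
      case True then show ?thesis unfolding FF_def c cf_def using disj_I_J by auto
    next
      case False then show ?thesis unfolding FF_def using d unfolding DD_car by simp
    qed
  qed
  ultimately show ?thesis by (simp add: prod_eq_iff)
qed

lemma GG_FF: assumes x: "x \<in> car C" shows "GG (FF x) = x"
proof -
  have "cf (fst (FF x)) (snd (FF x)) = crd x"
  proof
    fix b show "cf (fst (FF x)) (snd (FF x)) b = crd x b"
    proof (cases "b \<in> I")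
      case True then show ?thesis unfolding cf_def FF_def by simp
    next
      case nI: False
      show ?thesis
      proof (cases "b \<in> J")
        case True then show ?thesis using nI unfolding cf_def FF_def by simp
      next
        case nJ: False
        show ?thesis
        proof (cases "b \<in> bd C ` I")
          case True
          then obtain y where y: "y \<in> I" "b = bd C y" by auto
          then show ?thesis using nI nJ inv_bd[OF y(1)] unfolding cf_def FF_def by simp
        next
          case False
          then have "b \<notin> BB" using nI nJ unfolding BB_def by auto
          then have "crd x b = 0" using crd_BB x by blast
          then show ?thesis using nI nJ False unfolding cf_def by simp
        qed
      qed
    qed
  qed
  then show ?thesis unfolding GG_def using crd_lc_eq[OF x] by simp
qed

lemma GG_deg: assumes d: "d \<in> deg DD n" shows "GG d \<in> deg C n"
proof -
  have dC: "d \<in> car DD"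
    using d unfolding DD_def EA_def EJ_def by (cases d) (simp add: dsum2_simps dsumF_simps Efin_simps Einf_simps)
  define p where "p = fst d"
  define q where "q = snd d"
  have pd: "p i \<in> deg (Efin (kk i) (aa i) (bb i) :: ('k, 'k \<times> 'k) acc) n" if "i \<in> I" for i
    using d that unfolding DD_def EA_def p_def by (cases d) (simp add: dsum2_simps dsumF_simps)
  have qd: "q j \<in> deg (Einf (ll j) (cc j) :: ('k, 'k) acc) n" if "j \<in> J" for j
    using d that unfolding DD_def EJ_def q_def by (cases d) (simp add: dsum2_simps dsumF_simps)
  have "{b. cf p q b \<noteq> 0} \<subseteq> deg C n"
  proof
    fix b assume b: "b \<in> {b. cf p q b \<noteq> 0}"
    show "b \<in> deg C n"
    proof (cases "b \<in> I")
      case True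
      then have "snd (p b) \<noteq> 0" using b unfolding cf_def by simp
      then have "n = kk b + 1" using pd[OF True] by (auto simp: Efin_simps split: if_splits)
      moreover have "b \<in> deg C (dgr b)" using dgr I_BB True by blast
      ultimately show ?thesis using dg_bd[OF True] by simp
    next
      case nI: False
      show ?thesis
      proof (cases "b \<in> J")
        case True
        then have "q b \<noteq> 0" using b nI unfolding cf_def by simp
        then have "n = ll b" using qd[OF True] by (auto simp: Einf_simps split: if_splits)
        then show ?thesis using dgr J_BB True unfolding ll_def by auto
      next
        case nJ: False
        then obtain y where y: "y \<in> I" "b = bd C y" "fst (p y) \<noteq> 0"
          using b nI unfolding cf_def by (auto split: if_splits simp: inv_bd)
        then have "n = kk y" using pd[OF y(1)] by (auto simp: Efin_simps split: if_splits)
        then show ?thesis using dgr bdI_BB y unfolding kk_def by auto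
      qed
    qed
  qed
  then show ?thesis unfolding GG_def p_def q_def using subsp_lc[OF deg_subsp] by blast
qed

lemma iso_C_DD: "acc_iso C DD"
proof (rule iso_from_mor[OF FF_mor])
  show "\<forall>x\<in>car DD. FF (GG x) = x" using FF_GG by blast
  show "\<forall>x\<in>car C. filt DD (FF x) = filt C x" using FF_filt unfolding fl_def by blast
  show "\<forall>n. GG ` deg DD n \<subseteq> deg C n" using GG_deg by blast
qed (use GG_car GG_FF in auto)

end

context BAS
begin

lemma bounds_subsp: "subsp (bounds C)"
proof -
  have "bounds C \<subseteq> car C" unfolding bounds_def by auto
  moreover have "zer C \<in> bounds C" unfolding bounds_def by (rule image_eqI[of _ _ "zer C"]) auto
  moreover have "add C x y \<in> bounds C" if xy: "x \<in> bounds C" "y \<in> bounds C" for x y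
  proof -
    obtain a b where "a \<in> car C" "b \<in> car C" "x = bd C a" "y = bd C b" using xy unfolding bounds_def by auto
    then show ?thesis unfolding bounds_def using bd_add by (intro image_eqI[of _ _ "add C a b"]) auto
  qed
  moreover have "smul C c x \<in> bounds C" if xx: "x \<in> bounds C" for x c
  proof -
    obtain a where "a \<in> car C" "x = bd C a" using xx unfolding bounds_def by auto
    then show ?thesis unfolding bounds_def using bd_smul by (intro image_eqI[of _ _ "smul C c a"]) auto
  qed
  ultimately show ?thesis unfolding subsp_def by blast
qed

lemma bounds_cycles: "bounds C \<subseteq> cycles C"
  unfolding bounds_def cycles_def by auto

lemma cycles_subsp: "subsp (cycles C)"
  unfolding subsp_def cycles_def by (auto simp: bd_add bd_smul)

lemma mem_hclass: "x \<in> hclass C y \<longleftrightarrow> (\<exists>b\<in>bounds C. x = add C y b)"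
  unfolding hclass_def by auto

lemma hclass_eqI:
  assumes x: "x \<in> car C" and y: "y \<in> car C" and d: "add C x (neg y) \<in> bounds C"
  shows "hclass C x = hclass C y"
proof -
  note Bs = subspD[OF bounds_subsp]
  define b0 where "b0 = add C x (neg y)"
  have b0: "b0 \<in> bounds C" "b0 \<in> car C" using d Bs unfolding b0_def by auto
  have xy: "x = add C y b0" unfolding b0_def using x y by (metis add_assoc add_comm add_neg add_zer neg_closed)
  show ?thesis
  proof
    show "hclass C x \<subseteq> hclass C y"
    proof
      fix z assume "z \<in> hclass C x"
      then obtain b where b: "b \<in> bounds C" "z = add C x b" unfolding mem_hclass by auto
      have "z = add C y (add C b0 b)" using b xy b0 y Bs by (simp add: add_assoc)
      then show "z \<in> hclass C y" unfolding mem_hclass using b b0 Bs by blast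
    qed
    show "hclass C y \<subseteq> hclass C x"
    proof
      fix z assume "z \<in> hclass C y"
      then obtain b where b: "b \<in> bounds C" "z = add C y b" unfolding mem_hclass by auto
      have bC: "b \<in> car C" using b Bs by auto
      have "y = add C x (neg b0)" using xy y b0 by (metis add_cancel_right)
      then have "z = add C x (add C (neg b0) b)" using b bC b0 x by (simp add: add_assoc)
      then show "z \<in> hclass C x" unfolding mem_hclass using b b0 Bs by blast
    qed
  qed
qed

lemma hclass_eqD:
  assumes x: "x \<in> car C" and y: "y \<in> car C" and e: "hclass C x = hclass C y"
  shows "add C x (neg y) \<in> bounds C"
proof -
  note Bs = subspD[OF bounds_subsp]
  have "x \<in> hclass C x" unfolding mem_hclass using x Bs by (intro bexI[of _ "zer C"]) auto
  then have "x \<in> hclass C y" using e by simp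
  then obtain b where b: "b \<in> bounds C" "x = add C y b" unfolding mem_hclass by auto
  have "add C x (neg y) = b" using b y Bs by (metis add_assoc add_comm add_neg add_zer neg_closed subsetD)
  then show ?thesis using b by simp
qed

lemma crd_bound: "b \<in> bounds C \<Longrightarrow> j \<in> J \<Longrightarrow> crd b j = 0"
  unfolding bounds_def using crd_bd(2) J2 by blast

lemma crd_cycle_I: "x \<in> cycles C \<Longrightarrow> y \<in> I \<Longrightarrow> crd x y = 0"
  unfolding cycles_def using crd_bd(1)[of x y] crd_zer by auto

definition lcJ :: "'v \<Rightarrow> 'v" where "lcJ x = lc {j\<in>J. crd x j \<noteq> 0} (crd x)"

lemma lc_J_cycle: "finite T \<Longrightarrow> T \<subseteq> J \<Longrightarrow> lc T c \<in> cycles C"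
proof -
  assume T: "finite T" "T \<subseteq> J"
  have TC: "T \<subseteq> car C" using T J_BB BB_car by auto
  have "bd C (lc T c) = vsum (\<lambda>v. smul C (c v) (bd C v)) T" using bd_lc T TC by blast
  also have "\<dots> = zer C" using T by (intro vsum_zer) auto
  finally show ?thesis unfolding cycles_def using TC by simp
qed

lemma lcJ_props:
  assumes x: "x \<in> cycles C"
  shows "lcJ x \<in> cycles C" "hclass C (lcJ x) = hclass C x" "\<And>j. j \<in> J \<Longrightarrow> crd (lcJ x) j = crd x j"
    "fl (lcJ x) = Sup (fl ` {j\<in>J. crd x j \<noteq> 0})"
proof -
  have xC: "x \<in> car C" using x unfolding cycles_def by auto
  define c where "c = crd x"
  define S where "S = {b. c b \<noteq> 0}"
  have S: "finite S" "S \<subseteq> BB" using xC crd_fin crd_BB unfolding S_def c_def by auto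
  have SJ: "finite {j\<in>J. c j \<noteq> 0}" "{j\<in>J. c j \<noteq> 0} \<subseteq> BB" using S J_BB unfolding S_def by (auto intro: finite_subset)
  show cyc: "lcJ x \<in> cycles C" unfolding lcJ_def using lc_J_cycle SJ unfolding c_def by auto
  have lC: "lcJ x \<in> car C" using cyc unfolding cycles_def by auto
  show cr: "crd (lcJ x) j = crd x j" if "j \<in> J" for j
    unfolding lcJ_def using crd_lc[OF SJ[unfolded c_def]] that by auto
  show "fl (lcJ x) = Sup (fl ` {j\<in>J. crd x j \<noteq> 0})"
    using orthB SJ unfolding orth_def lcJ_def c_def BB_def by auto
  define T where "T = S \<inter> bd C ` I"
  have SI: "S \<inter> I = {}" using crd_cycle_I[OF x] unfolding S_def c_def by auto
  have Sdec: "S = {j\<in>J. c j \<noteq> 0} \<union> T" "{j\<in>J. c j \<noteq> 0} \<inter> T = {}"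
    using S SI J2 unfolding T_def S_def BB_def by auto
  have T: "finite T" "T \<subseteq> car C" using S BB_car unfolding T_def by auto
  have xe: "x = add C (lcJ x) (lc T c)"
  proof -
    have "x = lc S c" using crd_lc_eq[OF xC] unfolding S_def c_def .
    also have "\<dots> = add C (lc {j\<in>J. c j \<noteq> 0} c) (lc T c)"
      using Sdec lc_Un_disjoint[of "{j\<in>J. c j \<noteq> 0}" T c] SJ T BB_car by auto
    finally show ?thesis unfolding lcJ_def c_def .
  qed
  define g where "g = inv_into I (bd C)"
  define T' where "T' = g ` T"
  have T'I: "T' \<subseteq> I" unfolding T'_def T_def g_def by (auto intro: inv_into_into)
  have gb: "g (bd C v) = v" if "v \<in> I" for v unfolding g_def using I3 that by (rule inv_into_f_f)
  have bg: "bd C (g w) = w" if "w \<in> T" for w unfolding g_def using that unfolding T_def by (auto intro: f_inv_into_f)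
  have T': "finite T'" "T' \<subseteq> car C" using T T'I I1 unfolding T'_def by auto
  have "bd C (lc T' (\<lambda>y. c (bd C y))) = lc (bd C ` T') (\<lambda>w. c (bd C (g w)))"
    by (rule bd_lc_reindex) (use T' T'I gb in auto)
  also have "bd C ` T' = T" unfolding T'_def using bg by force
  also have "lc T (\<lambda>w. c (bd C (g w))) = lc T c" using T bg by (intro lc_cong) auto
  finally have "lc T c \<in> bounds C" unfolding bounds_def using T' lc_closed by (metis image_eqI)
  moreover have "add C x (neg (lcJ x)) = lc T c"
    using xe lC T xC by (metis add_comm add_move lc_closed)
  ultimately show "hclass C (lcJ x) = hclass C x" using hclass_eqI[OF xC lC] by simp
qed

lemma crd_J_class:
  assumes x: "x \<in> car C" and y: "y \<in> car C" and e: "hclass C x = hclass C y" and j: "j \<in> J"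
  shows "crd x j = crd y j"
proof -
  have "crd (add C x (neg y)) j = 0" using crd_bound[OF hclass_eqD[OF x y e] j] .
  then show ?thesis using x y by (simp add: crd_add crd_neg)
qed

end

context BAS
begin

lemma add4: "a \<in> car C \<Longrightarrow> b \<in> car C \<Longrightarrow> c \<in> car C \<Longrightarrow> d \<in> car C \<Longrightarrow>
  add C (add C a b) (add C c d) = add C (add C a c) (add C b d)"
  by (metis add_assoc add_closed add_comm)

lemma homology_simps:
  "car (homology C) = hclass C ` cycles C"
  "add (homology C) = (\<lambda>X Y. {add C x y | x y. x \<in> X \<and> y \<in> Y})"
  "zer (homology C) = bounds C"
  "smul (homology C) = (\<lambda>c X. {add C (smul C c x) b | x b. x \<in> X \<and> b \<in> bounds C})"
  "deg (homology C) = (\<lambda>n. hclass C ` (cycles C \<inter> deg C n))"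
  "bd (homology C) = (\<lambda>_. bounds C)"
  "filt (homology C) = spec_inv C"
  unfolding homology_def by simp_all

lemma hadd: assumes x: "x \<in> car C" and y: "y \<in> car C"
  shows "add (homology C) (hclass C x) (hclass C y) = hclass C (add C x y)"
proof -
  note Bs = subspD[OF bounds_subsp]
  show ?thesis unfolding homology_simps
  proof
    show "{add C x' y' |x' y'. x' \<in> hclass C x \<and> y' \<in> hclass C y} \<subseteq> hclass C (add C x y)"
    proof
      fix z assume "z \<in> {add C x' y' |x' y'. x' \<in> hclass C x \<and> y' \<in> hclass C y}"
      then obtain b1 b2 where b: "b1 \<in> bounds C" "b2 \<in> bounds C" "z = add C (add C x b1) (add C y b2)"
        unfolding mem_hclass by blast
      then have "z = add C (add C x y) (add C b1 b2)" using add4 x y Bs by auto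
      then show "z \<in> hclass C (add C x y)" unfolding mem_hclass using b Bs by blast
    qed
    show "hclass C (add C x y) \<subseteq> {add C x' y' |x' y'. x' \<in> hclass C x \<and> y' \<in> hclass C y}"
    proof
      fix z assume "z \<in> hclass C (add C x y)"
      then obtain b where b: "b \<in> bounds C" "z = add C (add C x y) b" unfolding mem_hclass by blast
      have "z = add C (add C x b) (add C y (zer C))" using b x y Bs add4[of x y b "zer C"] by auto
      moreover have "add C x b \<in> hclass C x" "add C y (zer C) \<in> hclass C y" unfolding mem_hclass using b Bs by auto
      ultimately show "z \<in> {add C x' y' |x' y'. x' \<in> hclass C x \<and> y' \<in> hclass C y}" by blast
    qed
  qed
qed

lemma hsmul: assumes x: "x \<in> car C"
  shows "smul (homology C) c (hclass C x) = hclass C (smul C c x)"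
proof -
  note Bs = subspD[OF bounds_subsp]
  show ?thesis unfolding homology_simps
  proof
    show "{add C (smul C c x') b |x' b. x' \<in> hclass C x \<and> b \<in> bounds C} \<subseteq> hclass C (smul C c x)"
    proof
      fix z assume "z \<in> {add C (smul C c x') b |x' b. x' \<in> hclass C x \<and> b \<in> bounds C}"
      then obtain b1 b where b: "b1 \<in> bounds C" "b \<in> bounds C" "z = add C (smul C c (add C x b1)) b"
        unfolding mem_hclass by blast
      then have "z = add C (smul C c x) (add C (smul C c b1) b)" using x Bs by (simp add: smul_add add_assoc)
      then show "z \<in> hclass C (smul C c x)" unfolding mem_hclass using b Bs by blast
    qed
    show "hclass C (smul C c x) \<subseteq> {add C (smul C c x') b |x' b. x' \<in> hclass C x \<and> b \<in> bounds C}"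
    proof
      fix z assume "z \<in> hclass C (smul C c x)"
      then obtain b where b: "b \<in> bounds C" "z = add C (smul C c x) b" unfolding mem_hclass by blast
      have "z = add C (smul C c (add C x (zer C))) b" using b x by simp
      moreover have "add C x (zer C) \<in> hclass C x" unfolding mem_hclass using Bs by auto
      ultimately show "z \<in> {add C (smul C c x') b |x' b. x' \<in> hclass C x \<and> b \<in> bounds C}" using b by blast
    qed
  qed
qed

lemma hclass_zer: "hclass C (zer C) = bounds C"
proof
  note Bs = subspD[OF bounds_subsp]
  show "hclass C (zer C) \<subseteq> bounds C" unfolding hclass_def using Bs by auto
  show "bounds C \<subseteq> hclass C (zer C)"
  proof
    fix x assume x: "x \<in> bounds C"
    then have "x = add C (zer C) x" using Bs by simp
    then show "x \<in> hclass C (zer C)" unfolding mem_hclass using x by blast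
  qed
qed

definition rp :: "'v set \<Rightarrow> 'v" where "rp X = (SOME x. x \<in> cycles C \<and> hclass C x = X)"
definition KK :: "'v set \<Rightarrow> 'v \<Rightarrow> 'k" where "KK X = (\<lambda>j. if j \<in> J then crd (rp X) j else 0)"
definition HH :: "('v \<Rightarrow> 'k) \<Rightarrow> 'v set" where "HH q = hclass C (lc {j. q j \<noteq> 0} q)"

lemma cyc_car: "x \<in> cycles C \<Longrightarrow> x \<in> car C" unfolding cycles_def by auto

lemma KK_hclass: assumes x: "x \<in> cycles C" shows "KK (hclass C x) = (\<lambda>j. if j \<in> J then crd x j else 0)"
proof -
  have "\<exists>y. y \<in> cycles C \<and> hclass C y = hclass C x" using x by blast
  then have r: "rp (hclass C x) \<in> cycles C \<and> hclass C (rp (hclass C x)) = hclass C x" unfolding rp_def by (rule someI_ex)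
  show ?thesis unfolding KK_def using crd_J_class[of "rp (hclass C x)" x] r x cyc_car by (auto simp: fun_eq_iff)
qed

lemma EJ_car: "q \<in> car EJ \<longleftrightarrow> (\<forall>i. i \<notin> J \<longrightarrow> q i = 0) \<and> finite {j. q j \<noteq> 0}"
  unfolding EJ_def by (simp add: dsumF_simps Einf_simps)

lemma KK_car: assumes x: "x \<in> cycles C" shows "KK (hclass C x) \<in> car EJ"
proof -
  have "{j. (if j \<in> J then crd x j else 0) \<noteq> 0} \<subseteq> {b. crd x b \<noteq> 0}" by auto
  then show ?thesis unfolding EJ_car KK_hclass[OF x] using crd_fin[OF cyc_car[OF x]] by (auto intro: finite_subset)
qed

lemma single_set: "{b. b = j \<and> P b} = (if P j then {j} else {})" by auto

lemma EJ_filt_KK: assumes x: "x \<in> cycles C" shows "filt EJ (KK (hclass C x)) = Sup (fl ` {j\<in>J. crd x j \<noteq> 0})"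
proof -
  have "filt EJ (KK (hclass C x)) = Sup ((\<lambda>j. filt (Einf (ll j) (cc j) :: ('k, 'k) acc) (crd x j)) ` J)"
    unfolding EJ_def KK_hclass[OF x] by (simp add: dsumF_simps setcompr_eq_image)
  also have "\<dots> = Sup ((\<lambda>j. Sup (fl ` {b. b = j \<and> crd x b \<noteq> 0})) ` J)"
  proof (rule arg_cong[where f=Sup], rule image_cong)
    fix j assume j: "j \<in> J"
    have "ereal (cc j) = fl j" unfolding cc_def using fl_real J_BB j by blast
    then show "filt (Einf (ll j) (cc j) :: ('k, 'k) acc) (crd x j) = Sup (fl ` {b. b = j \<and> crd x b \<noteq> 0})"
      by (auto simp: Einf_simps bot_ereal_def single_set)
  qed simp
  also have "\<dots> = Sup (fl ` (\<Union>j\<in>J. {b. b = j \<and> crd x b \<noteq> 0}))" by (simp add: SUP_UNION)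
  also have "(\<Union>j\<in>J. {b. b = j \<and> crd x b \<noteq> 0}) = {j\<in>J. crd x j \<noteq> 0}" by auto
  finally show ?thesis .
qed

lemma spec_inv_eq: assumes x: "x \<in> cycles C" shows "spec_inv C (hclass C x) = Sup (fl ` {j\<in>J. crd x j \<noteq> 0})"
proof -
  define v where "v = Sup (fl ` {j\<in>J. crd x j \<noteq> 0})"
  define M where "M = {filt C c | c. c \<in> cycles C \<and> hclass C c = hclass C x}"
  have "fl (lcJ x) \<in> M" unfolding M_def fl_def using lcJ_props[OF x] by blast
  moreover have "fl (lcJ x) = v" using lcJ_props(4)[OF x] unfolding v_def .
  ultimately have le: "Inf M \<le> v" by (metis Inf_lower)
  have ge: "v \<le> Inf M"
  proof (rule Inf_greatest)
    fix r assume "r \<in> M"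
    then obtain c where c: "c \<in> cycles C" "hclass C c = hclass C x" "r = fl c" unfolding M_def fl_def by blast
    have cC: "c \<in> car C" using c cyc_car by blast
    have "{j\<in>J. crd x j \<noteq> 0} = {j\<in>J. crd c j \<noteq> 0}" using crd_J_class[OF cC cyc_car[OF x] c(2)] by auto
    also have "\<dots> \<subseteq> {b. crd c b \<noteq> 0}" by auto
    finally have "v \<le> Sup (fl ` {b. crd c b \<noteq> 0})" unfolding v_def by (intro Sup_subset_mono image_mono)
    then show "v \<le> r" using fl_crd[OF cC] c by simp
  qed
  show ?thesis unfolding spec_inv_def M_def[symmetric] v_def[symmetric] using le ge by simp
qed

lemma HH_hclass: assumes q: "q \<in> car EJ" shows "lc {j. q j \<noteq> 0} q \<in> cycles C" "{j. q j \<noteq> 0} \<subseteq> J" "finite {j. q j \<noteq> 0}"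
proof -
  show J: "{j. q j \<noteq> 0} \<subseteq> J" "finite {j. q j \<noteq> 0}" using q unfolding EJ_car by auto
  show "lc {j. q j \<noteq> 0} q \<in> cycles C" using lc_J_cycle J by blast
qed

lemma crd_HH: assumes q: "q \<in> car EJ" shows "crd (lc {j. q j \<noteq> 0} q) = q"
proof -
  have "{j. q j \<noteq> 0} \<subseteq> BB" using HH_hclass[OF q] J_BB by auto
  then show ?thesis using crd_lc[OF HH_hclass(3)[OF q]] by (auto simp: fun_eq_iff)
qed

lemma KK_mor: "acc_mor (homology C) EJ KK"
  unfolding acc_mor_def
proof (intro conjI ballI allI)
  fix X assume "X \<in> car (homology C)"
  then obtain x where x: "x \<in> cycles C" "X = hclass C x" unfolding homology_simps by auto
  show "KK X \<in> car EJ" using KK_car x by simp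
next
  fix X Y assume "X \<in> car (homology C)" "Y \<in> car (homology C)"
  then obtain x y where x: "x \<in> cycles C" "X = hclass C x" and y: "y \<in> cycles C" "Y = hclass C y"
    unfolding homology_simps by auto
  have xy: "add C x y \<in> cycles C" using x y subspD[OF cycles_subsp] by auto
  have "KK (add (homology C) X Y) = KK (hclass C (add C x y))" using hadd x y cyc_car by simp
  also have "\<dots> = add EJ (KK X) (KK Y)" unfolding x y KK_hclass[OF xy] KK_hclass[OF x(1)] KK_hclass[OF y(1)]
    using x y cyc_car by (auto simp: EJ_def dsumF_simps Einf_simps crd_add fun_eq_iff)
  finally show "KK (add (homology C) X Y) = add EJ (KK X) (KK Y)" .
next
  fix c X assume "X \<in> car (homology C)"
  then obtain x where x: "x \<in> cycles C" "X = hclass C x" unfolding homology_simps by auto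
  have xc: "smul C c x \<in> cycles C" using x subspD[OF cycles_subsp] by auto
  have "KK (smul (homology C) c X) = KK (hclass C (smul C c x))" using hsmul x cyc_car by simp
  also have "\<dots> = smul EJ c (KK X)" unfolding x KK_hclass[OF xc] KK_hclass[OF x(1)]
    using x cyc_car by (auto simp: EJ_def dsumF_simps Einf_simps crd_smul fun_eq_iff)
  finally show "KK (smul (homology C) c X) = smul EJ c (KK X)" .
next
  fix n show "KK ` deg (homology C) n \<subseteq> deg EJ n"
  proof
    fix Z assume "Z \<in> KK ` deg (homology C) n"
    then obtain x where x: "x \<in> cycles C" "x \<in> deg C n" "Z = KK (hclass C x)" unfolding homology_simps by auto
    have "ll j = n" if "j \<in> J" "crd x j \<noteq> 0" for j
      using crd_deg[OF x(2) that(2)] dgr_eq J_BB that(1) unfolding ll_def by blast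
    then show "Z \<in> deg EJ n" using KK_car[OF x(1)] unfolding x(3) KK_hclass[OF x(1)]
      by (auto simp: EJ_def EJ_car dsumF_simps Einf_simps)
  qed
next
  fix X assume "X \<in> car (homology C)"
  then obtain x where x: "x \<in> cycles C" "X = hclass C x" unfolding homology_simps by auto
  have z: "zer C \<in> cycles C" using subspD[OF cycles_subsp] by auto
  have "KK (bd (homology C) X) = KK (hclass C (zer C))" unfolding homology_simps hclass_zer ..
  also have "\<dots> = (\<lambda>j. 0)" unfolding KK_hclass[OF z] crd_zer by simp
  also have "\<dots> = bd EJ (KK X)" by (simp add: EJ_def dsumF_simps Einf_simps fun_eq_iff)
  finally show "KK (bd (homology C) X) = bd EJ (KK X)" .
next
  fix X assume "X \<in> car (homology C)"
  then obtain x where x: "x \<in> cycles C" "X = hclass C x" unfolding homology_simps by auto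
  show "filt EJ (KK X) \<le> filt (homology C) X"
    unfolding x homology_simps using EJ_filt_KK[OF x(1)] spec_inv_eq[OF x(1)] by simp
qed

lemma iso_EJ_H: "acc_iso EJ (homology C)"
proof (rule acc_iso_sym, rule iso_from_mor[OF KK_mor, where g = HH])
  show "\<forall>x\<in>car (homology C). \<forall>y\<in>car (homology C). add (homology C) x y \<in> car (homology C)"
  proof (intro ballI)
    fix X Y assume "X \<in> car (homology C)" "Y \<in> car (homology C)"
    then obtain x y where x: "x \<in> cycles C" "X = hclass C x" and y: "y \<in> cycles C" "Y = hclass C y"
      unfolding homology_simps by auto
    have xy: "add C x y \<in> cycles C" using x y subspD[OF cycles_subsp] by auto
    show "add (homology C) X Y \<in> car (homology C)" using hadd x y cyc_car xy unfolding homology_simps(1) by auto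
  qed
  show "\<forall>c. \<forall>x\<in>car (homology C). smul (homology C) c x \<in> car (homology C)"
  proof (intro allI ballI)
    fix c X assume "X \<in> car (homology C)"
    then obtain x where x: "x \<in> cycles C" "X = hclass C x" unfolding homology_simps by auto
    have xc: "smul C c x \<in> cycles C" using x subspD[OF cycles_subsp] by auto
    show "smul (homology C) c X \<in> car (homology C)" using hsmul x cyc_car xc unfolding homology_simps(1) by auto
  qed
  show "\<forall>x\<in>car (homology C). bd (homology C) x \<in> car (homology C)"
  proof
    fix X
    have z: "zer C \<in> cycles C" using subspD[OF cycles_subsp] by auto
    show "bd (homology C) X \<in> car (homology C)" unfolding homology_simps using hclass_zer z by (metis image_eqI)
  qed
  show "\<forall>y\<in>car EJ. HH y \<in> car (homology C)" unfolding HH_def homology_simps using HH_hclass by blast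
  show "\<forall>x\<in>car (homology C). HH (KK x) = x"
  proof
    fix X assume "X \<in> car (homology C)"
    then obtain x where x: "x \<in> cycles C" "X = hclass C x" unfolding homology_simps by auto
    have "{j. KK X j \<noteq> 0} = {j\<in>J. crd x j \<noteq> 0}" unfolding x KK_hclass[OF x(1)] by auto
    moreover have "lc {j\<in>J. crd x j \<noteq> 0} (KK X) = lc {j\<in>J. crd x j \<noteq> 0} (crd x)"
      unfolding x KK_hclass[OF x(1)] using J_BB BB_car by (intro lc_cong) auto
    ultimately have "HH (KK X) = hclass C (lcJ x)" unfolding HH_def lcJ_def by simp
    then show "HH (KK X) = X" using lcJ_props(2)[OF x(1)] x by simp
  qed
  show "\<forall>y\<in>car EJ. KK (HH y) = y"
  proof
    fix q assume q: "q \<in> car EJ"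
    have "KK (HH q) = (\<lambda>j. if j \<in> J then crd (lc {j. q j \<noteq> 0} q) j else 0)"
      unfolding HH_def using KK_hclass HH_hclass[OF q] by blast
    also have "\<dots> = q" unfolding crd_HH[OF q] using q unfolding EJ_car by (auto simp: fun_eq_iff)
    finally show "KK (HH q) = q" .
  qed
  show "\<forall>n. HH ` deg EJ n \<subseteq> deg (homology C) n"
  proof (intro allI subsetI)
    fix n Z assume "Z \<in> HH ` deg EJ n"
    then obtain q where q: "q \<in> deg EJ n" "Z = HH q" by auto
    have qC: "q \<in> car EJ" using q unfolding EJ_def by (simp add: dsumF_simps Einf_simps)
    have "{j. q j \<noteq> 0} \<subseteq> deg C n"
    proof
      fix j assume j: "j \<in> {j. q j \<noteq> 0}"
      then have jJ: "j \<in> J" using HH_hclass(2)[OF qC] by auto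
      then have "q j \<in> deg (Einf (ll j) (cc j) :: ('k, 'k) acc) n" using q unfolding EJ_def by (simp add: dsumF_simps)
      then have "ll j = n" using j by (auto simp: Einf_simps split: if_splits)
      then show "j \<in> deg C n" using dgr J_BB jJ unfolding ll_def by auto
    qed
    then have "lc {j. q j \<noteq> 0} q \<in> deg C n" using subsp_lc[OF deg_subsp] by blast
    then show "Z \<in> deg (homology C) n" unfolding q(2) HH_def homology_simps using HH_hclass(1)[OF qC] by blast
  qed
  show "\<forall>x\<in>car (homology C). filt EJ (KK x) = filt (homology C) x"
  proof
    fix X assume "X \<in> car (homology C)"
    then obtain x where x: "x \<in> cycles C" "X = hclass C x" unfolding homology_simps by auto
    show "filt EJ (KK X) = filt (homology C) X"
      unfolding x homology_simps using EJ_filt_KK[OF x(1)] spec_inv_eq[OF x(1)] by simp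
  qed
qed

end

lemma BAS_final:
  assumes "BAS C I J"
  shows "\<exists>(k :: 'v \<Rightarrow> int) (a :: 'v \<Rightarrow> real) (b :: 'v \<Rightarrow> real) (l :: 'v \<Rightarrow> int) (c :: 'v \<Rightarrow> real).
           (\<forall>i\<in>I. a i \<le> b i) \<and>
           acc_iso C (dsum2 (dsumF I (\<lambda>i. Efin (k i) (a i) (b i)))
                            (dsumF J (\<lambda>j. Einf (l j) (c j)))) \<and>
           acc_iso (dsumF J (\<lambda>j. Einf (l j) (c j))) (homology (C :: ('k::field, 'v) acc))"
proof -
  interpret BAS C I J by (rule assms)
  have le: "\<forall>i\<in>I. aa i \<le> bb i"
  proof
    fix i assume i: "i \<in> I"
    have "ereal (aa i) = fl (bd C i)" unfolding aa_def using fl_real bdI_BB i by blast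
    moreover have "ereal (bb i) = fl i" unfolding bb_def using fl_real I_BB i by blast
    moreover have "fl (bd C i) \<le> fl i" using fl_bd I1 i by blast
    ultimately have "ereal (aa i) \<le> ereal (bb i)" by simp
    then show "aa i \<le> bb i" by simp
  qed
  have i1: "acc_iso C (dsum2 (dsumF I (\<lambda>i. Efin (kk i) (aa i) (bb i))) (dsumF J (\<lambda>j. Einf (ll j) (cc j))))"
    using iso_C_DD unfolding DD_def EA_def EJ_def .
  have i2: "acc_iso (dsumF J (\<lambda>j. Einf (ll j) (cc j))) (homology C)"
    using iso_EJ_H unfolding EJ_def .
  show ?thesis
    by (intro exI[of _ kk] exI[of _ aa] exI[of _ bb] exI[of _ ll] exI[of _ cc] conjI le i1 i2)
qed

theorem corollary3p15:
  fixes C :: "('k::field, 'v) acc"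
  assumes "asc_complex C"
    and "\<forall>n. well_ordered_set (filt C ` (deg C n - {zer C}))"
  shows "\<exists>(I :: 'v set) (k :: 'v \<Rightarrow> int) (a :: 'v \<Rightarrow> real) (b :: 'v \<Rightarrow> real)
            (J :: 'v set) (l :: 'v \<Rightarrow> int) (c :: 'v \<Rightarrow> real).
           (\<forall>i\<in>I. a i \<le> b i) \<and>
           acc_iso C (dsum2 (dsumF I (\<lambda>i. Efin (k i) (a i) (b i)))
                            (dsumF J (\<lambda>j. Einf (l j) (c j)))) \<and>
           acc_iso (dsumF J (\<lambda>j. Einf (l j) (c j))) (homology C)"
proof -
  have vs: "vspace C" using assms(1) unfolding asc_complex_def chain_cx_def by blast
  have acC: "AC C" by (rule AC.intro[OF VS.intro[OF vs]]) (rule AC_axioms.intro[OF assms])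
  interpret AC C by (rule acC)
  obtain I J where IJ: "I \<subseteq> car C \<and> (\<forall>y\<in>I. bd C y \<noteq> zer C) \<and> inj_on (bd C) I
 \<and> (\<forall>j\<in>J. j \<noteq> zer C \<and> bd C j = zer C)
 \<and> bd C ` I \<inter> J = {}
 \<and> (\<forall>b\<in>bd C ` I \<union> I \<union> J. \<exists>n. b \<in> deg C n)
 \<and> orth fl (bd C ` I \<union> I \<union> J)
 \<and> (\<forall>x\<in>car C. inspan (bd C ` I \<union> I \<union> J) x)"
    using basis_exists by (elim exE) (rule that)
  have "BAS C I J"
    by (rule BAS.intro[OF acC], rule BAS_axioms.intro) (use IJ in \<open>simp_all\<close>)
  from BAS_final[OF this] obtain k a b l c where H:
    "(\<forall>i\<in>I. a i \<le> b i) \<and>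
    acc_iso C (dsum2 (dsumF I (\<lambda>i. Efin (k i) (a i) (b i))) (dsumF J (\<lambda>j. Einf (l j) (c j)))) \<and>
    acc_iso (dsumF J (\<lambda>j. Einf (l j) (c j))) (homology C)" by (elim exE) (rule that)
  show ?thesis
    by (intro exI[of _ I] exI[of _ k] exI[of _ a] exI[of _ b] exI[of _ J] exI[of _ l] exI[of _ c]) (rule H)
qed

end
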